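(* Consider the two-layer process described in the context (donation game with the "fixed benefits, fixed costs" payoff in layer 1, constant selection in layer 2, death-Birth updating in both layers), and let $\boldsymbol{\xi}$ be any initial state that is not one of the four states in which both layers are monomorphic. Let $\rho^{[1]}(\boldsymbol{\xi})$ be the probability that layer 1 eventually consists only of cooperators. Then $\left.\frac{\mathrm{d}}{\mathrm{d}\delta}\rho^{[1]}(\boldsymbol{\xi})\right|_{\delta=0}>0$ if and only if $$b\Big\{\sum_{i,\ell}\pi^{[1]}_i\,p^{[1]}_{\ell i}\,\beta_{i\ell}-\sum_{i,j,\ell}\pi^{[1]}_i\big((P^{[1]})^2\big)_{ij}\,p^{[1]}_{\ell j}\,\beta_{i\ell}\Big\}+c\,\theta_2-(r-1)\,\phi_{2,0}>0 .$$
   Context: There are $N\ge2$ individuals. For each layer $L\in\{1,2\}$ there is a connected undirected weighted graph on $\{1,\dots,N\}$ with symmetric nonnegative weights $w^{[L]}_{ij}$; $s^{[L]}_i=\sum_j w^{[L]}_{ij}>0$, $p^{[L]}_{ij}=w^{[L]}_{ij}/s^{[L]}_i$, $P^{[L]}=(p^{[L]}_{ij})$, $\pi^{[L]}_i=s^{[L]}_i/\sum_k s^{[L]}_k$. States $(x^{[1]},x^{[2]})\in\{0,1\}^N\times\{0,1\}^N$: $x^{[1]}_i=1$ means cooperator in layer 1, $x^{[2]}_i=1$ means mutant in layer 2. Payoff: $u_i=-c\,x^{[1]}_i+\sum_j b\,\frac{w^{[1]}_{ij}}{s^{[1]}_j}x^{[1]}_j+(r-1)x^{[2]}_i+1$ with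 $r\ge0$; fecundity $F_i=1+\delta u_i$, $\delta\ge0$. Each time step, simultaneously and independently in each layer $L$: choose $i$ uniformly, choose $j$ with probability $w^{[L]}_{ij}F_j/\sum_k w^{[L]}_{ik}F_k$, set $x^{[L]}_i\leftarrow x^{[L]}_j$. Let $\hat\xi^{[L]}=\sum_i\pi^{[L]}_i\xi^{[L]}_i$. $(\beta_{ij})$ is the unique solution of $\beta_{ii}=N(\xi^{[1]}_i-\hat\xi^{[1]})+\sum_k p^{[1]}_{ik}\beta_{kk}$; $\beta_{ij}=\tfrac N2(\xi^{[1]}_i\xi^{[1]}_j-\hat\xi^{[1]})+\tfrac12\sum_k p^{[1]}_{ik}\beta_{kj}+\tfrac12\sum_k p^{[1]}_{jk}\beta_{ik}$ ($i\ne j$); $\sum_i\pi^{[1]}_i\beta_{ii}=0$. $(\gamma_{ij})$ is the unique solution of $\gamma_{ij}=\frac{N^2}{2N-1}(\xi^{[1]}_i\xi^{[2]}_j-\hat\xi^{[1]}\hat\xi^{[2]})+\frac{1}{2N-1}\sum_{k_1,k_2}p^{[1]}_{ik_1}p^{[2]}_{jk_2}\gamma_{k_1k_2}+\frac{N-1}{2N-1}\big(\sum_k p^{[1]}_{ik}\gamma_{kj}+\sum_k p^{[2]}_{jk}\gamma_{ik}\big)$ for all $i,j$, with $\sum_i\pi^{[1]}_i\gamma_{ii}=0$. Define $\theta_n=\sum_{i,j}\pi^{[1]}_i((P^{[1]})^n)_{ij}\beta_{ij}$ and $\phi_{n,m}=\sum_{i,j}\pi^{[1]}_i((P^{[1]})^n(P^{[2]})^m)_{ij}\gamma_{ij}$.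 *)

theory Defs
  imports "HOL-Analysis.Analysis"
begin

text \<open>Individuals are indexed by 0..<N. A weighted graph is w :: nat => nat => real.
  A state of one layer is the set of indices i with x_i = 1.\<close>

definition ind :: "bool \<Rightarrow> real" where
  "ind P = (if P then 1 else 0)"

definition strength :: "nat \<Rightarrow> (nat \<Rightarrow> nat \<Rightarrow> real) \<Rightarrow> nat \<Rightarrow> real" where
  "strength N w i = (\<Sum>j<N. w i j)"

definition trans_prob :: "nat \<Rightarrow> (nat \<Rightarrow> nat \<Rightarrow> real) \<Rightarrow> nat \<Rightarrow> nat \<Rightarrow> real" where
  "trans_prob N w i j = w i j / strength N w i"

definition stat_dist :: "nat \<Rightarrow> (nat \<Rightarrow> nat \<Rightarrow> real) \<Rightarrow> nat \<Rightarrow> real" where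
  "stat_dist N w i = strength N w i / (\<Sum>k<N. strength N w k)"

fun mat_pow :: "nat \<Rightarrow> (nat \<Rightarrow> nat \<Rightarrow> real) \<Rightarrow> nat \<Rightarrow> nat \<Rightarrow> nat \<Rightarrow> real" where
  "mat_pow N P 0 i j = (if i = j then 1 else 0)"
| "mat_pow N P (Suc n) i j = (\<Sum>k<N. mat_pow N P n i k * P k j)"

definition connected_graph :: "nat \<Rightarrow> (nat \<Rightarrow> nat \<Rightarrow> real) \<Rightarrow> bool" where
  "connected_graph N w \<longleftrightarrow>
     (\<forall>i<N. \<forall>j<N. (i, j) \<in> ({(a, b). a < N \<and> b < N \<and> w a b > 0})\<^sup>*)"

definition weighted_graph :: "nat \<Rightarrow> (nat \<Rightarrow> nat \<Rightarrow> real) \<Rightarrow> bool" where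
  "weighted_graph N w \<longleftrightarrow>
     (\<forall>i<N. \<forall>j<N. w i j = w j i \<and> 0 \<le> w i j) \<and>
     (\<forall>i<N. strength N w i > 0) \<and> connected_graph N w"

definition avg_state :: "nat \<Rightarrow> (nat \<Rightarrow> nat \<Rightarrow> real) \<Rightarrow> nat set \<Rightarrow> real" where
  "avg_state N w X = (\<Sum>i<N. stat_dist N w i * ind (i \<in> X))"

definition payoff :: "nat \<Rightarrow> (nat \<Rightarrow> nat \<Rightarrow> real) \<Rightarrow> real \<Rightarrow> real \<Rightarrow> real
    \<Rightarrow> nat set \<Rightarrow> nat set \<Rightarrow> nat \<Rightarrow> real" where
  "payoff N w1 b c r X1 X2 i =
     - c * ind (i \<in> X1) + (\<Sum>j<N. b * (w1 i j / strength N w1 j) * ind (j \<in> X1))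
     + (r - 1) * ind (i \<in> X2) + 1"

definition fecundity :: "nat \<Rightarrow> (nat \<Rightarrow> nat \<Rightarrow> real) \<Rightarrow> real \<Rightarrow> real \<Rightarrow> real \<Rightarrow> real
    \<Rightarrow> nat set \<Rightarrow> nat set \<Rightarrow> nat \<Rightarrow> real" where
  "fecundity N w1 b c r \<delta> X1 X2 i = 1 + \<delta> * payoff N w1 b c r X1 X2 i"

definition copy_type :: "nat set \<Rightarrow> nat \<Rightarrow> nat \<Rightarrow> nat set" where
  "copy_type X i j = (if j \<in> X then insert i X else X - {i})"

definition layer_step :: "nat \<Rightarrow> (nat \<Rightarrow> nat \<Rightarrow> real) \<Rightarrow> (nat \<Rightarrow> real)
    \<Rightarrow> nat set \<Rightarrow> nat set \<Rightarrow> real" where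
  "layer_step N w F X Y =
     (\<Sum>i<N. (1 / real N) *
        (\<Sum>j<N. if copy_type X i j = Y
                 then w i j * F j / (\<Sum>k<N. w i k * F k) else 0))"

definition states :: "nat \<Rightarrow> (nat set \<times> nat set) set" where
  "states N = Pow {0..<N} \<times> Pow {0..<N}"

definition kernel :: "nat \<Rightarrow> (nat \<Rightarrow> nat \<Rightarrow> real) \<Rightarrow> (nat \<Rightarrow> nat \<Rightarrow> real)
    \<Rightarrow> real \<Rightarrow> real \<Rightarrow> real \<Rightarrow> real \<Rightarrow> nat set \<times> nat set \<Rightarrow> nat set \<times> nat set \<Rightarrow> real" where
  "kernel N w1 w2 b c r \<delta> s t =
     (let F = fecundity N w1 b c r \<delta> (fst s) (snd s)
      in layer_step N w1 F (fst s) (fst t) * layer_step N w2 F (snd s) (snd t))"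

fun kernel_pow :: "nat \<Rightarrow> (nat \<Rightarrow> nat \<Rightarrow> real) \<Rightarrow> (nat \<Rightarrow> nat \<Rightarrow> real)
    \<Rightarrow> real \<Rightarrow> real \<Rightarrow> real \<Rightarrow> real \<Rightarrow> nat \<Rightarrow> nat set \<times> nat set \<Rightarrow> nat set \<times> nat set \<Rightarrow> real" where
  "kernel_pow N w1 w2 b c r \<delta> 0 s t = (if s = t then 1 else 0)"
| "kernel_pow N w1 w2 b c r \<delta> (Suc n) s t =
     (\<Sum>u\<in>states N. kernel_pow N w1 w2 b c r \<delta> n s u * kernel N w1 w2 b c r \<delta> u t)"

text \<open>Probability that layer 1 eventually consists only of cooperators, started at s.
  Since the all-cooperator configuration of layer 1 is absorbing, this is the limit of the
  probability of being in that configuration at time n.\<close>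
definition fix_prob1 :: "nat \<Rightarrow> (nat \<Rightarrow> nat \<Rightarrow> real) \<Rightarrow> (nat \<Rightarrow> nat \<Rightarrow> real)
    \<Rightarrow> real \<Rightarrow> real \<Rightarrow> real \<Rightarrow> real \<Rightarrow> nat set \<times> nat set \<Rightarrow> real" where
  "fix_prob1 N w1 w2 b c r \<delta> s =
     lim (\<lambda>n. \<Sum>t\<in>{t \<in> states N. fst t = {0..<N}}. kernel_pow N w1 w2 b c r \<delta> n s t)"

definition beta_system :: "nat \<Rightarrow> (nat \<Rightarrow> nat \<Rightarrow> real) \<Rightarrow> nat set \<Rightarrow> (nat \<Rightarrow> nat \<Rightarrow> real) \<Rightarrow> bool" where
  "beta_system N w1 X1 \<beta> \<longleftrightarrow>
     (\<forall>i<N. \<beta> i i = real N * (ind (i \<in> X1) - avg_state N w1 X1)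
                     + (\<Sum>k<N. trans_prob N w1 i k * \<beta> k k)) \<and>
     (\<forall>i<N. \<forall>j<N. i \<noteq> j \<longrightarrow>
        \<beta> i j = real N / 2 * (ind (i \<in> X1) * ind (j \<in> X1) - avg_state N w1 X1)
                 + 1/2 * (\<Sum>k<N. trans_prob N w1 i k * \<beta> k j)
                 + 1/2 * (\<Sum>k<N. trans_prob N w1 j k * \<beta> i k)) \<and>
     (\<Sum>i<N. stat_dist N w1 i * \<beta> i i) = 0"

definition gamma_system :: "nat \<Rightarrow> (nat \<Rightarrow> nat \<Rightarrow> real) \<Rightarrow> (nat \<Rightarrow> nat \<Rightarrow> real)
    \<Rightarrow> nat set \<Rightarrow> nat set \<Rightarrow> (nat \<Rightarrow> nat \<Rightarrow> real) \<Rightarrow> bool" where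
  "gamma_system N w1 w2 X1 X2 \<gamma> \<longleftrightarrow>
     (\<forall>i<N. \<forall>j<N.
        \<gamma> i j = (real N)^2 / (2 * real N - 1) *
                   (ind (i \<in> X1) * ind (j \<in> X2) - avg_state N w1 X1 * avg_state N w2 X2)
               + 1 / (2 * real N - 1) *
                   (\<Sum>k1<N. \<Sum>k2<N. trans_prob N w1 i k1 * trans_prob N w2 j k2 * \<gamma> k1 k2)
               + (real N - 1) / (2 * real N - 1) *
                   ((\<Sum>k<N. trans_prob N w1 i k * \<gamma> k j) + (\<Sum>k<N. trans_prob N w2 j k * \<gamma> i k))) \<and>
     (\<Sum>i<N. stat_dist N w1 i * \<gamma> i i) = 0"

definition theta :: "nat \<Rightarrow> (nat \<Rightarrow> nat \<Rightarrow> real) \<Rightarrow> (nat \<Rightarrow> nat \<Rightarrow> real) \<Rightarrow> nat \<Rightarrow> real" where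
  "theta N w1 \<beta> n =
     (\<Sum>i<N. \<Sum>j<N. stat_dist N w1 i * mat_pow N (trans_prob N w1) n i j * \<beta> i j)"

definition phi :: "nat \<Rightarrow> (nat \<Rightarrow> nat \<Rightarrow> real) \<Rightarrow> (nat \<Rightarrow> nat \<Rightarrow> real) \<Rightarrow> (nat \<Rightarrow> nat \<Rightarrow> real)
    \<Rightarrow> nat \<Rightarrow> nat \<Rightarrow> real" where
  "phi N w1 w2 \<gamma> n m =
     (\<Sum>i<N. \<Sum>j<N. stat_dist N w1 i *
        (\<Sum>k<N. mat_pow N (trans_prob N w1) n i k * mat_pow N (trans_prob N w2) m k j) * \<gamma> i j)"

end

theory Submission
  imports Defs "HOL-Analysis.Analysis"
begin

context
  fixes N :: nat and w :: "nat \<Rightarrow> nat \<Rightarrow> real"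
  assumes wg: "weighted_graph N w"
begin

lemma wg_sym: "i < N \<Longrightarrow> j < N \<Longrightarrow> w i j = w j i"
  using wg by (auto simp: weighted_graph_def)
lemma wg_nonneg: "i < N \<Longrightarrow> j < N \<Longrightarrow> 0 \<le> w i j"
  using wg by (auto simp: weighted_graph_def)
lemma wg_str_pos: "i < N \<Longrightarrow> strength N w i > 0"
  using wg by (auto simp: weighted_graph_def)

lemma tp_nonneg: "i < N \<Longrightarrow> j < N \<Longrightarrow> 0 \<le> trans_prob N w i j"
  using wg_nonneg[of i j] wg_str_pos[of i] by (simp add: trans_prob_def)

lemma tp_sum: "i < N \<Longrightarrow> (\<Sum>j<N. trans_prob N w i j) = 1"
  using wg_str_pos[of i] by (simp add: trans_prob_def sum_divide_distrib[symmetric] strength_def)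

lemma tot_pos: "N > 0 \<Longrightarrow> (\<Sum>k<N. strength N w k) > 0"
  by (rule sum_pos) (auto intro: wg_str_pos)

lemma sd_nonneg: "N > 0 \<Longrightarrow> i < N \<Longrightarrow> 0 \<le> stat_dist N w i"
  using wg_str_pos[of i] tot_pos by (simp add: stat_dist_def)

lemma sd_sum: "N > 0 \<Longrightarrow> (\<Sum>i<N. stat_dist N w i) = 1"
  using tot_pos by (simp add: stat_dist_def sum_divide_distrib[symmetric])

lemma sd_tp: "N > 0 \<Longrightarrow> i < N \<Longrightarrow> j < N \<Longrightarrow>
   stat_dist N w i * trans_prob N w i j = w i j / (\<Sum>k<N. strength N w k)"
  using wg_str_pos[of i] by (simp add: stat_dist_def trans_prob_def)

lemma reversible: "N > 0 \<Longrightarrow> i < N \<Longrightarrow> j < N \<Longrightarrow>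
   stat_dist N w i * trans_prob N w i j = stat_dist N w j * trans_prob N w j i"
  by (simp add: sd_tp wg_sym)

lemma stationary: "N > 0 \<Longrightarrow> j < N \<Longrightarrow>
   (\<Sum>i<N. stat_dist N w i * trans_prob N w i j) = stat_dist N w j"
proof -
  assume "N > 0" "j < N"
  have "(\<Sum>i<N. stat_dist N w i * trans_prob N w i j) = (\<Sum>i<N. stat_dist N w j * trans_prob N w j i)"
    using reversible \<open>N>0\<close> \<open>j<N\<close> by (intro sum.cong) auto
  also have "\<dots> = stat_dist N w j" using tp_sum \<open>j<N\<close> by (simp add: sum_distrib_left[symmetric])
  finally show ?thesis .
qed

end

lemma ifmult1: "(if P then 1 else 0) * (x::real) = (if P then x else 0)" by simp
lemma mat_pow1: "i < N \<Longrightarrow> mat_pow N P 1 i k = P i k"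
  by (simp only: One_nat_def mat_pow.simps ifmult1) simp
lemma mat_pow2: "i < N \<Longrightarrow> mat_pow N P 2 i j = (\<Sum>k<N. P i k * P k j)"
proof -
  assume "i < N"
  have "mat_pow N P 2 i j = (\<Sum>k<N. mat_pow N P 1 i k * P k j)"
    by (simp add: numeral_2_eq_2 del: mat_pow.simps(2)) (simp only: mat_pow.simps One_nat_def)
  then show ?thesis using mat_pow1[OF \<open>i<N\<close>] by simp
qed


lemma copy_sub: "X \<subseteq> {0..<N} \<Longrightarrow> i < N \<Longrightarrow> copy_type X i j \<in> Pow {0..<N}"
  by (auto simp: copy_type_def)

lemma layer_exp:
  assumes X: "X \<subseteq> {0..<N}"
  shows "(\<Sum>Y\<in>Pow {0..<N}. layer_step N w F X Y * h Y) =
    (\<Sum>i<N. (1 / real N) * (\<Sum>j<N. w i j * F j / (\<Sum>k<N. w i k * F k) * h (copy_type X i j)))"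
proof -
  have "(\<Sum>Y\<in>Pow {0..<N}. layer_step N w F X Y * h Y) =
     (\<Sum>Y\<in>Pow {0..<N}. \<Sum>i<N. (1 / real N) * (\<Sum>j<N. (if copy_type X i j = Y
                 then w i j * F j / (\<Sum>k<N. w i k * F k) else 0) * h Y))"
    by (simp add: layer_step_def sum_distrib_right mult.assoc)
  also have "\<dots> = (\<Sum>i<N. (1 / real N) * (\<Sum>j<N. \<Sum>Y\<in>Pow {0..<N}. (if copy_type X i j = Y
                 then w i j * F j / (\<Sum>k<N. w i k * F k) else 0) * h Y))"
    by (subst sum.swap) (simp add: sum_distrib_left sum.swap[where A="Pow {0..<N}"])
  also have "\<dots> = (\<Sum>i<N. (1 / real N) * (\<Sum>j<N. w i j * F j / (\<Sum>k<N. w i k * F k) * h (copy_type X i j)))"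
  proof (intro sum.cong refl arg_cong2[where f="(*)"])
    fix i j assume "i \<in> {..<N}" "j \<in> {..<N}"
    then have "copy_type X i j \<in> Pow {0..<N}" using copy_sub[OF X] by auto
    then show "(\<Sum>Y\<in>Pow {0..<N}. (if copy_type X i j = Y
                 then w i j * F j / (\<Sum>k<N. w i k * F k) else 0) * h Y) = w i j * F j / (\<Sum>k<N. w i k * F k) * h (copy_type X i j)"
      by (simp add: if_distrib[where f="\<lambda>x. x * _"] sum.delta cong: if_cong)
  qed
  finally show ?thesis .
qed


lemma finite_states: "finite (states N)"
  by (simp add: states_def)

context
  fixes N :: nat and w1 w2 :: "nat \<Rightarrow> nat \<Rightarrow> real" and b c r \<delta> :: real
begin

abbreviation "KK \<equiv> kernel N w1 w2 b c r \<delta>"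
abbreviation "PP \<equiv> kernel_pow N w1 w2 b c r \<delta>"

lemma kp_first:
  assumes "s \<in> states N" "t \<in> states N"
  shows "PP (Suc n) s t = (\<Sum>u\<in>states N. KK s u * PP n u t)"
  using assms
proof (induction n arbitrary: t)
  case 0
  then show ?case by (simp add: if_distrib[where f="\<lambda>x. x * _"] if_distrib[where f="\<lambda>x. _ * x"] sum.delta sum.delta' finite_states cong: if_cong)
next
  case (Suc n)
  have "PP (Suc (Suc n)) s t = (\<Sum>u\<in>states N. PP (Suc n) s u * KK u t)" by simp
  also have "\<dots> = (\<Sum>u\<in>states N. (\<Sum>v\<in>states N. KK s v * PP n v u) * KK u t)"
    using Suc by (intro sum.cong) auto
  also have "\<dots> = (\<Sum>v\<in>states N. KK s v * (\<Sum>u\<in>states N. PP n v u * KK u t))"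
    by (simp add: sum_distrib_left sum_distrib_right mult.assoc) (rule sum.swap)
  also have "\<dots> = (\<Sum>v\<in>states N. KK s v * PP (Suc n) v t)" by simp
  finally show ?case .
qed

lemma kp_add:
  assumes "s \<in> states N" "t \<in> states N"
  shows "PP (n + m) s t = (\<Sum>u\<in>states N. PP n s u * PP m u t)"
  using assms(2)
proof (induction m arbitrary: t)
  case 0
  then show ?case by (simp add: if_distrib[where f="\<lambda>x. _ * x"] sum.delta sum.delta' finite_states cong: if_cong)
next
  case (Suc m)
  have "PP (n + Suc m) s t = (\<Sum>v\<in>states N. PP (n + m) s v * KK v t)" by simp
  also have "\<dots> = (\<Sum>v\<in>states N. (\<Sum>u\<in>states N. PP n s u * PP m u v) * KK v t)"
    using Suc by (intro sum.cong) auto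
  also have "\<dots> = (\<Sum>u\<in>states N. PP n s u * (\<Sum>v\<in>states N. PP m u v * KK v t))"
    by (simp add: sum_distrib_left sum_distrib_right mult.assoc) (rule sum.swap)
  finally show ?case by simp
qed

context
  assumes nn: "\<And>s t. s \<in> states N \<Longrightarrow> t \<in> states N \<Longrightarrow> KK s t \<ge> 0"
    and rs: "\<And>s. s \<in> states N \<Longrightarrow> (\<Sum>t\<in>states N. KK s t) = 1"
begin

lemma kp_nonneg: "s \<in> states N \<Longrightarrow> t \<in> states N \<Longrightarrow> PP n s t \<ge> 0"
proof (induction n arbitrary: t)
  case 0 then show ?case by simp
next
  case (Suc n) then show ?case by (simp add: nn sum_nonneg)
qed

lemma kp_rowsum: "s \<in> states N \<Longrightarrow> (\<Sum>t\<in>states N. PP n s t) = 1"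
proof (induction n)
  case 0 then show ?case by (simp add: sum.delta finite_states)
next
  case (Suc n)
  have "(\<Sum>t\<in>states N. PP (Suc n) s t) = (\<Sum>u\<in>states N. PP n s u * (\<Sum>t\<in>states N. KK u t))"
    by (simp add: sum_distrib_left) (rule sum.swap)
  also have "\<dots> = (\<Sum>u\<in>states N. PP n s u)" by (simp add: rs)
  finally show ?case using Suc by simp
qed

lemma kp_le1: "s \<in> states N \<Longrightarrow> A \<subseteq> states N \<Longrightarrow> (\<Sum>t\<in>A. PP n s t) \<le> 1"
proof -
  assume a: "s \<in> states N" "A \<subseteq> states N"
  have "(\<Sum>t\<in>A. PP n s t) \<le> (\<Sum>t\<in>states N. PP n s t)"
    by (rule sum_mono2[OF finite_states a(2)]) (use kp_nonneg a in auto)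
  then show ?thesis using kp_rowsum[OF a(1)] by simp
qed

lemma closed_set:
  assumes C: "C \<subseteq> states N" and cl: "\<And>u. u \<in> C \<Longrightarrow> (\<Sum>t\<in>C. KK u t) = 1"
    and s: "s \<in> C"
  shows "t \<in> states N - C \<Longrightarrow> PP n s t = 0"
proof (induction n arbitrary: t)
  case 0 then show ?case using s by auto
next
  case (Suc n)
  have z: "KK u t = 0" if "u \<in> C" for u
  proof -
    have "(\<Sum>t\<in>states N. KK u t) = (\<Sum>t\<in>states N - C. KK u t) + (\<Sum>t\<in>C. KK u t)"
      by (rule sum.subset_diff[OF C finite_states])
    moreover have "u \<in> states N" using that C by blast
    ultimately have "(\<Sum>t\<in>states N - C. KK u t) = 0" using rs[of u] cl[OF that] by linarith
    moreover have "KK u t \<le> (\<Sum>t\<in>states N - C. KK u t)"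
      by (rule member_le_sum) (use Suc.prems \<open>u \<in> states N\<close> nn in \<open>auto simp: finite_states\<close>)
    moreover have "KK u t \<ge> 0" using nn[of u t] Suc.prems \<open>u \<in> states N\<close> by blast
    ultimately show ?thesis by linarith
  qed
  have "PP (Suc n) s t = (\<Sum>u\<in>states N. PP n s u * KK u t)" by simp
  also have "\<dots> = 0"
  proof (rule sum.neutral, rule ballI)
    fix u assume u: "u \<in> states N"
    show "PP n s u * KK u t = 0"
    proof (cases "u \<in> C")
      case True then show ?thesis using z by simp
    next
      case False then show ?thesis using Suc.IH[of u] u by simp
    qed
  qed
  finally show ?case .
qed

end
end


context
  fixes N :: nat and w1 w2 :: "nat \<Rightarrow> nat \<Rightarrow> real" and b c r \<delta> :: real
    and cnt :: "nat set \<times> nat set \<Rightarrow> nat" and \<eta> :: real and M :: nat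
  assumes nn: "\<And>s t. s \<in> states N \<Longrightarrow> t \<in> states N \<Longrightarrow> KK N w1 w2 b c r \<delta> s t \<ge> 0"
    and rs: "\<And>s. s \<in> states N \<Longrightarrow> (\<Sum>t\<in>states N. KK N w1 w2 b c r \<delta> s t) = 1"
    and cb: "\<And>s. s \<in> states N \<Longrightarrow> cnt s \<le> M"
    and ab: "\<And>s. s \<in> states N \<Longrightarrow> cnt s = 0 \<or> cnt s = M \<Longrightarrow>
               (\<Sum>t\<in>{t\<in>states N. cnt t = cnt s}. KK N w1 w2 b c r \<delta> s t) = 1"
    and pr: "\<And>s. s \<in> states N \<Longrightarrow> 0 < cnt s \<Longrightarrow> cnt s < M \<Longrightarrow>
               (\<Sum>t\<in>{t\<in>states N. cnt t = Suc (cnt s)}. KK N w1 w2 b c r \<delta> s t) \<ge> \<eta>"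
    and eta: "0 < \<eta>" "\<eta> \<le> 1" and M: "M > 0"
begin

abbreviation "Kd \<equiv> KK N w1 w2 b c r \<delta>"
abbreviation "Pd \<equiv> PP N w1 w2 b c r \<delta>"
abbreviation "mixedd \<equiv> {t\<in>states N. 0 < cnt t \<and> cnt t < M}"

lemma closed_cnt:
  assumes s: "s \<in> states N" "cnt s = 0 \<or> cnt s = M" and t: "t \<in> states N" "cnt t \<noteq> cnt s"
  shows "Pd n s t = 0"
proof -
  let ?C = "{t\<in>states N. cnt t = cnt s}"
  have "\<And>u. u \<in> ?C \<Longrightarrow> (\<Sum>t\<in>?C. Kd u t) = 1"
  proof -
    fix u assume u: "u \<in> ?C"
    then have "{t\<in>states N. cnt t = cnt u} = ?C" by auto
    then show "(\<Sum>t\<in>?C. Kd u t) = 1" using ab[of u] u s by auto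
  qed
  from closed_set[of N w1 w2 b c r \<delta> ?C s t n, OF nn rs _ this] s t show ?thesis by auto
qed

lemma closed_mass:
  assumes s: "s \<in> states N" "cnt s = 0 \<or> cnt s = M"
  shows "(\<Sum>t\<in>{t\<in>states N. cnt t = cnt s}. Pd n s t) = 1"
proof -
  have "(\<Sum>t\<in>states N. Pd n s t) = (\<Sum>t\<in>states N - {t\<in>states N. cnt t = cnt s}. Pd n s t)
     + (\<Sum>t\<in>{t\<in>states N. cnt t = cnt s}. Pd n s t)"
    by (rule sum.subset_diff) (auto simp: finite_states)
  moreover have "(\<Sum>t\<in>states N - {t\<in>states N. cnt t = cnt s}. Pd n s t) = 0"
    by (rule sum.neutral) (use closed_cnt[OF s] in blast)
  ultimately show ?thesis using kp_rowsum[OF nn rs s(1)] by simp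
qed

lemma mixed_zero:
  assumes s: "s \<in> states N" "s \<notin> mixedd"
  shows "(\<Sum>t\<in>mixedd. Pd n s t) = 0"
proof -
  have "cnt s = 0 \<or> cnt s = M" using s cb[of s] by auto
  show ?thesis
  proof (rule sum.neutral, rule ballI)
    fix t assume "t \<in> mixedd"
    then show "Pd n s t = 0" using closed_cnt[OF s(1) \<open>cnt s = 0 \<or> cnt s = M\<close>, of t] \<open>cnt s = 0 \<or> cnt s = M\<close> by auto
  qed
qed

lemma reach:
  "s \<in> states N \<Longrightarrow> 0 < cnt s \<Longrightarrow> M - cnt s \<le> k \<Longrightarrow>
     (\<Sum>t\<in>{t\<in>states N. cnt t = M}. Pd k s t) \<ge> \<eta> ^ k"
proof (induction k arbitrary: s)
  case 0
  then have "cnt s = M" using cb[of s] by auto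
  then show ?case using closed_mass[of s 0] 0 by auto
next
  case (Suc k)
  show ?case
  proof (cases "cnt s = M")
    case True
    then have "(\<Sum>t\<in>{t\<in>states N. cnt t = M}. Pd (Suc k) s t) = 1"
      using closed_mass[of s "Suc k"] Suc.prems by auto
    moreover have "\<eta> ^ Suc k \<le> 1" using eta by (intro power_le_one) auto
    ultimately show ?thesis by simp
  next
    case False
    then have lt: "cnt s < M" using cb[of s] Suc.prems by auto
    let ?A = "{t\<in>states N. cnt t = M}"
    let ?B = "{t\<in>states N. cnt t = Suc (cnt s)}"
    have "(\<Sum>t\<in>?A. Pd (Suc k) s t) = (\<Sum>t\<in>?A. \<Sum>u\<in>states N. Kd s u * Pd k u t)"
      using kp_first[of s N _ w1 w2 b c r \<delta> k] Suc.prems by (intro sum.cong) auto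
    also have "\<dots> = (\<Sum>u\<in>states N. Kd s u * (\<Sum>t\<in>?A. Pd k u t))"
      by (simp add: sum_distrib_left) (rule sum.swap)
    also have "\<dots> \<ge> (\<Sum>u\<in>?B. Kd s u * (\<Sum>t\<in>?A. Pd k u t))"
    proof (rule sum_mono2[OF finite_states])
      show "?B \<subseteq> states N" by blast
      fix u assume "u \<in> states N - ?B"
      then have u: "u \<in> states N" by blast
      show "0 \<le> Kd s u * (\<Sum>t\<in>?A. Pd k u t)"
        by (rule mult_nonneg_nonneg[OF nn[OF Suc.prems(1) u] sum_nonneg])
           (use kp_nonneg[OF nn rs u] in simp)
    qed
    moreover have "(\<Sum>u\<in>?B. Kd s u * (\<Sum>t\<in>?A. Pd k u t)) \<ge> (\<Sum>u\<in>?B. Kd s u * \<eta> ^ k)"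
    proof (rule sum_mono)
      fix u assume u: "u \<in> ?B"
      then have "\<eta> ^ k \<le> (\<Sum>t\<in>?A. Pd k u t)" using Suc.IH[of u] Suc.prems lt by auto
      then show "Kd s u * \<eta> ^ k \<le> Kd s u * (\<Sum>t\<in>?A. Pd k u t)"
        using nn[of s u] u Suc.prems by (intro mult_left_mono) auto
    qed
    moreover have "(\<Sum>u\<in>?B. Kd s u * \<eta> ^ k) \<ge> \<eta> * \<eta> ^ k"
      using pr[of s] Suc.prems lt eta
      by (simp add: sum_distrib_right[symmetric] mult_right_mono)
    ultimately show ?thesis by simp
  qed
qed

lemma mixed_step:
  assumes s: "s \<in> mixedd"
  shows "(\<Sum>t\<in>mixedd. Pd M s t) \<le> 1 - \<eta> ^ M"
proof -
  have "(\<Sum>t\<in>mixedd. Pd M s t) + (\<Sum>t\<in>{t\<in>states N. cnt t = M}. Pd M s t)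
      = (\<Sum>t\<in>mixedd \<union> {t\<in>states N. cnt t = M}. Pd M s t)"
    by (rule sum.union_disjoint[symmetric]) (auto simp: finite_states)
  also have "\<dots> \<le> 1" by (rule kp_le1[OF nn rs]) (use s in auto)
  finally show ?thesis using reach[of s M] s by auto
qed

lemma mixed_shift:
  assumes s: "s \<in> states N"
  shows "(\<Sum>t\<in>mixedd. Pd (n + M) s t) \<le> (1 - \<eta> ^ M) * (\<Sum>t\<in>mixedd. Pd n s t)"
proof -
  have "(\<Sum>t\<in>mixedd. Pd (n + M) s t) = (\<Sum>t\<in>mixedd. \<Sum>u\<in>states N. Pd n s u * Pd M u t)"
    using kp_add[of s N _ w1 w2 b c r \<delta> n M] s by (intro sum.cong) auto
  also have "\<dots> = (\<Sum>u\<in>states N. Pd n s u * (\<Sum>t\<in>mixedd. Pd M u t))"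
    by (simp add: sum_distrib_left) (rule sum.swap)
  also have "\<dots> = (\<Sum>u\<in>mixedd. Pd n s u * (\<Sum>t\<in>mixedd. Pd M u t))"
    by (rule sum.mono_neutral_right) (use mixed_zero in \<open>auto simp: finite_states\<close>)
  also have "\<dots> \<le> (\<Sum>u\<in>mixedd. Pd n s u * (1 - \<eta> ^ M))"
    by (rule sum_mono, rule mult_left_mono) (use mixed_step kp_nonneg[OF nn rs] s in auto)
  also have "\<dots> = (\<Sum>u\<in>mixedd. Pd n s u) * (1 - \<eta> ^ M)" by (rule sum_distrib_right[symmetric])
  finally show ?thesis by (simp only: mult.commute)
qed

lemma mixed_bound:
  assumes s: "s \<in> states N"
  shows "(\<Sum>t\<in>mixedd. Pd n s t) \<le> (1 - \<eta> ^ M) ^ (n div M)"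
proof (induction n rule: less_induct)
  case (less n)
  show ?case
  proof (cases "n < M")
    case True
    then show ?thesis using kp_le1[OF nn rs s, of mixedd n] by auto
  next
    case False
    then obtain m where m: "n = m + M" by (metis add.commute le_add_diff_inverse not_less)
    have q: "0 \<le> 1 - \<eta> ^ M" using eta by (simp add: power_le_one)
    have "(\<Sum>t\<in>mixedd. Pd n s t) \<le> (1 - \<eta> ^ M) * (\<Sum>t\<in>mixedd. Pd m s t)"
      using mixed_shift[OF s, of m] m by simp
    also have "\<dots> \<le> (1 - \<eta> ^ M) * (1 - \<eta> ^ M) ^ (m div M)"
      using less.IH[of m] m M q by (intro mult_left_mono) auto
    also have "\<dots> = (1 - \<eta> ^ M) ^ (n div M)" using m M by simp
    finally show ?thesis .
  qed
qed

end

lemma geom_bound: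
  fixes q :: real and M :: nat
  assumes q: "0 \<le> q" "q < 1" and M: "M > 0"
  shows "\<exists>C \<rho>. 0 < \<rho> \<and> \<rho> < 1 \<and> (\<forall>n. q ^ (n div M) \<le> C * \<rho> ^ n)"
proof -
  define q' where "q' = max q (1/2)"
  have q': "q \<le> q'" "1/2 \<le> q'" "q' < 1" using q by (auto simp: q'_def)
  define \<rho> where "\<rho> = root M q'"
  have \<rho>: "0 < \<rho>" "\<rho> < 1" "\<rho> ^ M = q'" "q' > 0" using q' M
    by (auto simp: \<rho>_def real_root_lt_1_iff real_root_pow_pos2)
  have "q ^ (n div M) \<le> (1 / \<rho> ^ M) * \<rho> ^ n" for n
  proof -
    have "q ^ (n div M) \<le> q' ^ (n div M)" using q q' by (intro power_mono) auto
    also have "\<dots> = \<rho> ^ (M * (n div M))" using \<rho> by (simp add: power_mult)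
    also have "\<dots> \<le> \<rho> ^ (n - M)"
    proof (rule power_decreasing)
      have "n < M * (n div M) + M" using M
        by (metis add.commute div_mult_mod_eq mod_less_divisor mult.commute nat_add_left_cancel_less)
      then show "n - M \<le> M * (n div M)" by linarith
    qed (use \<rho> in auto)
    also have "\<dots> \<le> (1 / \<rho> ^ M) * \<rho> ^ n"
    proof (cases "n \<ge> M")
      case True
      then have "\<rho> ^ n = \<rho> ^ (n - M) * \<rho> ^ M" by (metis le_add_diff_inverse2 power_add)
      moreover have "\<rho> ^ M > 0" using \<rho> by simp
      ultimately have "(1 / \<rho> ^ M) * \<rho> ^ n = \<rho> ^ (n - M)" by (simp del: power_eq_0_iff)
      then show ?thesis by simp
    next
      case False
      then have "\<rho> ^ n \<ge> \<rho> ^ M" using \<rho> by (intro power_decreasing) auto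
      then have "1 \<le> (1 / \<rho> ^ M) * \<rho> ^ n" using \<rho> by (simp add: field_simps)
      then show ?thesis using False by simp
    qed
    finally show ?thesis .
  qed
  then show ?thesis using \<rho> by blast
qed

lemma sum_ind: "finite A \<Longrightarrow> (\<Sum>t\<in>{t\<in>A. P t}. f t) = (\<Sum>t\<in>A. f t * ind (P t))"
  by (simp add: ind_def sum.inter_filter[symmetric] if_distrib[where f="\<lambda>x. _ * x"] cong: if_cong)

lemma ind_simps[simp]: "ind True = 1" "ind False = 0" "0 \<le> ind P" "ind P \<le> 1" "ind P * ind P = ind P"
  by (auto simp: ind_def)

definition qprob :: "nat \<Rightarrow> (nat \<Rightarrow> nat \<Rightarrow> real) \<Rightarrow> (nat \<Rightarrow> real) \<Rightarrow> nat \<Rightarrow> nat \<Rightarrow> real" where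
  "qprob N w F i j = w i j * F j / (\<Sum>k<N. w i k * F k)"

definition eta :: "nat \<Rightarrow> (nat \<Rightarrow> nat \<Rightarrow> real) \<Rightarrow> real" where
  "eta N w = Min (insert 1 ((\<lambda>(i,j). w i j / (3 * real N * strength N w i)) `
      {(i,j). i < N \<and> j < N \<and> 0 < w i j}))"

context
  fixes N :: nat and w :: "nat \<Rightarrow> nat \<Rightarrow> real"
  assumes wg: "weighted_graph N w" and Npos: "N > 0"
begin

lemma eta_pos: "0 < eta N w" "eta N w \<le> 1"
proof -
  have fin: "finite {(i,j). i < N \<and> j < N \<and> 0 < w i j}"
    by (rule finite_subset[of _ "{..<N} \<times> {..<N}"]) auto
  have "\<forall>a\<in>(\<lambda>(i,j). w i j / (3 * real N * strength N w i)) `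
      {(i,j). i < N \<and> j < N \<and> 0 < w i j}. 0 < a"
  proof
    fix a assume "a \<in> (\<lambda>(i,j). w i j / (3 * real N * strength N w i)) `
      {(i,j). i < N \<and> j < N \<and> 0 < w i j}"
    then obtain i j where ij: "i < N" "j < N" "0 < w i j" "a = w i j / (3 * real N * strength N w i)" by auto
    have "0 < strength N w i" using wg_str_pos[OF wg ij(1)] .
    then show "0 < a" using ij Npos by simp
  qed
  then show "0 < eta N w" unfolding eta_def
    using fin by (subst Min_gr_iff) auto
  show "eta N w \<le> 1" unfolding eta_def using fin by (intro Min_le) auto
qed

lemma eta_le: "i < N \<Longrightarrow> j < N \<Longrightarrow> 0 < w i j \<Longrightarrow> eta N w \<le> w i j / (3 * real N * strength N w i)"
proof -
  assume a: "i < N" "j < N" "0 < w i j"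
  have fin: "finite {(i,j). i < N \<and> j < N \<and> 0 < w i j}"
    by (rule finite_subset[of _ "{..<N} \<times> {..<N}"]) auto
  show ?thesis unfolding eta_def using fin a by (intro Min_le) auto
qed

lemma crossing:
  assumes X: "X \<subseteq> {0..<N}" "j0 \<in> X" "i0 < N" "i0 \<notin> X"
  shows "\<exists>a b. a \<in> X \<and> b < N \<and> b \<notin> X \<and> w a b > 0"
proof -
  let ?E = "{(a, b). a < N \<and> b < N \<and> w a b > 0}"
  have p: "(j0, i0) \<in> ?E\<^sup>*" using wg X by (auto simp: weighted_graph_def connected_graph_def)
  have "k \<in> X \<or> (\<exists>a b. a \<in> X \<and> b < N \<and> b \<notin> X \<and> w a b > 0)" if "(j0, k) \<in> ?E\<^sup>*" for k
    using that
  proof (induction rule: rtrancl_induct)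
    case base then show ?case using X by auto
  next
    case (step y z) then show ?case by blast
  qed
  from this[OF p] X show ?thesis by auto
qed

context
  fixes F :: "nat \<Rightarrow> real"
  assumes Fb: "\<And>k. k < N \<Longrightarrow> 1/2 \<le> F k \<and> F k \<le> 3/2"
begin

lemma den_pos: "i < N \<Longrightarrow> (\<Sum>k<N. w i k * F k) > 0"
proof -
  assume i: "i < N"
  have "(\<Sum>k<N. w i k * F k) \<ge> (\<Sum>k<N. w i k * (1/2))"
    by (rule sum_mono, rule mult_left_mono) (use Fb wg_nonneg[OF wg, of i] i in auto)
  also have "(\<Sum>k<N. w i k * (1/2)) = strength N w i / 2"
    by (simp add: strength_def sum_divide_distrib)
  finally show ?thesis using wg_str_pos[OF wg i] by linarith
qed

lemma den_le: "i < N \<Longrightarrow> (\<Sum>k<N. w i k * F k) \<le> 3/2 * strength N w i"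
proof -
  assume i: "i < N"
  have "(\<Sum>k<N. w i k * F k) \<le> (\<Sum>k<N. w i k * (3/2))"
    by (rule sum_mono, rule mult_left_mono) (use Fb wg_nonneg[OF wg, of i] i in auto)
  also have "(\<Sum>k<N. w i k * (3/2)) = (\<Sum>k<N. w i k) * (3/2)"
    by (rule sum_distrib_right[symmetric])
  finally show ?thesis by (simp add: strength_def)
qed

lemma q_nonneg: "i < N \<Longrightarrow> j < N \<Longrightarrow> 0 \<le> qprob N w F i j"
  unfolding qprob_def using den_pos[of i] wg_nonneg[OF wg, of i j] Fb[of j] by auto

lemma q_sum: "i < N \<Longrightarrow> (\<Sum>j<N. qprob N w F i j) = 1"
  unfolding qprob_def using den_pos[of i] by (simp add: sum_divide_distrib[symmetric])

lemma q_lower: "i < N \<Longrightarrow> j < N \<Longrightarrow> 0 < w i j \<Longrightarrow> qprob N w F i j \<ge> w i j / (3 * strength N w i)"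
proof -
  assume a: "i < N" "j < N" "0 < w i j"
  have s: "strength N w i > 0" using wg_str_pos[OF wg a(1)] .
  have "w i j / (3 * strength N w i) = w i j * (1/2) / (3/2 * strength N w i)" by simp
  also have "\<dots> \<le> w i j * F j / (3/2 * strength N w i)"
    using Fb[OF a(2)] a s by (intro divide_right_mono mult_left_mono) auto
  also have "\<dots> \<le> w i j * F j / (\<Sum>k<N. w i k * F k)"
    using Fb[OF a(2)] a s den_pos[OF a(1)] den_le[OF a(1)]
    by (intro divide_left_mono) auto
  finally show ?thesis by (simp add: qprob_def)
qed

lemma layer_exp_q:
  "X \<subseteq> {0..<N} \<Longrightarrow> (\<Sum>Y\<in>Pow {0..<N}. layer_step N w F X Y * h Y) =
    (\<Sum>i<N. (1 / real N) * (\<Sum>j<N. qprob N w F i j * h (copy_type X i j)))"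
  by (simp add: layer_exp qprob_def)

lemma layer_nonneg: "layer_step N w F X Y \<ge> 0"
  unfolding layer_step_def
  by (intro sum_nonneg mult_nonneg_nonneg) (use q_nonneg in \<open>auto simp: qprob_def\<close>)

lemma layer_rowsum: "X \<subseteq> {0..<N} \<Longrightarrow> (\<Sum>Y\<in>Pow {0..<N}. layer_step N w F X Y) = 1"
proof -
  assume X: "X \<subseteq> {0..<N}"
  have "(\<Sum>Y\<in>Pow {0..<N}. layer_step N w F X Y) = (\<Sum>Y\<in>Pow {0..<N}. layer_step N w F X Y * 1)" by simp
  also have "\<dots> = (\<Sum>i<N. (1 / real N))" unfolding layer_exp_q[OF X] by (simp add: q_sum)
  finally show ?thesis using \<open>N > 0\<close> by simp
qed

lemma layer_abs: "X = {} \<or> X = {0..<N} \<Longrightarrow>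
   (\<Sum>Y\<in>Pow {0..<N}. layer_step N w F X Y * ind (Y = X)) = 1"
proof -
  assume X: "X = {} \<or> X = {0..<N}"
  then have c: "i < N \<Longrightarrow> j < N \<Longrightarrow> copy_type X i j = X" for i j
    by (auto simp: copy_type_def)
  have X': "X \<subseteq> {0..<N}" using X by auto
  have "(\<Sum>Y\<in>Pow {0..<N}. layer_step N w F X Y * ind (Y = X)) = 
        (\<Sum>Y\<in>Pow {0..<N}. layer_step N w F X Y * 1)"
    unfolding layer_exp_q[OF X'] by (intro sum.cong refl arg_cong2[where f="(*)"]) (simp add: c)
  also have "\<dots> = 1" using layer_rowsum[OF X'] by simp
  finally show ?thesis .
qed

lemma layer_prog:
  assumes X: "X \<subseteq> {0..<N}" "X \<noteq> {}" "X \<noteq> {0..<N}"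
  shows "(\<Sum>Y\<in>Pow {0..<N}. layer_step N w F X Y * ind (card Y = Suc (card X))) \<ge> eta N w"
proof -
  obtain j0 where "j0 \<in> X" using X by auto
  have "\<not> {0..<N} \<subseteq> X" using X(1,3) by blast
  then obtain i0 where "i0 \<in> {0..<N}" "i0 \<notin> X" by blast
  then have "i0 < N" "i0 \<notin> X" by auto
  obtain a i where ai: "a \<in> X" "i < N" "i \<notin> X" "w a i > 0"
    using crossing[OF X(1) \<open>j0 \<in> X\<close> \<open>i0 < N\<close> \<open>i0 \<notin> X\<close>] by auto
  have a: "a < N" using ai X by auto
  have wia: "w i a > 0" using ai a wg_sym[OF wg, of a i] by simp
  have ct: "card (copy_type X i a) = Suc (card X)"
    using ai finite_subset[OF X(1)] by (simp add: copy_type_def)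
  let ?f = "\<lambda>i j. qprob N w F i j * ind (card (copy_type X i j) = Suc (card X))"
  have nn: "0 \<le> ?f i' j'" if "i' < N" "j' < N" for i' j'
    using q_nonneg that by simp
  have "eta N w \<le> (1 / real N) * qprob N w F i a"
  proof -
    have "eta N w \<le> w i a / (3 * real N * strength N w i)" using eta_le[OF ai(2) a wia] .
    also have "\<dots> = (1 / real N) * (w i a / (3 * strength N w i))" by simp
    also have "\<dots> \<le> (1 / real N) * qprob N w F i a"
      by (intro mult_left_mono q_lower) (use ai a wia in auto)
    finally show ?thesis .
  qed
  also have "\<dots> = (1 / real N) * ?f i a" using ct by simp
  also have "\<dots> \<le> (1 / real N) * (\<Sum>j<N. ?f i j)"
    by (intro mult_left_mono member_le_sum) (use nn ai a in auto)
  also have "\<dots> \<le> (\<Sum>i<N. (1 / real N) * (\<Sum>j<N. ?f i j))"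
  proof (rule member_le_sum)
    fix x assume "x \<in> {..<N} - {i}"
    then have "x < N" by simp
    then show "0 \<le> (1 / real N) * (\<Sum>j<N. ?f x j)"
    proof -
      have "0 \<le> (\<Sum>j<N. ?f x j)" by (rule sum_nonneg) (use nn \<open>x < N\<close> in simp)
      then show ?thesis by simp
    qed
  qed (use ai in auto)
  finally show ?thesis unfolding layer_exp_q[OF X(1)] .
qed

end
end


locale TL =
  fixes N :: nat and w1 w2 :: "nat \<Rightarrow> nat \<Rightarrow> real" and b c r :: real
  assumes N2: "N \<ge> 2" and g1: "weighted_graph N w1" and g2: "weighted_graph N w2"
begin

lemma Npos: "N > 0" using N2 by simp

definition U where
  "U = \<bar>c\<bar> + \<bar>b\<bar> * (\<Sum>i<N. \<Sum>j<N. w1 i j / strength N w1 j) + \<bar>r - 1\<bar> + 1"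
definition d0 where "d0 = 1 / (2 * U)"

abbreviation Fe :: "real \<Rightarrow> nat set \<times> nat set \<Rightarrow> nat \<Rightarrow> real" where
  "Fe \<delta> s \<equiv> fecundity N w1 b c r \<delta> (fst s) (snd s)"
abbreviation K where "K \<delta> \<equiv> kernel N w1 w2 b c r \<delta>"
abbreviation Kp where "Kp \<delta> \<equiv> kernel_pow N w1 w2 b c r \<delta>"

lemma wsum_nonneg: "0 \<le> (\<Sum>i<N. \<Sum>j<N. w1 i j / strength N w1 j)"
  by (intro sum_nonneg divide_nonneg_nonneg wg_nonneg[OF g1] less_imp_le[OF wg_str_pos[OF g1]]) auto

lemma U_ge1: "U \<ge> 1"
  unfolding U_def using wsum_nonneg by (simp add: add_increasing)

lemma d0_pos: "d0 > 0" using U_ge1 by (simp add: d0_def)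

lemma payoff_bound:
  assumes i: "i < N"
  shows "\<bar>payoff N w1 b c r X1 X2 i\<bar> \<le> U"
proof -
  have "\<bar>\<Sum>j<N. b * (w1 i j / strength N w1 j) * ind (j \<in> X1)\<bar> \<le> (\<Sum>j<N. \<bar>b\<bar> * (w1 i j / strength N w1 j))"
  proof -
    have "\<bar>\<Sum>j<N. b * (w1 i j / strength N w1 j) * ind (j \<in> X1)\<bar> \<le> (\<Sum>j<N. \<bar>b * (w1 i j / strength N w1 j) * ind (j \<in> X1)\<bar>)"
      by (rule sum_abs)
    also have "\<dots> \<le> (\<Sum>j<N. \<bar>b\<bar> * (w1 i j / strength N w1 j))"
    proof (rule sum_mono)
      fix j assume "j \<in> {..<N}"
      then have h: "0 \<le> w1 i j / strength N w1 j"
        using wg_nonneg[OF g1, of i j] wg_str_pos[OF g1, of j] i by simp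
      have "\<bar>b * (w1 i j / strength N w1 j) * ind (j \<in> X1)\<bar> = \<bar>b\<bar> * (w1 i j / strength N w1 j) * ind (j \<in> X1)"
        using h by (simp only: abs_mult ind_def abs_of_nonneg[OF h]) simp
      also have "\<dots> \<le> \<bar>b\<bar> * (w1 i j / strength N w1 j) * 1"
        by (rule mult_left_mono[OF ind_simps(4) mult_nonneg_nonneg[OF abs_ge_zero h]])
      finally show "\<bar>b * (w1 i j / strength N w1 j) * ind (j \<in> X1)\<bar> \<le> \<bar>b\<bar> * (w1 i j / strength N w1 j)" by simp
    qed
    finally show ?thesis .
  qed
  also have "\<dots> = \<bar>b\<bar> * (\<Sum>j<N. w1 i j / strength N w1 j)" by (simp add: sum_distrib_left)
  also have "\<dots> \<le> \<bar>b\<bar> * (\<Sum>i<N. \<Sum>j<N. w1 i j / strength N w1 j)"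
    by (intro mult_left_mono member_le_sum[of i] sum_nonneg divide_nonneg_nonneg wg_nonneg[OF g1]
        less_imp_le[OF wg_str_pos[OF g1]]) (use i in auto)
  finally have B: "\<bar>\<Sum>j<N. b * (w1 i j / strength N w1 j) * ind (j \<in> X1)\<bar> \<le> \<bar>b\<bar> * (\<Sum>i<N. \<Sum>j<N. w1 i j / strength N w1 j)" .
  have C: "\<bar>- c * ind (i \<in> X1)\<bar> \<le> \<bar>c\<bar>" "\<bar>(r - 1) * ind (i \<in> X2)\<bar> \<le> \<bar>r - 1\<bar>"
    by (auto simp: ind_def)
  show ?thesis unfolding payoff_def U_def using B C by linarith
qed

lemma Fb:
  assumes "0 \<le> \<delta>" "\<delta> \<le> d0" "k < N"
  shows "1/2 \<le> fecundity N w1 b c r \<delta> X1 X2 k \<and> fecundity N w1 b c r \<delta> X1 X2 k \<le> 3/2"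
proof -
  have "\<bar>\<delta> * payoff N w1 b c r X1 X2 k\<bar> \<le> d0 * U"
    unfolding abs_mult using assms payoff_bound[OF assms(3)] U_ge1
    by (intro mult_mono) auto
  also have "d0 * U = 1/2" using U_ge1 by (simp add: d0_def)
  finally show ?thesis unfolding fecundity_def by linarith
qed

lemma Fe0: "fecundity N w1 b c r 0 X1 X2 = (\<lambda>k. 1)"
  by (rule ext) (simp add: fecundity_def)

lemma states_iff: "s \<in> states N \<longleftrightarrow> fst s \<subseteq> {0..<N} \<and> snd s \<subseteq> {0..<N}"
  by (cases s) (auto simp: states_def)

lemma kernel_prod:
  assumes s: "s \<in> states N"
  shows "(\<Sum>t\<in>states N. K \<delta> s t * (h1 (fst t) * h2 (snd t))) =
    (\<Sum>Y\<in>Pow {0..<N}. layer_step N w1 (Fe \<delta> s) (fst s) Y * h1 Y) *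
    (\<Sum>Y\<in>Pow {0..<N}. layer_step N w2 (Fe \<delta> s) (snd s) Y * h2 Y)"
proof -
  have "(\<Sum>t\<in>states N. K \<delta> s t * (h1 (fst t) * h2 (snd t))) =
      (\<Sum>(Y1,Y2)\<in>Pow {0..<N} \<times> Pow {0..<N}. (layer_step N w1 (Fe \<delta> s) (fst s) Y1 * h1 Y1) *
          (layer_step N w2 (Fe \<delta> s) (snd s) Y2 * h2 Y2))"
    unfolding states_def kernel_def Let_def by (intro sum.cong) (auto simp: ac_simps)
  also have "\<dots> = (\<Sum>Y1\<in>Pow {0..<N}. \<Sum>Y2\<in>Pow {0..<N}. (layer_step N w1 (Fe \<delta> s) (fst s) Y1 * h1 Y1) *
          (layer_step N w2 (Fe \<delta> s) (snd s) Y2 * h2 Y2))"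
    by (rule sum.cartesian_product[symmetric])
  also have "\<dots> = (\<Sum>Y\<in>Pow {0..<N}. layer_step N w1 (Fe \<delta> s) (fst s) Y * h1 Y) *
    (\<Sum>Y\<in>Pow {0..<N}. layer_step N w2 (Fe \<delta> s) (snd s) Y * h2 Y)"
    by (rule sum_product[symmetric])
  finally show ?thesis .
qed


lemma Fbs: "\<delta> \<in> {0..d0} \<Longrightarrow> (\<And>k. k < N \<Longrightarrow> 1/2 \<le> Fe \<delta> s k \<and> Fe \<delta> s k \<le> 3/2)"
  using Fb by auto

lemma K_nonneg:
  assumes "\<delta> \<in> {0..d0}"
  shows "K \<delta> s t \<ge> 0"
  unfolding kernel_def Let_def
  by (intro mult_nonneg_nonneg layer_nonneg[where F="Fe \<delta> s", OF g1 Npos Fbs[OF assms]] layer_nonneg[where F="Fe \<delta> s", OF g2 Npos Fbs[OF assms]])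

lemma kernel_fst:
  assumes d: "\<delta> \<in> {0..d0}" and s: "s \<in> states N"
  shows "(\<Sum>t\<in>states N. K \<delta> s t * g (fst t)) =
    (\<Sum>Y\<in>Pow {0..<N}. layer_step N w1 (Fe \<delta> s) (fst s) Y * g Y)"
proof -
  have "(\<Sum>t\<in>states N. K \<delta> s t * g (fst t)) = (\<Sum>t\<in>states N. K \<delta> s t * (g (fst t) * (\<lambda>_. 1) (snd t)))"
    by simp
  also have "\<dots> = (\<Sum>Y\<in>Pow {0..<N}. layer_step N w1 (Fe \<delta> s) (fst s) Y * g Y)"
    using kernel_prod[OF s, of \<delta> g "\<lambda>_. 1"] layer_rowsum[where F="Fe \<delta> s", OF g2 Npos Fbs[OF d]] s by (simp add: states_iff)
  finally show ?thesis .
qed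

lemma kernel_snd:
  assumes d: "\<delta> \<in> {0..d0}" and s: "s \<in> states N"
  shows "(\<Sum>t\<in>states N. K \<delta> s t * g (snd t)) =
    (\<Sum>Y\<in>Pow {0..<N}. layer_step N w2 (Fe \<delta> s) (snd s) Y * g Y)"
proof -
  have "(\<Sum>t\<in>states N. K \<delta> s t * g (snd t)) = (\<Sum>t\<in>states N. K \<delta> s t * ((\<lambda>_. 1) (fst t) * g (snd t)))"
    by simp
  also have "\<dots> = (\<Sum>Y\<in>Pow {0..<N}. layer_step N w2 (Fe \<delta> s) (snd s) Y * g Y)"
    using kernel_prod[OF s, of \<delta> "\<lambda>_. 1" g] layer_rowsum[where F="Fe \<delta> s", OF g1 Npos Fbs[OF d]] s by (simp add: states_iff)
  finally show ?thesis .
qed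

lemma K_rowsum:
  assumes d: "\<delta> \<in> {0..d0}" and s: "s \<in> states N"
  shows "(\<Sum>t\<in>states N. K \<delta> s t) = 1"
  using kernel_fst[OF d s, of "\<lambda>_. 1"] layer_rowsum[where F="Fe \<delta> s", OF g1 Npos Fbs[OF d]] s by (simp add: states_iff)

lemma card_cases:
  assumes "X \<subseteq> {0..<N}"
  shows "card X \<le> N" "card X = 0 \<longleftrightarrow> X = {}" "card X = N \<longleftrightarrow> X = {0..<N}"
proof -
  show "card X \<le> N" using card_mono[OF _ assms] by simp
  show "card X = 0 \<longleftrightarrow> X = {}" using finite_subset[OF assms] by simp
  show "card X = N \<longleftrightarrow> X = {0..<N}" using card_subset_eq[OF _ assms] by auto
qed

definition mixed1 where "mixed1 = {t\<in>states N. 0 < card (fst t) \<and> card (fst t) < N}"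
definition mixed2 where "mixed2 = {t\<in>states N. 0 < card (snd t) \<and> card (snd t) < N}"

lemma mix1_bound:
  "\<exists>C \<rho>. 0 < \<rho> \<and> \<rho> < 1 \<and> (\<forall>\<delta>\<in>{0..d0}. \<forall>s\<in>states N. \<forall>n.
      (\<Sum>t\<in>mixed1. Kp \<delta> n s t) \<le> C * \<rho> ^ n)"
proof -
  let ?\<eta> = "eta N w1"
  have e: "0 < ?\<eta>" "?\<eta> \<le> 1" using eta_pos[OF g1 Npos] by auto
  have q: "0 \<le> 1 - ?\<eta> ^ N" "1 - ?\<eta> ^ N < 1" using e Npos by (auto simp: power_le_one)
  obtain C \<rho> where C: "0 < \<rho>" "\<rho> < 1" "\<And>n. (1 - ?\<eta> ^ N) ^ (n div N) \<le> C * \<rho> ^ n"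
    using geom_bound[OF q Npos] by blast
  have "(\<Sum>t\<in>mixed1. Kp \<delta> n s t) \<le> C * \<rho> ^ n" if d: "\<delta> \<in> {0..d0}" and s: "s \<in> states N" for \<delta> s n
  proof -
    have nn: "\<And>s t. s \<in> states N \<Longrightarrow> t \<in> states N \<Longrightarrow> K \<delta> s t \<ge> 0" using K_nonneg[OF d] by blast
    have rs: "\<And>s. s \<in> states N \<Longrightarrow> (\<Sum>t\<in>states N. K \<delta> s t) = 1" using K_rowsum[OF d] by blast
    have cb: "\<And>s. s \<in> states N \<Longrightarrow> card (fst s) \<le> N"
      proof -
        fix s :: "nat set \<times> nat set" assume "s \<in> states N"
        then have "fst s \<subseteq> {0..<N}" using states_iff by blast
        then show "card (fst s) \<le> N" by (rule card_cases(1))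
      qed
    have ab: "(\<Sum>t\<in>{t\<in>states N. card (fst t) = card (fst s)}. K \<delta> s t) = 1"
      if s: "s \<in> states N" and cs: "card (fst s) = 0 \<or> card (fst s) = N" for s
    proof -
      have sX: "fst s \<subseteq> {0..<N}" using s states_iff by blast
      have X: "fst s = {} \<or> fst s = {0..<N}" using cs card_cases[OF sX] by blast
      have "{t\<in>states N. card (fst t) = card (fst s)} = {t\<in>states N. fst t = fst s}"
      proof (intro Collect_cong conj_cong refl)
        fix t assume "t \<in> states N"
        then have tX: "fst t \<subseteq> {0..<N}" using states_iff by blast
        show "card (fst t) = card (fst s) \<longleftrightarrow> fst t = fst s"
        proof (cases "fst s = {}")
          case True then show ?thesis using card_cases(2)[OF tX] by simp
        next
          case False then have "fst s = {0..<N}" using X by blast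
          then show ?thesis using card_cases(3)[OF tX] by simp
        qed
      qed
      then have "(\<Sum>t\<in>{t\<in>states N. card (fst t) = card (fst s)}. K \<delta> s t) =
          (\<Sum>t\<in>states N. K \<delta> s t * ind (fst t = fst s))"
        by (simp add: sum_ind finite_states)
      also have "\<dots> = 1" unfolding kernel_fst[OF d s, of "\<lambda>Y. ind (Y = fst s)"]
        by (rule layer_abs[where F="Fe \<delta> s", OF g1 Npos Fbs[OF d] X])
      finally show ?thesis .
    qed
    have pr: "(\<Sum>t\<in>{t\<in>states N. card (fst t) = Suc (card (fst s))}. K \<delta> s t) \<ge> ?\<eta>"
      if s: "s \<in> states N" and cs: "0 < card (fst s)" "card (fst s) < N" for s
    proof -
      have sX: "fst s \<subseteq> {0..<N}" using s states_iff by blast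
      have X: "fst s \<subseteq> {0..<N}" "fst s \<noteq> {}" "fst s \<noteq> {0..<N}" using cs card_cases[OF sX] sX by auto
      have "(\<Sum>t\<in>{t\<in>states N. card (fst t) = Suc (card (fst s))}. K \<delta> s t) =
          (\<Sum>t\<in>states N. K \<delta> s t * ind (card (fst t) = Suc (card (fst s))))"
        by (simp add: sum_ind finite_states)
      also have "\<dots> \<ge> ?\<eta>" unfolding kernel_fst[OF d s, of "\<lambda>Y. ind (card Y = Suc (card (fst s)))"]
        by (rule layer_prog[where F="Fe \<delta> s", OF g1 Npos Fbs[OF d] X])
      finally show ?thesis .
    qed
    have "(\<Sum>t\<in>mixed1. Kp \<delta> n s t) \<le> (1 - ?\<eta> ^ N) ^ (n div N)"
      unfolding mixed1_def
      by (rule mixed_bound[where cnt="\<lambda>t. card (fst t)" and \<eta>="eta N w1" and M=N, OF nn rs cb ab pr e Npos s])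
    then show ?thesis using C(3)[of n] by linarith
  qed
  then show ?thesis using C(1,2) by blast
qed

lemma mix2_bound:
  "\<exists>C \<rho>. 0 < \<rho> \<and> \<rho> < 1 \<and> (\<forall>s\<in>states N. \<forall>n.
      (\<Sum>t\<in>mixed2. Kp 0 n s t) \<le> C * \<rho> ^ n)"
proof -
  let ?\<eta> = "eta N w2"
  have d: "0 \<in> {0..d0}" using d0_pos by simp
  have e: "0 < ?\<eta>" "?\<eta> \<le> 1" using eta_pos[OF g2 Npos] by auto
  have q: "0 \<le> 1 - ?\<eta> ^ N" "1 - ?\<eta> ^ N < 1" using e Npos by (auto simp: power_le_one)
  obtain C \<rho> where C: "0 < \<rho>" "\<rho> < 1" "\<And>n. (1 - ?\<eta> ^ N) ^ (n div N) \<le> C * \<rho> ^ n"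
    using geom_bound[OF q Npos] by blast
  have "(\<Sum>t\<in>mixed2. Kp 0 n s t) \<le> C * \<rho> ^ n" if s: "s \<in> states N" for s n
  proof -
    have nn: "\<And>s t. s \<in> states N \<Longrightarrow> t \<in> states N \<Longrightarrow> K 0 s t \<ge> 0" using K_nonneg[OF d] by blast
    have rs: "\<And>s. s \<in> states N \<Longrightarrow> (\<Sum>t\<in>states N. K 0 s t) = 1" using K_rowsum[OF d] by blast
    have cb: "\<And>s. s \<in> states N \<Longrightarrow> card (snd s) \<le> N"
      proof -
        fix s :: "nat set \<times> nat set" assume "s \<in> states N"
        then have "snd s \<subseteq> {0..<N}" using states_iff by blast
        then show "card (snd s) \<le> N" by (rule card_cases(1))
      qed
    have ab: "(\<Sum>t\<in>{t\<in>states N. card (snd t) = card (snd s)}. K 0 s t) = 1"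
      if s: "s \<in> states N" and cs: "card (snd s) = 0 \<or> card (snd s) = N" for s
    proof -
      have sX: "snd s \<subseteq> {0..<N}" using s states_iff by blast
      have X: "snd s = {} \<or> snd s = {0..<N}" using cs card_cases[OF sX] by blast
      have "{t\<in>states N. card (snd t) = card (snd s)} = {t\<in>states N. snd t = snd s}"
      proof (intro Collect_cong conj_cong refl)
        fix t assume "t \<in> states N"
        then have tX: "snd t \<subseteq> {0..<N}" using states_iff by blast
        show "card (snd t) = card (snd s) \<longleftrightarrow> snd t = snd s"
        proof (cases "snd s = {}")
          case True then show ?thesis using card_cases(2)[OF tX] by simp
        next
          case False then have "snd s = {0..<N}" using X by blast
          then show ?thesis using card_cases(3)[OF tX] by simp
        qed
      qed
      then have "(\<Sum>t\<in>{t\<in>states N. card (snd t) = card (snd s)}. K 0 s t) =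
          (\<Sum>t\<in>states N. K 0 s t * ind (snd t = snd s))"
        by (simp add: sum_ind finite_states)
      also have "\<dots> = 1" unfolding kernel_snd[OF d s, of "\<lambda>Y. ind (Y = snd s)"]
        by (rule layer_abs[where F="Fe 0 s", OF g2 Npos Fbs[OF d] X])
      finally show ?thesis .
    qed
    have pr: "(\<Sum>t\<in>{t\<in>states N. card (snd t) = Suc (card (snd s))}. K 0 s t) \<ge> ?\<eta>"
      if s: "s \<in> states N" and cs: "0 < card (snd s)" "card (snd s) < N" for s
    proof -
      have sX: "snd s \<subseteq> {0..<N}" using s states_iff by blast
      have X: "snd s \<subseteq> {0..<N}" "snd s \<noteq> {}" "snd s \<noteq> {0..<N}" using cs card_cases[OF sX] sX by auto
      have "(\<Sum>t\<in>{t\<in>states N. card (snd t) = Suc (card (snd s))}. K 0 s t) =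
          (\<Sum>t\<in>states N. K 0 s t * ind (card (snd t) = Suc (card (snd s))))"
        by (simp add: sum_ind finite_states)
      also have "\<dots> \<ge> ?\<eta>" unfolding kernel_snd[OF d s, of "\<lambda>Y. ind (card Y = Suc (card (snd s)))"]
        by (rule layer_prog[where F="Fe 0 s", OF g2 Npos Fbs[OF d] X])
      finally show ?thesis .
    qed
    have "(\<Sum>t\<in>mixed2. Kp 0 n s t) \<le> (1 - ?\<eta> ^ N) ^ (n div N)"
      unfolding mixed2_def
      by (rule mixed_bound[where cnt="\<lambda>t. card (snd t)" and \<eta>="eta N w2" and M=N, OF nn rs cb ab pr e Npos s])
    then show ?thesis using C(3)[of n] by linarith
  qed
  then show ?thesis using C(1,2) by blast
qed

end

lemma avg_copy:
  assumes i: "i < N"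
  shows "avg_state N w (copy_type X i j) = avg_state N w X + stat_dist N w i * (ind (j \<in> X) - ind (i \<in> X))"
proof -
  have "avg_state N w (copy_type X i j) - avg_state N w X =
      (\<Sum>a<N. stat_dist N w a * (ind (a \<in> copy_type X i j) - ind (a \<in> X)))"
    by (simp add: avg_state_def sum_subtractf right_diff_distrib)
  also have "\<dots> = (\<Sum>a<N. if a = i then stat_dist N w i * (ind (j \<in> X) - ind (i \<in> X)) else 0)"
    by (intro sum.cong refl) (auto simp: copy_type_def ind_def)
  also have "\<dots> = stat_dist N w i * (ind (j \<in> X) - ind (i \<in> X))" using i by simp
  finally show ?thesis by simp
qed

context TL
begin

definition phi1 where "phi1 s = avg_state N w1 (fst s)"

definition Aw where "Aw s i = (\<Sum>k<N. w1 i k * payoff N w1 b c r (fst s) (snd s) k)"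

definition Gd where
  "Gd \<delta> s = (\<Sum>i<N. stat_dist N w1 i / real N * (\<Sum>j<N. ind (j \<in> fst s) *
      (w1 i j * (payoff N w1 b c r (fst s) (snd s) j * strength N w1 i - Aw s i) /
        (strength N w1 i * (\<Sum>k<N. w1 i k * Fe \<delta> s k)))))"

lemma q_minus_p:
  assumes d: "\<delta> \<in> {0..d0}" and i: "i < N"
  shows "qprob N w1 (Fe \<delta> s) i j - trans_prob N w1 i j =
    \<delta> * (w1 i j * (payoff N w1 b c r (fst s) (snd s) j * strength N w1 i - Aw s i) /
        (strength N w1 i * (\<Sum>k<N. w1 i k * Fe \<delta> s k)))"
proof -
  let ?u = "payoff N w1 b c r (fst s) (snd s)"
  let ?D = "\<Sum>k<N. w1 i k * Fe \<delta> s k"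
  let ?s = "strength N w1 i"
  have D: "?D = ?s + \<delta> * Aw s i"
    by (simp add: fecundity_def Aw_def strength_def distrib_left sum.distrib sum_distrib_left ac_simps)
  have Dp: "?D > 0" using den_pos[OF g1 Npos Fbs[OF d] i] .
  have sp: "?s > 0" using wg_str_pos[OF g1 i] .
  have "qprob N w1 (Fe \<delta> s) i j - trans_prob N w1 i j = w1 i j * (1 + \<delta> * ?u j) / ?D - w1 i j / ?s"
    by (simp add: qprob_def trans_prob_def fecundity_def)
  also have "\<dots> = w1 i j * ((1 + \<delta> * ?u j) * ?s - ?D) / (?s * ?D)"
    using Dp sp by (simp add: field_simps)
  also have "(1 + \<delta> * ?u j) * ?s - ?D = \<delta> * (?u j * ?s - Aw s i)"
    unfolding D by (simp add: algebra_simps)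
  finally show ?thesis by (simp add: ac_simps)
qed

lemma drift:
  assumes d: "\<delta> \<in> {0..d0}" and s: "s \<in> states N"
  shows "(\<Sum>t\<in>states N. K \<delta> s t * phi1 t) = phi1 s + \<delta> * Gd \<delta> s"
proof -
  let ?q = "qprob N w1 (Fe \<delta> s)"
  let ?p = "trans_prob N w1"
  let ?\<pi> = "stat_dist N w1"
  let ?x = "\<lambda>j. ind (j \<in> fst s)"
  have X: "fst s \<subseteq> {0..<N}" using s states_iff by blast
  have qs: "\<And>i. i < N \<Longrightarrow> (\<Sum>j<N. ?q i j) = 1" using q_sum[OF g1 Npos Fbs[OF d]] .
  have "(\<Sum>t\<in>states N. K \<delta> s t * phi1 t) =
      (\<Sum>i<N. (1 / real N) * (\<Sum>j<N. ?q i j * avg_state N w1 (copy_type (fst s) i j)))"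
    unfolding phi1_def kernel_fst[OF d s, of "avg_state N w1"] by (rule layer_exp_q[where F="Fe \<delta> s", OF g1 Npos Fbs[OF d] X])
  also have "\<dots> = (\<Sum>i<N. (1 / real N) * (phi1 s * (\<Sum>j<N. ?q i j) + ?\<pi> i * (\<Sum>j<N. ?q i j * ?x j) - ?\<pi> i * ?x i * (\<Sum>j<N. ?q i j)))"
    by (intro sum.cong refl arg_cong2[where f="(*)"])
       (simp add: avg_copy phi1_def algebra_simps sum.distrib sum_subtractf sum_distrib_left)
  also have "\<dots> = (\<Sum>i<N. (1 / real N) * phi1 s + ?\<pi> i / real N * ((\<Sum>j<N. ?q i j * ?x j) - ?x i))"
    by (intro sum.cong refl) (simp add: qs algebra_simps)
  also have "\<dots> = phi1 s + (\<Sum>i<N. ?\<pi> i / real N * ((\<Sum>j<N. ?q i j * ?x j) - ?x i))"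
    using Npos by (simp add: sum.distrib)
  also have "(\<Sum>i<N. ?\<pi> i / real N * ((\<Sum>j<N. ?q i j * ?x j) - ?x i)) =
      (\<Sum>i<N. ?\<pi> i / real N * (\<Sum>j<N. (?q i j - ?p i j) * ?x j)) +
      (\<Sum>i<N. ?\<pi> i / real N * ((\<Sum>j<N. ?p i j * ?x j) - ?x i))"
    by (simp add: sum.distrib[symmetric] algebra_simps sum_subtractf)
  also have "(\<Sum>i<N. ?\<pi> i / real N * ((\<Sum>j<N. ?p i j * ?x j) - ?x i)) = 0"
  proof -
    have "(\<Sum>i<N. ?\<pi> i * (\<Sum>j<N. ?p i j * ?x j)) = (\<Sum>j<N. (\<Sum>i<N. ?\<pi> i * ?p i j) * ?x j)"
      by (simp add: sum_distrib_left sum_distrib_right mult.assoc) (rule sum.swap)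
    also have "\<dots> = (\<Sum>j<N. ?\<pi> j * ?x j)"
      by (intro sum.cong refl) (simp add: stationary[OF g1 Npos])
    finally have "(\<Sum>i<N. ?\<pi> i * ((\<Sum>j<N. ?p i j * ?x j) - ?x i)) = 0"
      by (simp add: right_diff_distrib sum_subtractf)
    then show ?thesis by (simp add: sum_divide_distrib[symmetric])
  qed
  also have "(\<Sum>i<N. ?\<pi> i / real N * (\<Sum>j<N. (?q i j - ?p i j) * ?x j)) = \<delta> * Gd \<delta> s"
    unfolding Gd_def sum_distrib_left
    by (intro sum.cong refl) (simp add: q_minus_p[OF d] sum_distrib_left ac_simps)
  finally show ?thesis by simp
qed


lemma not_mixed1:
  assumes "t \<in> states N" "t \<notin> mixed1"
  shows "fst t = {} \<or> fst t = {0..<N}"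
proof -
  have X: "fst t \<subseteq> {0..<N}" using assms states_iff by blast
  then have "card (fst t) = 0 \<or> card (fst t) = N" using assms card_cases(1)[OF X] by (auto simp: mixed1_def)
  then show ?thesis using card_cases(2,3)[OF X] by blast
qed

lemma mixed1_sub: "mixed1 \<subseteq> states N" by (auto simp: mixed1_def)

lemma Gd_zero:
  assumes t: "t \<in> states N" "t \<notin> mixed1"
  shows "Gd \<delta> t = 0"
proof (cases "fst t = {}")
  case True then show ?thesis by (simp add: Gd_def)
next
  case False
  then have F: "fst t = {0..<N}" using not_mixed1[OF t] by blast
  have "(\<Sum>j<N. ind (j \<in> fst t) *
      (w1 i j * (payoff N w1 b c r (fst t) (snd t) j * strength N w1 i - Aw t i) /
        (strength N w1 i * (\<Sum>k<N. w1 i k * Fe \<delta> t k)))) = 0" for i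
  proof -
    have "(\<Sum>j<N. ind (j \<in> fst t) *
      (w1 i j * (payoff N w1 b c r (fst t) (snd t) j * strength N w1 i - Aw t i) /
        (strength N w1 i * (\<Sum>k<N. w1 i k * Fe \<delta> t k)))) =
       (\<Sum>j<N. w1 i j * (payoff N w1 b c r (fst t) (snd t) j * strength N w1 i - Aw t i)) /
        (strength N w1 i * (\<Sum>k<N. w1 i k * Fe \<delta> t k))"
      unfolding sum_divide_distrib using F by (intro sum.cong refl) simp
    also have "(\<Sum>j<N. w1 i j * (payoff N w1 b c r (fst t) (snd t) j * strength N w1 i - Aw t i)) =
        (\<Sum>j<N. w1 i j * payoff N w1 b c r (fst t) (snd t) j) * strength N w1 i - (\<Sum>j<N. w1 i j) * Aw t i"
      by (simp add: right_diff_distrib sum_subtractf sum_distrib_right mult.assoc)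
    also have "\<dots> = 0" by (simp add: Aw_def strength_def)
    finally show ?thesis by simp
  qed
  then show ?thesis by (simp add: Gd_def)
qed

lemma phi1_bounds: "0 \<le> phi1 t" "phi1 t \<le> 1"
proof -
  show "0 \<le> phi1 t" unfolding phi1_def avg_state_def
    by (intro sum_nonneg mult_nonneg_nonneg sd_nonneg[OF g1 Npos]) auto
  have "phi1 t \<le> (\<Sum>i<N. stat_dist N w1 i * 1)" unfolding phi1_def avg_state_def
    by (intro sum_mono mult_left_mono sd_nonneg[OF g1 Npos]) auto
  then show "phi1 t \<le> 1" using sd_sum[OF g1 Npos] by simp
qed

lemma fix_diff_bound:
  assumes t: "t \<in> states N"
  shows "\<bar>ind (fst t = {0..<N}) - phi1 t\<bar> \<le> ind (t \<in> mixed1)"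
proof (cases "t \<in> mixed1")
  case True
  then have "fst t \<noteq> {0..<N}" by (auto simp: mixed1_def)
  then show ?thesis using True phi1_bounds[of t] by simp
next
  case False
  then have "fst t = {} \<or> fst t = {0..<N}" using not_mixed1 t by blast
  moreover have "{0..<N} \<noteq> {}" using Npos by simp
  moreover have "phi1 t = 1" if "fst t = {0..<N}"
    using that sd_sum[OF g1 Npos] by (simp add: phi1_def avg_state_def)
  moreover have "phi1 t = 0" if "fst t = {}"
    using that by (simp add: phi1_def avg_state_def)
  ultimately show ?thesis using False by (auto simp: ind_def)
qed

lemma Ex_phi:
  assumes d: "\<delta> \<in> {0..d0}" and xi: "\<xi> \<in> states N"
  shows "(\<Sum>t\<in>states N. Kp \<delta> n \<xi> t * phi1 t) =
    phi1 \<xi> + \<delta> * (\<Sum>k<n. \<Sum>t\<in>states N. Kp \<delta> k \<xi> t * Gd \<delta> t)"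
proof (induction n)
  case 0
  then show ?case using xi by (simp add: if_distrib[where f="\<lambda>x. x * _"] sum.delta finite_states cong: if_cong)
next
  case (Suc n)
  have "(\<Sum>t\<in>states N. Kp \<delta> (Suc n) \<xi> t * phi1 t) =
        (\<Sum>u\<in>states N. Kp \<delta> n \<xi> u * (\<Sum>t\<in>states N. K \<delta> u t * phi1 t))"
    by (simp add: sum_distrib_left sum_distrib_right mult.assoc) (rule sum.swap)
  also have "\<dots> = (\<Sum>u\<in>states N. Kp \<delta> n \<xi> u * phi1 u + \<delta> * (Kp \<delta> n \<xi> u * Gd \<delta> u))"
  proof (intro sum.cong refl)
    fix u assume u: "u \<in> states N"
    show "Kp \<delta> n \<xi> u * (\<Sum>t\<in>states N. K \<delta> u t * phi1 t) = Kp \<delta> n \<xi> u * phi1 u + \<delta> * (Kp \<delta> n \<xi> u * Gd \<delta> u)"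
      unfolding drift[OF d u] by (simp add: algebra_simps)
  qed
  also have "\<dots> = (\<Sum>u\<in>states N. Kp \<delta> n \<xi> u * phi1 u) + \<delta> * (\<Sum>u\<in>states N. Kp \<delta> n \<xi> u * Gd \<delta> u)"
    by (simp add: sum.distrib sum_distrib_left)
  finally show ?case using Suc by (simp add: algebra_simps)
qed


lemma cont_if0: "continuous_on A f \<Longrightarrow> continuous_on A (\<lambda>x. if P then f x else 0)"
  by (cases P) auto

lemma den_ne1:
  assumes "\<delta> \<in> {0..d0}" "i < N"
  shows "(\<Sum>k<N. w1 i k * (1 + \<delta> * payoff N w1 b c r X1 X2 k)) \<noteq> 0"
proof -
  have "(\<Sum>k<N. w1 i k * fecundity N w1 b c r \<delta> X1 X2 k) > 0"
    by (rule den_pos[OF g1 Npos _ assms(2)]) (use Fb assms in auto)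
  then show ?thesis by (simp add: fecundity_def)
qed

lemma den_ne2:
  assumes "\<delta> \<in> {0..d0}" "i < N"
  shows "(\<Sum>k<N. w2 i k * (1 + \<delta> * payoff N w1 b c r X1 X2 k)) \<noteq> 0"
proof -
  have "(\<Sum>k<N. w2 i k * fecundity N w1 b c r \<delta> X1 X2 k) > 0"
    by (rule den_pos[OF g2 Npos _ assms(2)]) (use Fb assms in auto)
  then show ?thesis by (simp add: fecundity_def)
qed

lemma layer_cont1: "continuous_on {0..d0} (\<lambda>\<delta>. layer_step N w1 (fecundity N w1 b c r \<delta> X1 X2) X Y)"
  unfolding layer_step_def fecundity_def
  by (intro continuous_intros cont_if0) (auto simp: den_ne1)

lemma layer_cont2: "continuous_on {0..d0} (\<lambda>\<delta>. layer_step N w2 (fecundity N w1 b c r \<delta> X1 X2) X Y)"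
  unfolding layer_step_def fecundity_def
  by (intro continuous_intros cont_if0) (auto simp: den_ne2)

lemma K_cont: "continuous_on {0..d0} (\<lambda>\<delta>. K \<delta> s t)"
  unfolding kernel_def Let_def by (intro continuous_intros layer_cont1 layer_cont2)

lemma Kp_cont: "continuous_on {0..d0} (\<lambda>\<delta>. Kp \<delta> n s t)"
proof (induction n arbitrary: t)
  case 0 then show ?case by simp
next
  case (Suc n) then show ?case by (simp only: kernel_pow.simps) (intro continuous_intros K_cont)
qed

lemma Gd_cont: "continuous_on {0..d0} (\<lambda>\<delta>. Gd \<delta> t)"
proof -
  have sp: "\<And>i. i \<in> {..<N} \<Longrightarrow> strength N w1 i \<noteq> 0" using wg_str_pos[OF g1] by (metis lessThan_iff less_irrefl)
  show ?thesis
    unfolding Gd_def fecundity_def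
    by (intro continuous_intros) (auto simp: den_ne1 sp)
qed


lemma Kp_nonneg: "\<delta> \<in> {0..d0} \<Longrightarrow> s \<in> states N \<Longrightarrow> t \<in> states N \<Longrightarrow> Kp \<delta> n s t \<ge> 0"
  by (rule kp_nonneg) (auto intro: K_nonneg K_rowsum)

lemma Kp_rowsum: "\<delta> \<in> {0..d0} \<Longrightarrow> s \<in> states N \<Longrightarrow> (\<Sum>t\<in>states N. Kp \<delta> n s t) = 1"
  by (rule kp_rowsum) (auto intro: K_nonneg K_rowsum)

lemma mass_bound:
  assumes d: "\<delta> \<in> {0..d0}" and xi: "\<xi> \<in> states N" and M: "M \<subseteq> states N"
    and h: "\<And>t. t \<in> states N \<Longrightarrow> \<bar>h t\<bar> \<le> B * ind (t \<in> M)"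
  shows "\<bar>\<Sum>t\<in>states N. Kp \<delta> n \<xi> t * h t\<bar> \<le> B * (\<Sum>t\<in>M. Kp \<delta> n \<xi> t)"
proof -
  have "\<bar>\<Sum>t\<in>states N. Kp \<delta> n \<xi> t * h t\<bar> \<le> (\<Sum>t\<in>states N. \<bar>Kp \<delta> n \<xi> t * h t\<bar>)"
    by (rule sum_abs)
  also have "\<dots> \<le> (\<Sum>t\<in>states N. Kp \<delta> n \<xi> t * (B * ind (t \<in> M)))"
  proof (rule sum_mono)
    fix t assume t: "t \<in> states N"
    have "\<bar>Kp \<delta> n \<xi> t * h t\<bar> = Kp \<delta> n \<xi> t * \<bar>h t\<bar>"
      using Kp_nonneg[OF d xi t] by (simp add: abs_mult)
    also have "\<dots> \<le> Kp \<delta> n \<xi> t * (B * ind (t \<in> M))"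
      by (rule mult_left_mono[OF h[OF t] Kp_nonneg[OF d xi t]])
    finally show "\<bar>Kp \<delta> n \<xi> t * h t\<bar> \<le> Kp \<delta> n \<xi> t * (B * ind (t \<in> M))" .
  qed
  also have "\<dots> = B * (\<Sum>t\<in>states N. Kp \<delta> n \<xi> t * ind (t \<in> M))"
    by (simp add: sum_distrib_left ac_simps)
  also have "(\<Sum>t\<in>states N. Kp \<delta> n \<xi> t * ind (t \<in> M)) = (\<Sum>t\<in>M. Kp \<delta> n \<xi> t)"
  proof -
    have "{t\<in>states N. t \<in> M} = M" using M by blast
    then show ?thesis using sum_ind[OF finite_states[of N], where P="\<lambda>t. t \<in> M" and f="Kp \<delta> n \<xi>"] by simp
  qed
  finally show ?thesis .
qed

lemma Gd_bound: "\<exists>B\<ge>0. \<forall>\<delta>\<in>{0..d0}. \<forall>t\<in>states N. \<bar>Gd \<delta> t\<bar> \<le> B * ind (t \<in> mixed1)"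
proof -
  have "\<forall>t. \<exists>B. B \<ge> 0 \<and> (\<forall>\<delta>\<in>{0..d0}. \<bar>Gd \<delta> t\<bar> \<le> B)"
  proof
    fix t
    obtain B where "B \<ge> 0" "\<And>x. x \<in> {0..d0} \<Longrightarrow> norm (Gd x t) \<le> B"
      using continuous_on_compact_bound[OF compact_Icc Gd_cont[of t]] by blast
    then show "\<exists>B. B \<ge> 0 \<and> (\<forall>\<delta>\<in>{0..d0}. \<bar>Gd \<delta> t\<bar> \<le> B)" by auto
  qed
  then obtain Bf where Bf: "\<And>t. Bf t \<ge> 0" "\<And>t \<delta>. \<delta> \<in> {0..d0} \<Longrightarrow> \<bar>Gd \<delta> t\<bar> \<le> Bf t" by metis
  define B where "B = (\<Sum>t\<in>states N. Bf t)"
  have "B \<ge> 0" unfolding B_def by (intro sum_nonneg Bf)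
  moreover have "\<bar>Gd \<delta> t\<bar> \<le> B * ind (t \<in> mixed1)" if "\<delta> \<in> {0..d0}" "t \<in> states N" for \<delta> t
  proof (cases "t \<in> mixed1")
    case True
    have "Bf t \<le> B" unfolding B_def by (rule member_le_sum) (use that Bf in \<open>auto simp: finite_states\<close>)
    then show ?thesis using Bf(2)[OF that(1), of t] True by simp
  next
    case False
    then show ?thesis using Gd_zero[OF that(2) False] by simp
  qed
  ultimately show ?thesis by blast
qed

definition gser where "gser \<xi> \<delta> k = (\<Sum>t\<in>states N. Kp \<delta> k \<xi> t * Gd \<delta> t)"

lemma fix_and_cont:
  assumes xi: "\<xi> \<in> states N"
  shows "(\<forall>\<delta>\<in>{0..d0}. fix_prob1 N w1 w2 b c r \<delta> \<xi> = phi1 \<xi> + \<delta> * suminf (gser \<xi> \<delta>))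
     \<and> continuous_on {0..d0} (\<lambda>\<delta>. suminf (gser \<xi> \<delta>))"
proof -
  obtain C \<rho> where C: "0 < \<rho>" "\<rho> < 1"
    "\<And>\<delta> s n. \<delta> \<in> {0..d0} \<Longrightarrow> s \<in> states N \<Longrightarrow> (\<Sum>t\<in>mixed1. Kp \<delta> n s t) \<le> C * \<rho> ^ n"
    using mix1_bound by blast
  obtain B where B: "B \<ge> 0" "\<And>\<delta> t. \<delta> \<in> {0..d0} \<Longrightarrow> t \<in> states N \<Longrightarrow> \<bar>Gd \<delta> t\<bar> \<le> B * ind (t \<in> mixed1)"
    using Gd_bound by blast
  have gb: "\<bar>gser \<xi> \<delta> k\<bar> \<le> B * (C * \<rho> ^ k)" if d: "\<delta> \<in> {0..d0}" for \<delta> k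
  proof -
    have "\<bar>gser \<xi> \<delta> k\<bar> \<le> B * (\<Sum>t\<in>mixed1. Kp \<delta> k \<xi> t)"
      unfolding gser_def by (rule mass_bound[OF d xi mixed1_sub B(2)[OF d]])
    also have "\<dots> \<le> B * (C * \<rho> ^ k)" by (rule mult_left_mono[OF C(3)[OF d xi] B(1)])
    finally show ?thesis .
  qed
  have sumM: "summable (\<lambda>k. B * (C * \<rho> ^ k))"
    using C by (intro summable_mult summable_geometric) auto
  have summ: "summable (gser \<xi> \<delta>)" if d: "\<delta> \<in> {0..d0}" for \<delta>
    by (rule summable_comparison_test'[OF sumM]) (use gb[OF d] in simp)
  have fixeq: "fix_prob1 N w1 w2 b c r \<delta> \<xi> = phi1 \<xi> + \<delta> * suminf (gser \<xi> \<delta>)" if d: "\<delta> \<in> {0..d0}" for \<delta>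
  proof -
    let ?a = "\<lambda>n. \<Sum>t\<in>{t \<in> states N. fst t = {0..<N}}. Kp \<delta> n \<xi> t"
    let ?b = "\<lambda>n. \<Sum>t\<in>states N. Kp \<delta> n \<xi> t * phi1 t"
    have b_eq: "?b n = phi1 \<xi> + \<delta> * (\<Sum>k<n. gser \<xi> \<delta> k)" for n
      unfolding gser_def by (rule Ex_phi[OF d xi])
    have "?b \<longlonglongrightarrow> phi1 \<xi> + \<delta> * suminf (gser \<xi> \<delta>)"
      unfolding b_eq by (intro tendsto_intros summable_LIMSEQ summ[OF d])
    moreover have "(\<lambda>n. ?a n - ?b n) \<longlonglongrightarrow> 0"
    proof (rule Lim_null_comparison)
      show "\<forall>\<^sub>F n in sequentially. norm (?a n - ?b n) \<le> 1 * (C * \<rho> ^ n)"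
      proof (rule always_eventually, rule allI)
        fix n
        have "?a n - ?b n = (\<Sum>t\<in>states N. Kp \<delta> n \<xi> t * (ind (fst t = {0..<N}) - phi1 t))"
          by (simp add: sum_ind[OF finite_states] right_diff_distrib sum_subtractf)
        also have "\<bar>\<dots>\<bar> \<le> 1 * (\<Sum>t\<in>mixed1. Kp \<delta> n \<xi> t)"
          by (rule mass_bound[OF d xi mixed1_sub]) (use fix_diff_bound in simp)
        also have "\<dots> \<le> 1 * (C * \<rho> ^ n)" using C(3)[OF d xi] by simp
        finally show "norm (?a n - ?b n) \<le> 1 * (C * \<rho> ^ n)" by simp
      qed
      show "(\<lambda>n. 1 * (C * \<rho> ^ n)) \<longlonglongrightarrow> 0"
        using C by (intro tendsto_mult_right_zero LIMSEQ_power_zero) auto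
    qed
    ultimately have "?a \<longlonglongrightarrow> phi1 \<xi> + \<delta> * suminf (gser \<xi> \<delta>)"
      using tendsto_add[of "\<lambda>n. ?a n - ?b n" 0 sequentially ?b] by simp
    then show ?thesis unfolding fix_prob1_def by (rule limI)
  qed
  have cont: "continuous_on {0..d0} (\<lambda>\<delta>. suminf (gser \<xi> \<delta>))"
  proof (rule uniform_limit_theorem)
    show "\<forall>\<^sub>F n in sequentially. continuous_on {0..d0} (\<lambda>\<delta>. \<Sum>i<n. gser \<xi> \<delta> i)"
      unfolding gser_def by (intro always_eventually allI continuous_intros Kp_cont Gd_cont)
    show "uniform_limit {0..d0} (\<lambda>n \<delta>. \<Sum>i<n. gser \<xi> \<delta> i) (\<lambda>\<delta>. suminf (gser \<xi> \<delta>)) sequentially"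
      by (rule Weierstrass_m_test[OF _ sumM]) (use gb in simp)
  qed simp
  show ?thesis using fixeq cont by blast
qed

lemma deriv_fix:
  assumes xi: "\<xi> \<in> states N"
  shows "((\<lambda>\<delta>. fix_prob1 N w1 w2 b c r \<delta> \<xi>) has_real_derivative suminf (gser \<xi> 0)) (at 0 within {0..})"
proof -
  note fc = fix_and_cont[OF xi]
  have d0: "(0::real) \<in> {0..d0}" using d0_pos by simp
  have "((\<lambda>\<delta>. suminf (gser \<xi> \<delta>)) \<longlongrightarrow> suminf (gser \<xi> 0)) (at 0 within {0..d0})"
    using fc d0 by (simp add: continuous_on_def)
  then have lim: "((\<lambda>\<delta>. suminf (gser \<xi> \<delta>)) \<longlongrightarrow> suminf (gser \<xi> 0)) (at 0 within {0..})"
    using d0_pos by (simp add: at_within_Icc_at_right at_within_Ici_at_right)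
  have ev: "\<forall>\<^sub>F y in at 0 within {0..}. suminf (gser \<xi> y) =
      (fix_prob1 N w1 w2 b c r y \<xi> - fix_prob1 N w1 w2 b c r 0 \<xi>) / (y - 0)"
  proof -
    have "\<forall>\<^sub>F y in at_right 0. suminf (gser \<xi> y) =
      (fix_prob1 N w1 w2 b c r y \<xi> - fix_prob1 N w1 w2 b c r 0 \<xi>) / (y - 0)"
      unfolding eventually_at_right_field
    proof (intro exI[of _ d0] conjI allI impI)
      fix y :: real assume y: "0 < y" "y < d0"
      then show "suminf (gser \<xi> y) = (fix_prob1 N w1 w2 b c r y \<xi> - fix_prob1 N w1 w2 b c r 0 \<xi>) / (y - 0)"
        using fc d0 by auto
    qed (rule d0_pos)
    then show ?thesis by (simp add: at_within_Ici_at_right)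
  qed
  show ?thesis unfolding has_field_derivative_iff
    using tendsto_cong[OF ev] lim by simp
qed

end

context
  fixes N :: nat and w :: "nat \<Rightarrow> nat \<Rightarrow> real"
  assumes wg: "weighted_graph N w" and Npos: "N > 0"
begin

lemma q_one: "i < N \<Longrightarrow> qprob N w (\<lambda>_. 1) i j = trans_prob N w i j"
  by (simp add: qprob_def trans_prob_def strength_def)

lemma L_exp0:
  "X \<subseteq> {0..<N} \<Longrightarrow> (\<Sum>Y\<in>Pow {0..<N}. layer_step N w (\<lambda>_. 1) X Y * h Y) =
    (\<Sum>i<N. (1 / real N) * (\<Sum>j<N. trans_prob N w i j * h (copy_type X i j)))"
  using layer_exp_q[OF wg Npos, of "\<lambda>_. 1" X h] by (simp add: q_one)

lemma tp_sub: "a < N \<Longrightarrow> (\<Sum>j<N. trans_prob N w a j * (g j - c0)) = (\<Sum>j<N. trans_prob N w a j * g j) - c0"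
  using tp_sum[OF wg, of a] by (simp add: right_diff_distrib sum_subtractf sum_distrib_right[symmetric])

lemma L_delta_gen:
  assumes a: "a < N"
  shows "(\<Sum>i<N. (1 / real N) * (\<Sum>j<N. trans_prob N w i j * (h i j + (if i = a then g j else 0)))) =
      (\<Sum>i<N. (1 / real N) * (\<Sum>j<N. trans_prob N w i j * h i j)) + (1 / real N) * (\<Sum>j<N. trans_prob N w a j * g j)"
proof -
  have "(\<Sum>i<N. (1 / real N) * (\<Sum>j<N. trans_prob N w i j * (h i j + (if i = a then g j else 0)))) =
     (\<Sum>i<N. (1 / real N) * (\<Sum>j<N. trans_prob N w i j * h i j) + (if i = a then (1 / real N) * (\<Sum>j<N. trans_prob N w a j * g j) else 0))"
    by (intro sum.cong refl) (simp add: distrib_left sum.distrib)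
  also have "\<dots> = (\<Sum>i<N. (1 / real N) * (\<Sum>j<N. trans_prob N w i j * h i j)) + (1 / real N) * (\<Sum>j<N. trans_prob N w a j * g j)"
    using a by (simp add: sum.distrib)
  finally show ?thesis .
qed

lemma L_delta:
  assumes a: "a < N"
  shows "(\<Sum>i<N. (1 / real N) * (\<Sum>j<N. trans_prob N w i j * (c0 + (if i = a then g j else 0)))) =
      c0 + (1 / real N) * (\<Sum>j<N. trans_prob N w a j * g j)"
proof -
  have "(\<Sum>i<N. (1 / real N) * (\<Sum>j<N. trans_prob N w i j * (c0 + (if i = a then g j else 0)))) =
     (\<Sum>i<N. (1 / real N) * c0 + (if i = a then (1 / real N) * (\<Sum>j<N. trans_prob N w a j * g j) else 0))"
  proof (intro sum.cong refl)
    fix i assume "i \<in> {..<N}"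
    then have "(\<Sum>j<N. trans_prob N w i j * c0) = c0" using tp_sum[OF wg, of i] by (simp add: sum_distrib_right[symmetric])
    then show "(1 / real N) * (\<Sum>j<N. trans_prob N w i j * (c0 + (if i = a then g j else 0))) =
      (1 / real N) * c0 + (if i = a then (1 / real N) * (\<Sum>j<N. trans_prob N w a j * g j) else 0)"
      by (simp add: distrib_left sum.distrib distrib_right)
  qed
  also have "\<dots> = c0 + (1 / real N) * (\<Sum>j<N. trans_prob N w a j * g j)"
    using a Npos by (simp add: sum.distrib)
  finally show ?thesis .
qed

lemma L_single:
  assumes a: "a < N"
  shows "(\<Sum>i<N. (1 / real N) * (\<Sum>j<N. trans_prob N w i j * ind (a \<in> copy_type X i j))) =
    (1 - 1 / real N) * ind (a \<in> X) + (1 / real N) * (\<Sum>j<N. trans_prob N w a j * ind (j \<in> X))"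
proof -
  have e: "ind (a \<in> copy_type X i j) = ind (a \<in> X) + (if i = a then ind (j \<in> X) - ind (a \<in> X) else 0)" for i j
    by (auto simp: copy_type_def ind_def)
  have "(\<Sum>i<N. (1 / real N) * (\<Sum>j<N. trans_prob N w i j * ind (a \<in> copy_type X i j))) =
     ind (a \<in> X) + (1 / real N) * (\<Sum>j<N. trans_prob N w a j * (ind (j \<in> X) - ind (a \<in> X)))"
    unfolding e by (rule L_delta[OF a])
  also have "(\<Sum>j<N. trans_prob N w a j * (ind (j \<in> X) - ind (a \<in> X))) =
      (\<Sum>j<N. trans_prob N w a j * ind (j \<in> X)) - ind (a \<in> X)"
    using tp_sum[OF wg a] by (simp add: right_diff_distrib sum_subtractf sum_distrib_right[symmetric])
  finally show ?thesis by (simp add: algebra_simps)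
qed

lemma L_pair:
  assumes a: "a < N" and b: "b < N" and ab: "a \<noteq> b"
  shows "(\<Sum>i<N. (1 / real N) * (\<Sum>j<N. trans_prob N w i j * (ind (a \<in> copy_type X i j) * ind (b \<in> copy_type X i j)))) =
    (1 - 2 / real N) * (ind (a \<in> X) * ind (b \<in> X))
    + (1 / real N) * (\<Sum>k<N. trans_prob N w a k * (ind (k \<in> X) * ind (b \<in> X)))
    + (1 / real N) * (\<Sum>k<N. trans_prob N w b k * (ind (a \<in> X) * ind (k \<in> X)))"
proof -
  let ?x = "\<lambda>j. ind (j \<in> X)"
  have e: "ind (a \<in> copy_type X i j) * ind (b \<in> copy_type X i j) =
     (?x a * ?x b + (if i = b then ?x a * (?x j - ?x b) else 0)) + (if i = a then (?x j - ?x a) * ?x b else 0)" for i j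
    using ab by (auto simp: copy_type_def ind_def)
  have "(\<Sum>i<N. (1 / real N) * (\<Sum>j<N. trans_prob N w i j * (ind (a \<in> copy_type X i j) * ind (b \<in> copy_type X i j)))) =
     (\<Sum>i<N. (1 / real N) * (\<Sum>j<N. trans_prob N w i j * (?x a * ?x b + (if i = b then ?x a * (?x j - ?x b) else 0))))
     + (1 / real N) * (\<Sum>j<N. trans_prob N w a j * ((?x j - ?x a) * ?x b))"
    unfolding e by (rule L_delta_gen[OF a])
  also have "(\<Sum>i<N. (1 / real N) * (\<Sum>j<N. trans_prob N w i j * (?x a * ?x b + (if i = b then ?x a * (?x j - ?x b) else 0))))
     = ?x a * ?x b + (1 / real N) * (\<Sum>j<N. trans_prob N w b j * (?x a * (?x j - ?x b)))"
    by (rule L_delta[OF b])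
  also have "(\<Sum>j<N. trans_prob N w a j * ((?x j - ?x a) * ?x b)) = (\<Sum>k<N. trans_prob N w a k * (?x k * ?x b)) - ?x a * ?x b"
    using tp_sub[OF a, of "\<lambda>j. ?x j * ?x b" "?x a * ?x b"] by (simp add: left_diff_distrib)
  also have "(\<Sum>j<N. trans_prob N w b j * (?x a * (?x j - ?x b))) = (\<Sum>k<N. trans_prob N w b k * (?x a * ?x k)) - ?x a * ?x b"
    using tp_sub[OF b, of "\<lambda>j. ?x a * ?x j" "?x a * ?x b"] by (simp add: right_diff_distrib)
  finally show ?thesis by (simp add: algebra_simps)
qed

lemma L_avg:
  assumes X: "X \<subseteq> {0..<N}"
  shows "(\<Sum>i<N. (1 / real N) * (\<Sum>j<N. trans_prob N w i j * avg_state N w (copy_type X i j))) = avg_state N w X"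
proof -
  let ?p = "trans_prob N w" and ?\<pi> = "stat_dist N w" and ?x = "\<lambda>j. ind (j \<in> X)"
  have "(\<Sum>i<N. (1 / real N) * (\<Sum>j<N. ?p i j * avg_state N w (copy_type X i j))) =
      (\<Sum>i<N. (1 / real N) * (avg_state N w X + ?\<pi> i * ((\<Sum>j<N. ?p i j * ?x j) - ?x i)))"
  proof (intro sum.cong refl arg_cong2[where f="(*)"])
    fix i assume i: "i \<in> {..<N}"
    have "(\<Sum>j<N. ?p i j * avg_state N w (copy_type X i j)) =
        (\<Sum>j<N. ?p i j * avg_state N w X + ?\<pi> i * (?p i j * ?x j) - ?\<pi> i * ?x i * ?p i j)"
      using i by (intro sum.cong refl) (simp add: avg_copy algebra_simps)
    also have "\<dots> = (\<Sum>j<N. ?p i j) * avg_state N w X + ?\<pi> i * (\<Sum>j<N. ?p i j * ?x j) - ?\<pi> i * ?x i * (\<Sum>j<N. ?p i j)"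
      by (simp only: sum.distrib sum_subtractf sum_distrib_left sum_distrib_right)
    also have "\<dots> = avg_state N w X + ?\<pi> i * ((\<Sum>j<N. ?p i j * ?x j) - ?x i)"
      using tp_sum[OF wg, of i] i by (simp add: algebra_simps)
    finally show "(\<Sum>j<N. ?p i j * avg_state N w (copy_type X i j)) = avg_state N w X + ?\<pi> i * ((\<Sum>j<N. ?p i j * ?x j) - ?x i)" .
  qed
  also have "\<dots> = (\<Sum>i<N. (1 / real N) * avg_state N w X) + (1 / real N) * (\<Sum>i<N. ?\<pi> i * ((\<Sum>j<N. ?p i j * ?x j) - ?x i))"
    by (simp only: distrib_left sum.distrib sum_distrib_left)
  also have "(\<Sum>i<N. (1 / real N) * avg_state N w X) = avg_state N w X" using Npos by simp
  also have "(\<Sum>i<N. ?\<pi> i * ((\<Sum>j<N. ?p i j * ?x j) - ?x i)) = 0"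
  proof -
    have "(\<Sum>i<N. ?\<pi> i * (\<Sum>j<N. ?p i j * ?x j)) = (\<Sum>j<N. (\<Sum>i<N. ?\<pi> i * ?p i j) * ?x j)"
      by (simp add: sum_distrib_left sum_distrib_right mult.assoc) (rule sum.swap)
    also have "\<dots> = (\<Sum>j<N. ?\<pi> j * ?x j)"
      by (intro sum.cong refl) (simp add: stationary[OF wg Npos])
    finally show ?thesis by (simp add: right_diff_distrib sum_subtractf)
  qed
  finally show ?thesis by (simp add: avg_state_def)
qed

lemma L_one: "(\<Sum>i<N. (1 / real N) * (\<Sum>j<N. trans_prob N w i j * 1)) = 1"
  using Npos by (simp add: tp_sum[OF wg])

end

context TL
begin

definition phi2 where "phi2 s = avg_state N w2 (snd s)"

abbreviation "p1 \<equiv> trans_prob N w1"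
abbreviation "p2 \<equiv> trans_prob N w2"
abbreviation "\<pi>1 \<equiv> stat_dist N w1"

abbreviation "LE1 g X \<equiv> (\<Sum>i<N. (1 / real N) * (\<Sum>j<N. p1 i j * g (copy_type X i j)))"
abbreviation "LE2 g X \<equiv> (\<Sum>i<N. (1 / real N) * (\<Sum>j<N. p2 i j * g (copy_type X i j)))"

lemma K0_prod:
  assumes s: "s \<in> states N"
  shows "(\<Sum>t\<in>states N. K 0 s t * (h1 (fst t) * h2 (snd t))) = LE1 h1 (fst s) * LE2 h2 (snd s)"
proof -
  have X: "fst s \<subseteq> {0..<N}" "snd s \<subseteq> {0..<N}" using s states_iff by auto
  show ?thesis unfolding kernel_prod[OF s] Fe0 L_exp0[OF g1 Npos X(1)] L_exp0[OF g2 Npos X(2)] ..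
qed

lemma K0_fst:
  assumes s: "s \<in> states N"
  shows "(\<Sum>t\<in>states N. K 0 s t * h1 (fst t)) = LE1 h1 (fst s)"
  using K0_prod[OF s, of h1 "\<lambda>_. 1"] L_one[OF g2 Npos] by simp

lemma K0_snd:
  assumes s: "s \<in> states N"
  shows "(\<Sum>t\<in>states N. K 0 s t * h2 (snd t)) = LE2 h2 (snd s)"
  using K0_prod[OF s, of "\<lambda>_. 1" h2] L_one[OF g1 Npos] by simp

lemma K0_phi1: "s \<in> states N \<Longrightarrow> (\<Sum>t\<in>states N. K 0 s t * phi1 t) = phi1 s"
  unfolding phi1_def using K0_fst[of s "avg_state N w1"] L_avg[OF g1 Npos] states_iff by auto

lemma K0_phi12: "s \<in> states N \<Longrightarrow> (\<Sum>t\<in>states N. K 0 s t * (phi1 t * phi2 t)) = phi1 s * phi2 s"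
  unfolding phi1_def phi2_def using K0_prod[of s "avg_state N w1" "avg_state N w2"] L_avg[OF g1 Npos] L_avg[OF g2 Npos] states_iff
  by auto

lemma K0_const: "s \<in> states N \<Longrightarrow> (\<Sum>t\<in>states N. K 0 s t * c0) = c0"
  using K_rowsum[of 0 s] d0_pos by (simp add: sum_distrib_right[symmetric])

end

context TL
begin

definition E0 where "E0 \<xi> n h = (\<Sum>t\<in>states N. Kp 0 n \<xi> t * h t)"
definition xx where "xx a e t = ind (a \<in> fst t) * ind (e \<in> fst t)"
definition xy where "xy a e t = ind (a \<in> fst t) * ind (e \<in> snd t)"
definition Dxx where "Dxx \<xi> a e n = E0 \<xi> n (\<lambda>t. xx a e t - phi1 t)"
definition Dxy where "Dxy \<xi> a e n = E0 \<xi> n (\<lambda>t. xy a e t - phi1 t * phi2 t)"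

lemma E0_Suc: "E0 \<xi> (Suc n) h = E0 \<xi> n (\<lambda>s. \<Sum>t\<in>states N. K 0 s t * h t)"
  unfolding E0_def by (simp add: sum_distrib_left sum_distrib_right mult.assoc) (rule sum.swap)

lemma E0_cong: "(\<And>t. t \<in> states N \<Longrightarrow> h t = h' t) \<Longrightarrow> E0 \<xi> n h = E0 \<xi> n h'"
  unfolding E0_def by (intro sum.cong) auto

lemma E0_0: "\<xi> \<in> states N \<Longrightarrow> E0 \<xi> 0 h = h \<xi>"
  unfolding E0_def by (simp add: if_distrib[where f="\<lambda>x. x * _"] sum.delta finite_states cong: if_cong)

lemma E0_add: "E0 \<xi> n (\<lambda>t. f t + g t) = E0 \<xi> n f + E0 \<xi> n g"
  unfolding E0_def by (simp add: distrib_left sum.distrib)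
lemma E0_diff: "E0 \<xi> n (\<lambda>t. f t - g t) = E0 \<xi> n f - E0 \<xi> n g"
  unfolding E0_def by (simp add: right_diff_distrib sum_subtractf)
lemma E0_cmult: "E0 \<xi> n (\<lambda>t. c0 * f t) = c0 * E0 \<xi> n f"
  unfolding E0_def by (simp add: sum_distrib_left ac_simps)
lemma E0_sum: "E0 \<xi> n (\<lambda>t. \<Sum>k\<in>A. f k t) = (\<Sum>k\<in>A. E0 \<xi> n (f k))"
  unfolding E0_def by (simp add: sum_distrib_left) (rule sum.swap)

lemma sum_cmid: "(\<Sum>k\<in>A. f k * (c0 * g k)::real) = c0 * (\<Sum>k\<in>A. f k * g k)"
  by (simp add: sum_distrib_left ac_simps)
lemma sum_cright: "(\<Sum>k\<in>A. f k * (g k * c0)::real) = (\<Sum>k\<in>A. f k * g k) * c0"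
  by (simp add: sum_distrib_right mult.assoc)

lemma xx_diag: "xx a a t = ind (a \<in> fst t)" by (simp add: xx_def)

lemma K0c_diag:
  assumes s: "s \<in> states N" and a: "a < N"
  shows "(\<Sum>t\<in>states N. K 0 s t * (xx a a t - phi1 t)) =
    (1 - 1 / real N) * (xx a a s - phi1 s) + (1 / real N) * (\<Sum>k<N. p1 a k * (xx k k s - phi1 s))"
proof -
  have "(\<Sum>t\<in>states N. K 0 s t * (xx a a t - phi1 t)) =
      (\<Sum>t\<in>states N. K 0 s t * ind (a \<in> fst t)) - (\<Sum>t\<in>states N. K 0 s t * phi1 t)"
    by (simp add: xx_diag right_diff_distrib sum_subtractf)
  also have "\<dots> = (1 - 1 / real N) * ind (a \<in> fst s) + (1 / real N) * (\<Sum>j<N. p1 a j * ind (j \<in> fst s)) - phi1 s"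
    unfolding K0_phi1[OF s] K0_fst[OF s, of "\<lambda>X. ind (a \<in> X)"] L_single[OF g1 Npos a] ..
  finally have L: "(\<Sum>t\<in>states N. K 0 s t * (xx a a t - phi1 t)) =
    (1 - 1 / real N) * ind (a \<in> fst s) + (1 / real N) * (\<Sum>j<N. p1 a j * ind (j \<in> fst s)) - phi1 s" .
  have R: "(\<Sum>k<N. p1 a k * (xx k k s - phi1 s)) = (\<Sum>j<N. p1 a j * ind (j \<in> fst s)) - phi1 s"
    unfolding xx_diag by (rule tp_sub[OF g1 Npos a])
  show ?thesis unfolding L R by (simp add: xx_diag algebra_simps)
qed

lemma K0c_off:
  assumes s: "s \<in> states N" and a: "a < N" and e: "e < N" and ab: "a \<noteq> e"
  shows "(\<Sum>t\<in>states N. K 0 s t * (xx a e t - phi1 t)) =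
    (1 - 2 / real N) * (xx a e s - phi1 s) + (1 / real N) * (\<Sum>k<N. p1 a k * (xx k e s - phi1 s))
      + (1 / real N) * (\<Sum>k<N. p1 e k * (xx a k s - phi1 s))"
proof -
  have "(\<Sum>t\<in>states N. K 0 s t * (xx a e t - phi1 t)) =
      (\<Sum>t\<in>states N. K 0 s t * (ind (a \<in> fst t) * ind (e \<in> fst t))) - (\<Sum>t\<in>states N. K 0 s t * phi1 t)"
    by (simp add: xx_def right_diff_distrib sum_subtractf)
  also have "\<dots> = (1 - 2 / real N) * xx a e s
    + (1 / real N) * (\<Sum>k<N. p1 a k * xx k e s)
    + (1 / real N) * (\<Sum>k<N. p1 e k * xx a k s) - phi1 s"
    unfolding K0_phi1[OF s] K0_fst[OF s, of "\<lambda>X. ind (a \<in> X) * ind (e \<in> X)"] L_pair[OF g1 Npos a e ab] xx_def ..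
  finally have L: "(\<Sum>t\<in>states N. K 0 s t * (xx a e t - phi1 t)) = (1 - 2 / real N) * xx a e s
    + (1 / real N) * (\<Sum>k<N. p1 a k * xx k e s)
    + (1 / real N) * (\<Sum>k<N. p1 e k * xx a k s) - phi1 s" .
  have R1: "(\<Sum>k<N. p1 a k * (xx k e s - phi1 s)) = (\<Sum>k<N. p1 a k * xx k e s) - phi1 s"
    by (rule tp_sub[OF g1 Npos a])
  have R2: "(\<Sum>k<N. p1 e k * (xx a k s - phi1 s)) = (\<Sum>k<N. p1 e k * xx a k s) - phi1 s"
    by (rule tp_sub[OF g1 Npos e])
  show ?thesis unfolding L R1 R2 by (simp add: algebra_simps)
qed

lemma K0c_xy:
  assumes s: "s \<in> states N" and a: "a < N" and e: "e < N"
  shows "(\<Sum>t\<in>states N. K 0 s t * (xy a e t - phi1 t * phi2 t)) =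
    (1 - 1 / real N)^2 * (xy a e s - phi1 s * phi2 s)
    + (1 - 1 / real N) * (1 / real N) * (\<Sum>l<N. p2 e l * (xy a l s - phi1 s * phi2 s))
    + (1 / real N) * (1 - 1 / real N) * (\<Sum>k<N. p1 a k * (xy k e s - phi1 s * phi2 s))
    + (1 / real N)^2 * (\<Sum>k<N. p1 a k * (\<Sum>l<N. p2 e l * (xy k l s - phi1 s * phi2 s)))"
proof -
  let ?\<Phi> = "phi1 s * phi2 s"
  let ?xa = "ind (a \<in> fst s)" and ?yb = "ind (e \<in> snd s)"
  let ?A = "\<Sum>k<N. p1 a k * ind (k \<in> fst s)" and ?B = "\<Sum>l<N. p2 e l * ind (l \<in> snd s)"
  have "(\<Sum>t\<in>states N. K 0 s t * (xy a e t - phi1 t * phi2 t)) =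
      (\<Sum>t\<in>states N. K 0 s t * (ind (a \<in> fst t) * ind (e \<in> snd t))) - (\<Sum>t\<in>states N. K 0 s t * (phi1 t * phi2 t))"
    by (simp add: xy_def right_diff_distrib sum_subtractf)
  also have "\<dots> = ((1 - 1 / real N) * ?xa + (1 / real N) * ?A) * ((1 - 1 / real N) * ?yb + (1 / real N) * ?B) - ?\<Phi>"
    unfolding K0_phi12[OF s] K0_prod[OF s, of "\<lambda>X. ind (a \<in> X)" "\<lambda>X. ind (e \<in> X)"]
      L_single[OF g1 Npos a] L_single[OF g2 Npos e] ..
  finally have L: "(\<Sum>t\<in>states N. K 0 s t * (xy a e t - phi1 t * phi2 t)) =
     ((1 - 1 / real N) * ?xa + (1 / real N) * ?A) * ((1 - 1 / real N) * ?yb + (1 / real N) * ?B) - ?\<Phi>" .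
  have r1: "(\<Sum>l<N. p2 e l * (xy a l s - ?\<Phi>)) = ?xa * ?B - ?\<Phi>"
    using tp_sub[OF g2 Npos e, of "\<lambda>l. xy a l s" ?\<Phi>] by (simp add: xy_def sum_cmid)
  have r2: "(\<Sum>k<N. p1 a k * (xy k e s - ?\<Phi>)) = ?A * ?yb - ?\<Phi>"
    using tp_sub[OF g1 Npos a, of "\<lambda>k. xy k e s" ?\<Phi>] by (simp add: xy_def sum_cright)
  have r3: "(\<Sum>k<N. p1 a k * (\<Sum>l<N. p2 e l * (xy k l s - ?\<Phi>))) = ?A * ?B - ?\<Phi>"
  proof -
    have "(\<Sum>k<N. p1 a k * (\<Sum>l<N. p2 e l * (xy k l s - ?\<Phi>))) = (\<Sum>k<N. p1 a k * (ind (k \<in> fst s) * ?B - ?\<Phi>))"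
    proof (intro sum.cong refl arg_cong2[where f="(*)"])
      fix k
      show "(\<Sum>l<N. p2 e l * (xy k l s - ?\<Phi>)) = ind (k \<in> fst s) * ?B - ?\<Phi>"
        using tp_sub[OF g2 Npos e, of "\<lambda>l. xy k l s" ?\<Phi>] by (simp add: xy_def sum_cmid)
    qed
    also have "\<dots> = ?A * ?B - ?\<Phi>"
      using tp_sub[OF g1 Npos a, of "\<lambda>k. ind (k \<in> fst s) * ?B" ?\<Phi>] by (simp add: sum_cright)
    finally show ?thesis .
  qed
  show ?thesis unfolding L r1 r2 r3 by (simp add: xy_def algebra_simps power2_eq_square)
qed


lemma Dxx_diag_Suc:
  assumes a: "a < N"
  shows "Dxx \<xi> a a (Suc n) = (1 - 1 / real N) * Dxx \<xi> a a n + (1 / real N) * (\<Sum>k<N. p1 a k * Dxx \<xi> k k n)"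
proof -
  have "Dxx \<xi> a a (Suc n) = E0 \<xi> n (\<lambda>s. (1 - 1 / real N) * (xx a a s - phi1 s) + (1 / real N) * (\<Sum>k<N. p1 a k * (xx k k s - phi1 s)))"
    unfolding Dxx_def E0_Suc by (rule E0_cong) (simp add: K0c_diag a)
  also have "\<dots> = (1 - 1 / real N) * Dxx \<xi> a a n + (1 / real N) * (\<Sum>k<N. p1 a k * Dxx \<xi> k k n)"
    unfolding E0_add E0_cmult E0_sum Dxx_def ..
  finally show ?thesis .
qed

lemma Dxx_off_Suc:
  assumes a: "a < N" and e: "e < N" and ae: "a \<noteq> e"
  shows "Dxx \<xi> a e (Suc n) = (1 - 2 / real N) * Dxx \<xi> a e n + (1 / real N) * (\<Sum>k<N. p1 a k * Dxx \<xi> k e n)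
      + (1 / real N) * (\<Sum>k<N. p1 e k * Dxx \<xi> a k n)"
proof -
  have "Dxx \<xi> a e (Suc n) = E0 \<xi> n (\<lambda>s. (1 - 2 / real N) * (xx a e s - phi1 s) + (1 / real N) * (\<Sum>k<N. p1 a k * (xx k e s - phi1 s))
      + (1 / real N) * (\<Sum>k<N. p1 e k * (xx a k s - phi1 s)))"
    unfolding Dxx_def E0_Suc by (rule E0_cong) (simp add: K0c_off a e ae)
  also have "\<dots> = (1 - 2 / real N) * Dxx \<xi> a e n + (1 / real N) * (\<Sum>k<N. p1 a k * Dxx \<xi> k e n)
      + (1 / real N) * (\<Sum>k<N. p1 e k * Dxx \<xi> a k n)"
    unfolding E0_add E0_cmult E0_sum Dxx_def ..
  finally show ?thesis .
qed

lemma Dxy_Suc: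
  assumes a: "a < N" and e: "e < N"
  shows "Dxy \<xi> a e (Suc n) =
    (1 - 1 / real N)^2 * Dxy \<xi> a e n
    + (1 - 1 / real N) * (1 / real N) * (\<Sum>l<N. p2 e l * Dxy \<xi> a l n)
    + (1 / real N) * (1 - 1 / real N) * (\<Sum>k<N. p1 a k * Dxy \<xi> k e n)
    + (1 / real N)^2 * (\<Sum>k<N. p1 a k * (\<Sum>l<N. p2 e l * Dxy \<xi> k l n))"
proof -
  have "Dxy \<xi> a e (Suc n) = E0 \<xi> n (\<lambda>s. (1 - 1 / real N)^2 * (xy a e s - phi1 s * phi2 s)
    + (1 - 1 / real N) * (1 / real N) * (\<Sum>l<N. p2 e l * (xy a l s - phi1 s * phi2 s))
    + (1 / real N) * (1 - 1 / real N) * (\<Sum>k<N. p1 a k * (xy k e s - phi1 s * phi2 s))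
    + (1 / real N)^2 * (\<Sum>k<N. p1 a k * (\<Sum>l<N. p2 e l * (xy k l s - phi1 s * phi2 s))))"
    unfolding Dxy_def E0_Suc by (rule E0_cong) (simp add: K0c_xy a e)
  also have "\<dots> = (1 - 1 / real N)^2 * Dxy \<xi> a e n
    + (1 - 1 / real N) * (1 / real N) * (\<Sum>l<N. p2 e l * Dxy \<xi> a l n)
    + (1 / real N) * (1 - 1 / real N) * (\<Sum>k<N. p1 a k * Dxy \<xi> k e n)
    + (1 / real N)^2 * (\<Sum>k<N. p1 a k * (\<Sum>l<N. p2 e l * Dxy \<xi> k l n))"
    unfolding E0_add E0_cmult E0_sum Dxy_def ..
  finally show ?thesis .
qed


lemma avg_bounds:
  assumes "weighted_graph N w" "N > 0"
  shows "0 \<le> avg_state N w X" "avg_state N w X \<le> 1"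
proof -
  show "0 \<le> avg_state N w X" unfolding avg_state_def
    by (intro sum_nonneg mult_nonneg_nonneg sd_nonneg[OF assms]) auto
  have "avg_state N w X \<le> (\<Sum>i<N. stat_dist N w i * 1)" unfolding avg_state_def
    by (intro sum_mono mult_left_mono sd_nonneg[OF assms]) auto
  then show "avg_state N w X \<le> 1" using sd_sum[OF assms] by simp
qed

lemma avg_empty: "avg_state N w {} = 0" by (simp add: avg_state_def)
lemma avg_full: "weighted_graph N w \<Longrightarrow> N > 0 \<Longrightarrow> avg_state N w {0..<N} = 1"
  using sd_sum by (simp add: avg_state_def)

lemma not_mixed2:
  assumes "t \<in> states N" "t \<notin> mixed2"
  shows "snd t = {} \<or> snd t = {0..<N}"
proof -
  have X: "snd t \<subseteq> {0..<N}" using assms states_iff by blast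
  then have "card (snd t) = 0 \<or> card (snd t) = N" using assms card_cases(1)[OF X] by (auto simp: mixed2_def)
  then show ?thesis using card_cases(2,3)[OF X] by blast
qed

lemma mixed2_sub: "mixed2 \<subseteq> states N" by (auto simp: mixed2_def)

lemma xx_bound:
  assumes t: "t \<in> states N" and a: "a < N" and e: "e < N"
  shows "\<bar>xx a e t - phi1 t\<bar> \<le> 1 * ind (t \<in> mixed1)"
proof (cases "t \<in> mixed1")
  case True
  then show ?thesis using avg_bounds[OF g1 Npos, of "fst t"] by (auto simp: xx_def phi1_def ind_def)
next
  case False
  then have "fst t = {} \<or> fst t = {0..<N}" using not_mixed1 t by blast
  then show ?thesis using False a e avg_full[OF g1 Npos] by (auto simp: xx_def phi1_def avg_empty)
qed

lemma xy_bound: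
  assumes t: "t \<in> states N" and a: "a < N" and e: "e < N"
  shows "\<bar>xy a e t - phi1 t * phi2 t\<bar> \<le> 1 * ind (t \<in> mixed1 \<union> mixed2)"
proof (cases "t \<in> mixed1 \<union> mixed2")
  case True
  have b1: "0 \<le> phi1 t" "phi1 t \<le> 1" using avg_bounds[OF g1 Npos] by (auto simp: phi1_def)
  have b2: "0 \<le> phi2 t" "phi2 t \<le> 1" using avg_bounds[OF g2 Npos] by (auto simp: phi2_def)
  have "0 \<le> phi1 t * phi2 t" "phi1 t * phi2 t \<le> 1" using b1 b2 by (auto intro: mult_le_one)
  then show ?thesis using True by (auto simp: xy_def ind_def)
next
  case False
  then have "fst t = {} \<or> fst t = {0..<N}" "snd t = {} \<or> snd t = {0..<N}"
    using not_mixed1 not_mixed2 t by blast+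
  then show ?thesis using False a e avg_full[OF g1 Npos] avg_full[OF g2 Npos]
    by (auto simp: xy_def phi1_def phi2_def avg_empty)
qed

lemma D_bounds:
  "\<exists>C \<rho>. 0 < \<rho> \<and> \<rho> < 1 \<and> (\<forall>\<xi>\<in>states N. \<forall>a<N. \<forall>e<N. \<forall>n.
     \<bar>Dxx \<xi> a e n\<bar> \<le> C * \<rho> ^ n \<and> \<bar>Dxy \<xi> a e n\<bar> \<le> C * \<rho> ^ n)"
proof -
  have d: "(0::real) \<in> {0..d0}" using d0_pos by simp
  obtain C1 \<rho>1 where C1: "0 < \<rho>1" "\<rho>1 < 1"
    "\<And>s n. s \<in> states N \<Longrightarrow> (\<Sum>t\<in>mixed1. Kp 0 n s t) \<le> C1 * \<rho>1 ^ n"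
    using mix1_bound d by blast
  obtain C2 \<rho>2 where C2: "0 < \<rho>2" "\<rho>2 < 1"
    "\<And>s n. s \<in> states N \<Longrightarrow> (\<Sum>t\<in>mixed2. Kp 0 n s t) \<le> C2 * \<rho>2 ^ n"
    using mix2_bound by blast
  define \<rho> where "\<rho> = max \<rho>1 \<rho>2"
  define C where "C = \<bar>C1\<bar> + \<bar>C2\<bar>"
  have \<rho>: "0 < \<rho>" "\<rho> < 1" using C1 C2 by (auto simp: \<rho>_def)
  have m1: "C1 * \<rho>1 ^ n \<le> \<bar>C1\<bar> * \<rho> ^ n" for n
  proof -
    have "C1 * \<rho>1 ^ n \<le> \<bar>C1\<bar> * \<rho>1 ^ n" using C1 by (intro mult_right_mono) auto
    also have "\<dots> \<le> \<bar>C1\<bar> * \<rho> ^ n" using C1 by (intro mult_left_mono power_mono) (auto simp: \<rho>_def)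
    finally show ?thesis .
  qed
  have m2: "C2 * \<rho>2 ^ n \<le> \<bar>C2\<bar> * \<rho> ^ n" for n
  proof -
    have "C2 * \<rho>2 ^ n \<le> \<bar>C2\<bar> * \<rho>2 ^ n" using C2 by (intro mult_right_mono) auto
    also have "\<dots> \<le> \<bar>C2\<bar> * \<rho> ^ n" using C2 by (intro mult_left_mono power_mono) (auto simp: \<rho>_def)
    finally show ?thesis .
  qed
  have "\<bar>Dxx \<xi> a e n\<bar> \<le> C * \<rho> ^ n \<and> \<bar>Dxy \<xi> a e n\<bar> \<le> C * \<rho> ^ n"
    if xi: "\<xi> \<in> states N" and a: "a < N" and e: "e < N" for \<xi> a e n
  proof
    have "\<bar>Dxx \<xi> a e n\<bar> \<le> 1 * (\<Sum>t\<in>mixed1. Kp 0 n \<xi> t)"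
      unfolding Dxx_def E0_def by (rule mass_bound[OF d xi mixed1_sub]) (rule xx_bound[OF _ a e])
    also have "\<dots> \<le> C * \<rho> ^ n"
      using C1(3)[OF xi, of n] m1[of n] \<rho> by (simp add: C_def distrib_right add_increasing2)
    finally show "\<bar>Dxx \<xi> a e n\<bar> \<le> C * \<rho> ^ n" .
    have "\<bar>Dxy \<xi> a e n\<bar> \<le> 1 * (\<Sum>t\<in>mixed1 \<union> mixed2. Kp 0 n \<xi> t)"
      unfolding Dxy_def E0_def by (rule mass_bound[OF d xi]) (use mixed1_sub mixed2_sub xy_bound[OF _ a e] in auto)
    also have "\<dots> \<le> (\<Sum>t\<in>mixed1. Kp 0 n \<xi> t) + (\<Sum>t\<in>mixed2. Kp 0 n \<xi> t)"
    proof -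
      have fin: "finite mixed1" "finite mixed2" using finite_subset[OF mixed1_sub finite_states]
          finite_subset[OF mixed2_sub finite_states] by auto
      have "(\<Sum>t\<in>mixed1 \<union> mixed2. Kp 0 n \<xi> t) = (\<Sum>t\<in>mixed1. Kp 0 n \<xi> t) + (\<Sum>t\<in>mixed2. Kp 0 n \<xi> t)
          - (\<Sum>t\<in>mixed1 \<inter> mixed2. Kp 0 n \<xi> t)"
        using sum_Un[OF fin] by simp
      moreover have "(\<Sum>t\<in>mixed1 \<inter> mixed2. Kp 0 n \<xi> t) \<ge> 0"
        by (rule sum_nonneg) (use Kp_nonneg[OF d xi] mixed1_sub in auto)
      ultimately show ?thesis by simp
    qed
    also have "\<dots> \<le> C * \<rho> ^ n"
      using C1(3)[OF xi, of n] C2(3)[OF xi, of n] m1[of n] m2[of n] by (simp add: C_def distrib_right)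
    finally show "\<bar>Dxy \<xi> a e n\<bar> \<le> C * \<rho> ^ n" by simp
  qed
  then show ?thesis using \<rho> by blast
qed

end

lemma alg1: "(N::real) > 0 \<Longrightarrow> e - D = (1 - 1 / N) * e + (1 / N) * S \<Longrightarrow> e = N * D + S"
  by (simp add: field_simps)

lemma alg2: "(N::real) > 0 \<Longrightarrow> e - D = (1 - 2 / N) * e + (1 / N) * S1 + (1 / N) * S2 \<Longrightarrow>
   e = N / 2 * D + 1 / 2 * S1 + 1 / 2 * S2"
  by (simp add: field_simps)

lemma alg3: "(N::real) \<ge> 2 \<Longrightarrow> f - D = (1 - 1 / N)^2 * f + (1 - 1 / N) * (1 / N) * S2 + (1 / N) * (1 - 1 / N) * S1
   + (1 / N)^2 * S3 \<Longrightarrow>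
   f = N^2 / (2 * N - 1) * D + 1 / (2 * N - 1) * S3 + (N - 1) / (2 * N - 1) * (S1 + S2)"
proof -
  assume N: "N \<ge> 2" and h: "f - D = (1 - 1 / N)^2 * f + (1 - 1 / N) * (1 / N) * S2 + (1 / N) * (1 - 1 / N) * S1
   + (1 / N)^2 * S3"
  have "N^2 * (f - D) = N^2 * ((1 - 1 / N)^2 * f + (1 - 1 / N) * (1 / N) * S2 + (1 / N) * (1 - 1 / N) * S1
   + (1 / N)^2 * S3)" using h by simp
  also have "\<dots> = (N - 1)^2 * f + (N - 1) * S2 + (N - 1) * S1 + S3"
    using N by (simp add: field_simps power2_eq_square)
  finally have "(2 * N - 1) * f = N^2 * D + S3 + (N - 1) * (S1 + S2)"
    by (simp add: algebra_simps power2_eq_square)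
  moreover have pos: "2 * N - 1 \<noteq> 0" using N by simp
  ultimately have "f = (N^2 * D + S3 + (N - 1) * (S1 + S2)) / (2 * N - 1)"
    by (simp add: eq_divide_eq mult.commute)
  also have "\<dots> = N^2 / (2 * N - 1) * D + 1 / (2 * N - 1) * S3 + (N - 1) / (2 * N - 1) * (S1 + S2)"
    by (simp add: add_divide_distrib)
  finally show ?thesis .
qed

context TL
begin

definition ee where "ee \<xi> a e = suminf (Dxx \<xi> a e)"
definition ff where "ff \<xi> a e = suminf (Dxy \<xi> a e)"

context
  fixes \<xi> assumes xi: "\<xi> \<in> states N"
begin

lemma D_summable:
  assumes a: "a < N" and e: "e < N"
  shows "summable (Dxx \<xi> a e)" "summable (Dxy \<xi> a e)"
proof -
  obtain C \<rho> where C: "0 < \<rho>" "\<rho> < 1" "\<And>a e n. a < N \<Longrightarrow> e < N \<Longrightarrow>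
     \<bar>Dxx \<xi> a e n\<bar> \<le> C * \<rho> ^ n \<and> \<bar>Dxy \<xi> a e n\<bar> \<le> C * \<rho> ^ n"
    using D_bounds xi by blast
  have sg: "summable (\<lambda>n. C * \<rho> ^ n)" using C by (intro summable_mult summable_geometric) auto
  show "summable (Dxx \<xi> a e)" by (rule summable_comparison_test'[OF sg]) (use C(3)[OF a e] in simp)
  show "summable (Dxy \<xi> a e)" by (rule summable_comparison_test'[OF sg]) (use C(3)[OF a e] in simp)
qed

lemma Dxx_sums: "a < N \<Longrightarrow> e < N \<Longrightarrow> Dxx \<xi> a e sums ee \<xi> a e"
  unfolding ee_def using D_summable by (simp add: summable_sums)
lemma Dxy_sums: "a < N \<Longrightarrow> e < N \<Longrightarrow> Dxy \<xi> a e sums ff \<xi> a e"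
  unfolding ff_def using D_summable by (simp add: summable_sums)

lemma sums_shift: "(f::nat \<Rightarrow> real) sums s \<Longrightarrow> (\<lambda>n. f (Suc n)) sums (s - f 0)"
  using sums_Suc_iff[of f "s - f 0"] by simp

lemma ee_diag:
  assumes a: "a < N"
  shows "ee \<xi> a a = real N * (ind (a \<in> fst \<xi>) - avg_state N w1 (fst \<xi>)) + (\<Sum>k<N. p1 a k * ee \<xi> k k)"
proof -
  have s1: "(\<lambda>n. Dxx \<xi> a a (Suc n)) sums (ee \<xi> a a - Dxx \<xi> a a 0)" by (rule sums_shift[OF Dxx_sums[OF a a]])
  have s2: "(\<lambda>n. Dxx \<xi> a a (Suc n)) sums ((1 - 1 / real N) * ee \<xi> a a + (1 / real N) * (\<Sum>k<N. p1 a k * ee \<xi> k k))"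
    unfolding Dxx_diag_Suc[OF a]
  proof (rule sums_add)
    show "(\<lambda>n. (1 - 1 / real N) * Dxx \<xi> a a n) sums ((1 - 1 / real N) * ee \<xi> a a)"
      by (rule sums_mult[OF Dxx_sums[OF a a]])
    show "(\<lambda>n. 1 / real N * (\<Sum>k<N. p1 a k * Dxx \<xi> k k n)) sums (1 / real N * (\<Sum>k<N. p1 a k * ee \<xi> k k))"
      by (rule sums_mult, rule sums_sum, rule sums_mult, rule Dxx_sums) auto
  qed
  have D0: "Dxx \<xi> a a 0 = ind (a \<in> fst \<xi>) - avg_state N w1 (fst \<xi>)"
    unfolding Dxx_def E0_0[OF xi] by (simp add: xx_diag phi1_def)
  show ?thesis using alg1[OF _ sums_unique2[OF s1 s2]] Npos unfolding D0 by simp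
qed

lemma ee_off:
  assumes a: "a < N" and e: "e < N" and ae: "a \<noteq> e"
  shows "ee \<xi> a e = real N / 2 * (ind (a \<in> fst \<xi>) * ind (e \<in> fst \<xi>) - avg_state N w1 (fst \<xi>))
     + 1/2 * (\<Sum>k<N. p1 a k * ee \<xi> k e) + 1/2 * (\<Sum>k<N. p1 e k * ee \<xi> a k)"
proof -
  have s1: "(\<lambda>n. Dxx \<xi> a e (Suc n)) sums (ee \<xi> a e - Dxx \<xi> a e 0)" by (rule sums_shift[OF Dxx_sums[OF a e]])
  have s2: "(\<lambda>n. Dxx \<xi> a e (Suc n)) sums ((1 - 2 / real N) * ee \<xi> a e + (1 / real N) * (\<Sum>k<N. p1 a k * ee \<xi> k e)
      + (1 / real N) * (\<Sum>k<N. p1 e k * ee \<xi> a k))"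
    unfolding Dxx_off_Suc[OF a e ae]
  proof (rule sums_add, rule sums_add)
    show "(\<lambda>n. (1 - 2 / real N) * Dxx \<xi> a e n) sums ((1 - 2 / real N) * ee \<xi> a e)"
      by (rule sums_mult[OF Dxx_sums[OF a e]])
    show "(\<lambda>n. 1 / real N * (\<Sum>k<N. p1 a k * Dxx \<xi> k e n)) sums (1 / real N * (\<Sum>k<N. p1 a k * ee \<xi> k e))"
      by (rule sums_mult, rule sums_sum, rule sums_mult, rule Dxx_sums) (use e in auto)
    show "(\<lambda>n. 1 / real N * (\<Sum>k<N. p1 e k * Dxx \<xi> a k n)) sums (1 / real N * (\<Sum>k<N. p1 e k * ee \<xi> a k))"
      by (rule sums_mult, rule sums_sum, rule sums_mult, rule Dxx_sums) (use a in auto)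
  qed
  have D0: "Dxx \<xi> a e 0 = ind (a \<in> fst \<xi>) * ind (e \<in> fst \<xi>) - avg_state N w1 (fst \<xi>)"
    unfolding Dxx_def E0_0[OF xi] by (simp add: xx_def phi1_def)
  show ?thesis using alg2[OF _ sums_unique2[OF s1 s2]] Npos unfolding D0 by simp
qed

lemma ee_norm: "(\<Sum>a<N. \<pi>1 a * ee \<xi> a a) = 0"
proof -
  have "(\<lambda>n. \<Sum>a<N. \<pi>1 a * Dxx \<xi> a a n) sums (\<Sum>a<N. \<pi>1 a * ee \<xi> a a)"
    by (rule sums_sum, rule sums_mult, rule Dxx_sums) auto
  moreover have "(\<Sum>a<N. \<pi>1 a * Dxx \<xi> a a n) = 0" for n
  proof -
    have "(\<Sum>a<N. \<pi>1 a * Dxx \<xi> a a n) = E0 \<xi> n (\<lambda>t. \<Sum>a<N. \<pi>1 a * (xx a a t - phi1 t))"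
      unfolding Dxx_def E0_sum E0_cmult ..
    also have "\<dots> = E0 \<xi> n (\<lambda>t. 0)"
    proof (rule E0_cong)
      fix t
      have "(\<Sum>a<N. \<pi>1 a * (xx a a t - phi1 t)) = phi1 t - (\<Sum>a<N. \<pi>1 a) * phi1 t"
        by (simp add: xx_diag phi1_def avg_state_def right_diff_distrib sum_subtractf sum_distrib_right)
      then show "(\<Sum>a<N. \<pi>1 a * (xx a a t - phi1 t)) = 0" using sd_sum[OF g1 Npos] by simp
    qed
    finally show ?thesis by (simp add: E0_def)
  qed
  ultimately have "(\<lambda>n. 0::real) sums (\<Sum>a<N. \<pi>1 a * ee \<xi> a a)" by simp
  then show ?thesis using sums_unique2[OF _ sums_zero] by blast
qed

lemma ff_eq:
  assumes a: "a < N" and e: "e < N"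
  shows "ff \<xi> a e = (real N)^2 / (2 * real N - 1) *
       (ind (a \<in> fst \<xi>) * ind (e \<in> snd \<xi>) - avg_state N w1 (fst \<xi>) * avg_state N w2 (snd \<xi>))
     + 1 / (2 * real N - 1) * (\<Sum>k1<N. \<Sum>k2<N. p1 a k1 * p2 e k2 * ff \<xi> k1 k2)
     + (real N - 1) / (2 * real N - 1) * ((\<Sum>k<N. p1 a k * ff \<xi> k e) + (\<Sum>k<N. p2 e k * ff \<xi> a k))"
proof -
  have s1: "(\<lambda>n. Dxy \<xi> a e (Suc n)) sums (ff \<xi> a e - Dxy \<xi> a e 0)" by (rule sums_shift[OF Dxy_sums[OF a e]])
  have s2: "(\<lambda>n. Dxy \<xi> a e (Suc n)) sums ((1 - 1 / real N)^2 * ff \<xi> a e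
    + (1 - 1 / real N) * (1 / real N) * (\<Sum>l<N. p2 e l * ff \<xi> a l)
    + (1 / real N) * (1 - 1 / real N) * (\<Sum>k<N. p1 a k * ff \<xi> k e)
    + (1 / real N)^2 * (\<Sum>k<N. p1 a k * (\<Sum>l<N. p2 e l * ff \<xi> k l)))"
    unfolding Dxy_Suc[OF a e]
  proof (rule sums_add, rule sums_add, rule sums_add)
    show "(\<lambda>n. (1 - 1 / real N)^2 * Dxy \<xi> a e n) sums ((1 - 1 / real N)^2 * ff \<xi> a e)"
      by (rule sums_mult[OF Dxy_sums[OF a e]])
    show "(\<lambda>n. (1 - 1 / real N) * (1 / real N) * (\<Sum>l<N. p2 e l * Dxy \<xi> a l n)) sums
        ((1 - 1 / real N) * (1 / real N) * (\<Sum>l<N. p2 e l * ff \<xi> a l))"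
      by (rule sums_mult, rule sums_sum, rule sums_mult, rule Dxy_sums) (use a in auto)
    show "(\<lambda>n. (1 / real N) * (1 - 1 / real N) * (\<Sum>k<N. p1 a k * Dxy \<xi> k e n)) sums
        ((1 / real N) * (1 - 1 / real N) * (\<Sum>k<N. p1 a k * ff \<xi> k e))"
      by (rule sums_mult, rule sums_sum, rule sums_mult, rule Dxy_sums) (use e in auto)
    show "(\<lambda>n. (1 / real N)^2 * (\<Sum>k<N. p1 a k * (\<Sum>l<N. p2 e l * Dxy \<xi> k l n))) sums
        ((1 / real N)^2 * (\<Sum>k<N. p1 a k * (\<Sum>l<N. p2 e l * ff \<xi> k l)))"
      by (rule sums_mult, rule sums_sum, rule sums_mult, rule sums_sum, rule sums_mult, rule Dxy_sums) auto
  qed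
  have D0: "Dxy \<xi> a e 0 = ind (a \<in> fst \<xi>) * ind (e \<in> snd \<xi>) - avg_state N w1 (fst \<xi>) * avg_state N w2 (snd \<xi>)"
    unfolding Dxy_def E0_0[OF xi] by (simp add: xy_def phi1_def phi2_def)
  have dd: "(\<Sum>k<N. p1 a k * (\<Sum>l<N. p2 e l * ff \<xi> k l)) = (\<Sum>k1<N. \<Sum>k2<N. p1 a k1 * p2 e k2 * ff \<xi> k1 k2)"
    by (simp add: sum_distrib_left mult.assoc)
  have N2': "real N \<ge> 2" using N2 by simp
  show ?thesis using alg3[OF N2' sums_unique2[OF s1 s2]] unfolding D0 dd by simp
qed

end

end

lemma max_pair:
  fixes z :: "nat \<Rightarrow> nat \<Rightarrow> real"
  assumes "N > 0"
  shows "\<exists>i0<N. \<exists>j0<N. \<forall>i<N. \<forall>j<N. z i j \<le> z i0 j0"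
proof -
  let ?S = "(\<lambda>(i,j). z i j) ` ({..<N} \<times> {..<N})"
  have fin: "finite ?S" by simp
  have ne: "?S \<noteq> {}" using assms by auto
  obtain i0 j0 where ij: "i0 < N" "j0 < N" "z i0 j0 = Max ?S" using Max_in[OF fin ne] by auto
  have "z i j \<le> z i0 j0" if "i < N" "j < N" for i j
    unfolding ij(3) by (rule Max_ge[OF fin]) (use that in auto)
  then show ?thesis using ij(1,2) by blast
qed

lemma avg_eq_max:
  fixes q v :: "nat \<Rightarrow> real"
  assumes q0: "\<And>k. k < N \<Longrightarrow> q k \<ge> 0" and qs: "(\<Sum>k<N. q k) = 1"
    and vM: "\<And>k. k < N \<Longrightarrow> v k \<le> M" and avg: "(\<Sum>k<N. q k * v k) \<ge> M"
    and k0: "k0 < N" "q k0 > 0"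
  shows "v k0 = M"
proof -
  have "(\<Sum>k<N. q k * (M - v k)) = M - (\<Sum>k<N. q k * v k)"
    by (simp add: right_diff_distrib sum_subtractf sum_distrib_right[symmetric] qs)
  then have le: "(\<Sum>k<N. q k * (M - v k)) \<le> 0" using avg by simp
  have nn: "\<forall>k\<in>{..<N}. 0 \<le> q k * (M - v k)" using q0 vM by (auto intro: mult_nonneg_nonneg)
  have sn: "0 \<le> (\<Sum>k<N. q k * (M - v k))" by (rule sum_nonneg) (use nn in blast)
  have "(\<Sum>k<N. q k * (M - v k)) = 0" using le sn by linarith
  then have "\<forall>k\<in>{..<N}. q k * (M - v k) = 0"
    using sum_nonneg_eq_0_iff[OF finite_lessThan, of N "\<lambda>k. q k * (M - v k)"] nn by blast
  moreover have "k0 \<in> {..<N}" using k0 by simp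
  ultimately have "q k0 * (M - v k0) = 0" by blast
  then have "M - v k0 = 0" using k0(2) by simp
  then show ?thesis by simp
qed

lemma avg_le:
  fixes q v :: "nat \<Rightarrow> real"
  assumes q0: "\<And>k. k < N \<Longrightarrow> q k \<ge> 0" and qs: "(\<Sum>k<N. q k) = 1"
    and vM: "\<And>k. k < N \<Longrightarrow> v k \<le> M"
  shows "(\<Sum>k<N. q k * v k) \<le> M"
proof -
  have "(\<Sum>k<N. q k * v k) \<le> (\<Sum>k<N. q k * M)" by (intro sum_mono mult_left_mono) (auto simp: q0 vM)
  also have "\<dots> = M" by (simp add: sum_distrib_right[symmetric] qs)
  finally show ?thesis .
qed

context
  fixes N :: nat and w :: "nat \<Rightarrow> nat \<Rightarrow> real"
  assumes wg: "weighted_graph N w" and Npos: "N > 0"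
begin

lemma tp_pos: "i < N \<Longrightarrow> j < N \<Longrightarrow> w i j > 0 \<Longrightarrow> trans_prob N w i j > 0"
  using wg_str_pos[OF wg] by (simp add: trans_prob_def)

lemma reach_graph:
  "i < N \<Longrightarrow> j < N \<Longrightarrow> (i, j) \<in> {(a, e). a < N \<and> e < N \<and> w a e > 0}\<^sup>*"
  using wg by (auto simp: weighted_graph_def connected_graph_def)

lemma spread:
  fixes P :: "nat \<Rightarrow> bool"
  assumes step: "\<And>k k'. k < N \<Longrightarrow> k' < N \<Longrightarrow> w k k' > 0 \<Longrightarrow> P k \<Longrightarrow> P k'"
    and i0: "i0 < N" "P i0" and j: "j < N"
  shows "P j"
proof -
  have "P k" if "(i0, k) \<in> {(a, e). a < N \<and> e < N \<and> w a e > 0}\<^sup>*" for k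
    using that
  proof (induction rule: rtrancl_induct)
    case base then show ?case using i0 by simp
  next
    case (step y z) then show ?case using assms(1) by blast
  qed
  then show ?thesis using reach_graph[OF i0(1) j] by blast
qed

lemma harm_const:
  fixes v :: "nat \<Rightarrow> real"
  assumes h: "\<And>i. i < N \<Longrightarrow> v i = (\<Sum>k<N. trans_prob N w i k * v k)"
  shows "\<exists>M. \<forall>i<N. v i = M"
proof -
  obtain i0 where i0: "i0 < N" "\<forall>i<N. v i \<le> v i0"
    using max_pair[OF Npos, of "\<lambda>i j. v i"] by blast
  have "v j = v i0" if "j < N" for j
  proof (rule spread[of "\<lambda>k. v k = v i0", OF _ i0(1) _ that])
    fix k k' assume kk: "k < N" "k' < N" "w k k' > 0" "v k = v i0"
    show "v k' = v i0"
    proof (rule avg_eq_max[of N "trans_prob N w k"])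
      show "\<And>l. l < N \<Longrightarrow> trans_prob N w k l \<ge> 0" using tp_nonneg[OF wg] kk by auto
      show "(\<Sum>l<N. trans_prob N w k l) = 1" using tp_sum[OF wg] kk by auto
      show "\<And>l. l < N \<Longrightarrow> v l \<le> v i0" using i0 by auto
      show "(\<Sum>l<N. trans_prob N w k l * v l) \<ge> v i0" using h[OF kk(1)] kk by simp
      show "k' < N" "trans_prob N w k k' > 0" using kk tp_pos by auto
    qed
  qed simp
  then show ?thesis by blast
qed


lemma beta_hom_le:
  fixes z :: "nat \<Rightarrow> nat \<Rightarrow> real"
  assumes diag: "\<And>i. i < N \<Longrightarrow> z i i = 0"
    and off: "\<And>i j. i < N \<Longrightarrow> j < N \<Longrightarrow> i \<noteq> j \<Longrightarrow>
      z i j = 1/2 * (\<Sum>k<N. trans_prob N w i k * z k j) + 1/2 * (\<Sum>k<N. trans_prob N w j k * z i k)"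
    and ij: "i < N" "j < N"
  shows "z i j \<le> 0"
proof -
  obtain i0 j0 where m: "i0 < N" "j0 < N" "\<And>i j. i < N \<Longrightarrow> j < N \<Longrightarrow> z i j \<le> z i0 j0"
    using max_pair[OF Npos, of z] by blast
  let ?M = "z i0 j0"
  have "?M \<le> 0"
  proof (rule ccontr)
    assume "\<not> ?M \<le> 0"
    then have Mp: "?M > 0" by simp
    have "z j0 j0 = ?M"
    proof (rule spread[of "\<lambda>k. z k j0 = ?M", OF _ m(1) _ m(2)])
      fix k k' assume kk: "k < N" "k' < N" "w k k' > 0" "z k j0 = ?M"
      have kj: "k \<noteq> j0" using kk(4) Mp diag[OF m(2)] by auto
      have A: "(\<Sum>l<N. trans_prob N w k l * z l j0) \<le> ?M"
        by (rule avg_le) (use tp_nonneg[OF wg] tp_sum[OF wg] kk m in auto)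
      have B: "(\<Sum>l<N. trans_prob N w j0 l * z k l) \<le> ?M"
        by (rule avg_le) (use tp_nonneg[OF wg] tp_sum[OF wg] kk m in auto)
      have "?M = 1/2 * (\<Sum>l<N. trans_prob N w k l * z l j0) + 1/2 * (\<Sum>l<N. trans_prob N w j0 l * z k l)"
        using off[OF kk(1) m(2) kj] kk(4) by simp
      then have A2: "(\<Sum>l<N. trans_prob N w k l * z l j0) \<ge> ?M" using B by linarith
      show "z k' j0 = ?M"
        by (rule avg_eq_max[of N "trans_prob N w k"]) (use tp_nonneg[OF wg] tp_sum[OF wg] kk m A2 tp_pos in auto)
    qed simp
    then show False using diag[OF m(2)] Mp by simp
  qed
  then show ?thesis using m(3)[OF ij] by simp
qed

lemma beta_unique:
  assumes b1: "beta_system N w X \<beta>" and b2: "beta_system N w X \<beta>'"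
    and ij: "i < N" "j < N"
  shows "\<beta> i j = \<beta>' i j"
proof -
  let ?z = "\<lambda>i j. \<beta> i j - \<beta>' i j"
  have hd: "?z i i = (\<Sum>k<N. trans_prob N w i k * ?z k k)" if i: "i < N" for i
  proof -
    have e1: "\<beta> i i = real N * (ind (i \<in> X) - avg_state N w X) + (\<Sum>k<N. trans_prob N w i k * \<beta> k k)"
      using b1 i unfolding beta_system_def by blast
    have e2: "\<beta>' i i = real N * (ind (i \<in> X) - avg_state N w X) + (\<Sum>k<N. trans_prob N w i k * \<beta>' k k)"
      using b2 i unfolding beta_system_def by blast
    have "(\<Sum>k<N. trans_prob N w i k * ?z k k) = (\<Sum>k<N. trans_prob N w i k * \<beta> k k) - (\<Sum>k<N. trans_prob N w i k * \<beta>' k k)"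
      by (simp add: right_diff_distrib sum_subtractf)
    then show ?thesis using e1 e2 by linarith
  qed
  obtain M where M: "\<And>i. i < N \<Longrightarrow> ?z i i = M" using harm_const[of "\<lambda>i. ?z i i"] hd by blast
  have "(\<Sum>i<N. stat_dist N w i * ?z i i) = (\<Sum>i<N. stat_dist N w i * \<beta> i i) - (\<Sum>i<N. stat_dist N w i * \<beta>' i i)"
    by (simp add: right_diff_distrib sum_subtractf)
  also have "\<dots> = 0" using b1 b2 unfolding beta_system_def by linarith
  finally have "(\<Sum>i<N. stat_dist N w i * ?z i i) = 0" .
  moreover have "(\<Sum>i<N. stat_dist N w i * ?z i i) = M"
    using M sd_sum[OF wg Npos] by (simp add: sum_distrib_right[symmetric])
  ultimately have diag: "\<And>i. i < N \<Longrightarrow> ?z i i = 0" using M by simp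
  have off: "?z i j = 1/2 * (\<Sum>k<N. trans_prob N w i k * ?z k j) + 1/2 * (\<Sum>k<N. trans_prob N w j k * ?z i k)"
    if ij: "i < N" "j < N" "i \<noteq> j" for i j
  proof -
    have e1: "\<beta> i j = real N / 2 * (ind (i \<in> X) * ind (j \<in> X) - avg_state N w X)
                 + 1/2 * (\<Sum>k<N. trans_prob N w i k * \<beta> k j)
                 + 1/2 * (\<Sum>k<N. trans_prob N w j k * \<beta> i k)"
      using b1 ij unfolding beta_system_def by blast
    have e2: "\<beta>' i j = real N / 2 * (ind (i \<in> X) * ind (j \<in> X) - avg_state N w X)
                 + 1/2 * (\<Sum>k<N. trans_prob N w i k * \<beta>' k j)
                 + 1/2 * (\<Sum>k<N. trans_prob N w j k * \<beta>' i k)"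
      using b2 ij unfolding beta_system_def by blast
    have s1: "(\<Sum>k<N. trans_prob N w i k * ?z k j) = (\<Sum>k<N. trans_prob N w i k * \<beta> k j) - (\<Sum>k<N. trans_prob N w i k * \<beta>' k j)"
      by (simp add: right_diff_distrib sum_subtractf)
    have s2: "(\<Sum>k<N. trans_prob N w j k * ?z i k) = (\<Sum>k<N. trans_prob N w j k * \<beta> i k) - (\<Sum>k<N. trans_prob N w j k * \<beta>' i k)"
      by (simp add: right_diff_distrib sum_subtractf)
    show ?thesis unfolding s1 s2 by (subst e1, subst e2) (simp add: algebra_simps)
  qed
  have "?z i j \<le> 0" by (rule beta_hom_le[OF diag off ij]) auto
  moreover have "- ?z i j \<le> 0"
  proof (rule beta_hom_le[of "\<lambda>i j. - ?z i j", OF _ _ ij])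
    show "\<And>i. i < N \<Longrightarrow> - ?z i i = 0" using diag by simp
    show "- ?z i j = 1/2 * (\<Sum>k<N. trans_prob N w i k * - ?z k j) + 1/2 * (\<Sum>k<N. trans_prob N w j k * - ?z i k)"
      if "i < N" "j < N" "i \<noteq> j" for i j
      unfolding mult_minus_right sum_negf using off[OF that] by linarith
  qed
  ultimately show ?thesis by simp
qed

end


lemma comb3:
  fixes al be T1 T2 T3 M :: real
  assumes "0 \<le> al" "0 < be" "al + 2 * be = 1" "T1 \<le> M" "T2 \<le> M" "T3 \<le> M"
    and "M = al * T1 + be * T2 + be * T3"
  shows "T2 = M" "T3 = M"
proof -
  have a: "al * T1 \<le> al * M" using assms by (intro mult_left_mono) auto
  have b2: "be * T2 \<le> be * M" using assms by (intro mult_left_mono) auto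
  have b3: "be * T3 \<le> be * M" using assms by (intro mult_left_mono) auto
  have "al * M + be * M + be * M = (al + 2 * be) * M" by (simp add: algebra_simps)
  then have "M = al * M + be * M + be * M" using assms(3) by simp
  then have "be * T2 = be * M" "be * T3 = be * M" using a b2 b3 assms(7) by linarith+
  then show "T2 = M" "T3 = M" using assms(2) by auto
qed

context TL
begin

lemma gamma_hom_le:
  fixes z :: "nat \<Rightarrow> nat \<Rightarrow> real"
  assumes eq: "\<And>i j. i < N \<Longrightarrow> j < N \<Longrightarrow>
      z i j = 1 / (2 * real N - 1) * (\<Sum>k<N. p1 i k * (\<Sum>l<N. p2 j l * z k l))
        + (real N - 1) / (2 * real N - 1) * (\<Sum>k<N. p1 i k * z k j)
        + (real N - 1) / (2 * real N - 1) * (\<Sum>l<N. p2 j l * z i l)"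
    and norm: "(\<Sum>i<N. \<pi>1 i * z i i) = 0"
    and ij: "i < N" "j < N"
  shows "z i j \<le> 0"
proof -
  obtain i0 j0 where m: "i0 < N" "j0 < N" "\<And>i j. i < N \<Longrightarrow> j < N \<Longrightarrow> z i j \<le> z i0 j0"
    using max_pair[OF Npos, of z] by blast
  let ?M = "z i0 j0"
  let ?al = "1 / (2 * real N - 1)" and ?be = "(real N - 1) / (2 * real N - 1)"
  have Np: "2 * real N - 1 > 0" "real N - 1 > 0" using N2 by auto
  have co: "0 \<le> ?al" "0 < ?be" "?al + 2 * ?be = 1"
  proof -
    show "0 \<le> ?al" using Np by simp
    show "0 < ?be" using Np by simp
    have "?al + 2 * ?be = (1 + 2 * (real N - 1)) / (2 * real N - 1)"
      by (simp only: add_divide_distrib times_divide_eq_right)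
    also have "1 + 2 * (real N - 1) = 2 * real N - 1" by simp
    also have "(2 * real N - 1) / (2 * real N - 1) = 1" using Np by simp
    finally show "?al + 2 * ?be = 1" .
  qed
  have T1: "(\<Sum>k<N. p1 i k * (\<Sum>l<N. p2 j l * z k l)) \<le> ?M" if "i < N" "j < N" for i j
  proof (rule avg_le)
    show "\<And>k. k < N \<Longrightarrow> 0 \<le> p1 i k" using tp_nonneg[OF g1] that by auto
    show "(\<Sum>k<N. p1 i k) = 1" using tp_sum[OF g1] that by auto
    fix k assume "k < N"
    show "(\<Sum>l<N. p2 j l * z k l) \<le> ?M"
      by (rule avg_le) (use tp_nonneg[OF g2] tp_sum[OF g2] that m \<open>k < N\<close> in auto)
  qed
  have T2: "(\<Sum>k<N. p1 i k * z k j) \<le> ?M" if "i < N" "j < N" for i j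
    by (rule avg_le) (use tp_nonneg[OF g1] tp_sum[OF g1] that m in auto)
  have T3: "(\<Sum>l<N. p2 j l * z i l) \<le> ?M" if "i < N" "j < N" for i j
    by (rule avg_le) (use tp_nonneg[OF g2] tp_sum[OF g2] that m in auto)
  have colj0: "z k j0 = ?M" if k: "k < N" for k
  proof (rule spread[OF g1 Npos, of "\<lambda>k. z k j0 = ?M", OF _ m(1) _ k])
    fix k k' assume kk: "k < N" "k' < N" "w1 k k' > 0" "z k j0 = ?M"
    have hh: "(\<Sum>l<N. p1 k l * z l j0) = ?M"
      using comb3(1)[OF co T1[OF kk(1) m(2)] T2[OF kk(1) m(2)] T3[OF kk(1) m(2)]] eq[OF kk(1) m(2)] kk(4) by simp
    show "z k' j0 = ?M"
      by (rule avg_eq_max[of N "p1 k"]) (use hh tp_nonneg[OF g1] tp_sum[OF g1] kk m tp_pos[OF g1] in auto)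
  qed simp
  have all: "z k l = ?M" if k: "k < N" and l: "l < N" for k l
  proof (rule spread[OF g2 Npos, of "\<lambda>l. z k l = ?M", OF _ m(2) _ l])
    fix l l' assume ll: "l < N" "l' < N" "w2 l l' > 0" "z k l = ?M"
    have hh: "(\<Sum>m<N. p2 l m * z k m) = ?M"
      using comb3(2)[OF co T1[OF k ll(1)] T2[OF k ll(1)] T3[OF k ll(1)]] eq[OF k ll(1)] ll(4) by simp
    show "z k l' = ?M"
      by (rule avg_eq_max[of N "p2 l"]) (use hh tp_nonneg[OF g2] tp_sum[OF g2] ll m k tp_pos[OF g2] in auto)
  qed (use colj0[OF k] in simp)
  have "(\<Sum>i<N. \<pi>1 i * z i i) = (\<Sum>i<N. \<pi>1 i * ?M)" using all by (intro sum.cong) auto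
  also have "\<dots> = ?M" using sd_sum[OF g1 Npos] by (simp add: sum_distrib_right[symmetric])
  finally have "?M = 0" using norm by simp
  then show ?thesis using m(3)[OF ij] by simp
qed

lemma gamma_unique:
  assumes c1: "gamma_system N w1 w2 X1 X2 \<gamma>" and c2: "gamma_system N w1 w2 X1 X2 \<gamma>'"
    and ij: "i < N" "j < N"
  shows "\<gamma> i j = \<gamma>' i j"
proof -
  let ?z = "\<lambda>i j. \<gamma> i j - \<gamma>' i j"
  have dd: "(\<Sum>k1<N. \<Sum>k2<N. p1 i k1 * p2 j k2 * g k1 k2) = (\<Sum>k<N. p1 i k * (\<Sum>l<N. p2 j l * g k l))" for g i j
    by (simp add: sum_distrib_left mult.assoc)
  have eq: "?z i j = 1 / (2 * real N - 1) * (\<Sum>k<N. p1 i k * (\<Sum>l<N. p2 j l * ?z k l))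
        + (real N - 1) / (2 * real N - 1) * (\<Sum>k<N. p1 i k * ?z k j)
        + (real N - 1) / (2 * real N - 1) * (\<Sum>l<N. p2 j l * ?z i l)" if ij: "i < N" "j < N" for i j
  proof -
    have e1: "\<gamma> i j = (real N)^2 / (2 * real N - 1) *
                   (ind (i \<in> X1) * ind (j \<in> X2) - avg_state N w1 X1 * avg_state N w2 X2)
               + 1 / (2 * real N - 1) * (\<Sum>k<N. p1 i k * (\<Sum>l<N. p2 j l * \<gamma> k l))
               + (real N - 1) / (2 * real N - 1) *
                   ((\<Sum>k<N. p1 i k * \<gamma> k j) + (\<Sum>k<N. p2 j k * \<gamma> i k))"
      using c1[unfolded gamma_system_def, THEN conjunct1, rule_format, OF ij] unfolding dd .
    have e2: "\<gamma>' i j = (real N)^2 / (2 * real N - 1) *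
                   (ind (i \<in> X1) * ind (j \<in> X2) - avg_state N w1 X1 * avg_state N w2 X2)
               + 1 / (2 * real N - 1) * (\<Sum>k<N. p1 i k * (\<Sum>l<N. p2 j l * \<gamma>' k l))
               + (real N - 1) / (2 * real N - 1) *
                   ((\<Sum>k<N. p1 i k * \<gamma>' k j) + (\<Sum>k<N. p2 j k * \<gamma>' i k))"
      using c2[unfolded gamma_system_def, THEN conjunct1, rule_format, OF ij] unfolding dd .
    have s1: "(\<Sum>k<N. p1 i k * (\<Sum>l<N. p2 j l * ?z k l)) =
        (\<Sum>k<N. p1 i k * (\<Sum>l<N. p2 j l * \<gamma> k l)) - (\<Sum>k<N. p1 i k * (\<Sum>l<N. p2 j l * \<gamma>' k l))"
      by (simp add: right_diff_distrib sum_subtractf)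
    have s2: "(\<Sum>k<N. p1 i k * ?z k j) = (\<Sum>k<N. p1 i k * \<gamma> k j) - (\<Sum>k<N. p1 i k * \<gamma>' k j)"
      by (simp add: right_diff_distrib sum_subtractf)
    have s3: "(\<Sum>l<N. p2 j l * ?z i l) = (\<Sum>l<N. p2 j l * \<gamma> i l) - (\<Sum>l<N. p2 j l * \<gamma>' i l)"
      by (simp add: right_diff_distrib sum_subtractf)
    show ?thesis unfolding s1 s2 s3 by (subst e1, subst e2) (simp add: algebra_simps)
  qed
  have norm: "(\<Sum>i<N. \<pi>1 i * ?z i i) = 0"
  proof -
    have "(\<Sum>i<N. \<pi>1 i * ?z i i) = (\<Sum>i<N. \<pi>1 i * \<gamma> i i) - (\<Sum>i<N. \<pi>1 i * \<gamma>' i i)"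
      by (simp add: right_diff_distrib sum_subtractf)
    also have "\<dots> = 0" using c1[unfolded gamma_system_def, THEN conjunct2] c2[unfolded gamma_system_def, THEN conjunct2] by simp
    finally show ?thesis .
  qed
  have "?z i j \<le> 0" by (rule gamma_hom_le[OF eq norm ij])
  moreover have "- ?z i j \<le> 0"
  proof (rule gamma_hom_le[of "\<lambda>i j. - ?z i j", OF _ _ ij])
    show "(\<Sum>i<N. \<pi>1 i * - ?z i i) = 0" unfolding mult_minus_right sum_negf using norm by simp
    fix i j assume "i < N" "j < N"
    show "- ?z i j = 1 / (2 * real N - 1) * (\<Sum>k<N. p1 i k * (\<Sum>l<N. p2 j l * - ?z k l))
        + (real N - 1) / (2 * real N - 1) * (\<Sum>k<N. p1 i k * - ?z k j)
        + (real N - 1) / (2 * real N - 1) * (\<Sum>l<N. p2 j l * - ?z i l)"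
      unfolding mult_minus_right sum_negf using eq[OF \<open>i < N\<close> \<open>j < N\<close>] by linarith
  qed
  ultimately show ?thesis by simp
qed

end


context TL
begin

abbreviation "P2 \<equiv> mat_pow N p1 2"

lemma P2_eq: "j < N \<Longrightarrow> P2 j k = (\<Sum>i<N. p1 j i * p1 i k)"
  by (rule mat_pow2)

lemma P2_rowsum: "j < N \<Longrightarrow> (\<Sum>k<N. P2 j k) = 1"
proof -
  assume j: "j < N"
  have "(\<Sum>k<N. P2 j k) = (\<Sum>i<N. p1 j i * (\<Sum>k<N. p1 i k))"
    unfolding P2_eq[OF j] by (simp add: sum_distrib_left) (rule sum.swap)
  also have "\<dots> = (\<Sum>i<N. p1 j i)" by (intro sum.cong refl) (simp add: tp_sum[OF g1])
  finally show ?thesis using tp_sum[OF g1 j] by simp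
qed

lemma P2_stat: "k < N \<Longrightarrow> (\<Sum>j<N. \<pi>1 j * P2 j k) = \<pi>1 k"
proof -
  assume k: "k < N"
  have "(\<Sum>j<N. \<pi>1 j * P2 j k) = (\<Sum>j<N. \<Sum>i<N. \<pi>1 j * p1 j i * p1 i k)"
    by (intro sum.cong refl) (simp add: P2_eq sum_distrib_left mult.assoc)
  also have "\<dots> = (\<Sum>i<N. (\<Sum>j<N. \<pi>1 j * p1 j i) * p1 i k)"
    by (subst sum.swap) (simp add: sum_distrib_right)
  also have "\<dots> = (\<Sum>i<N. \<pi>1 i * p1 i k)" by (intro sum.cong refl) (simp add: stationary[OF g1 Npos])
  finally show ?thesis using stationary[OF g1 Npos k] by simp
qed

lemma P2_tot: "(\<Sum>j<N. \<Sum>k<N. \<pi>1 j * P2 j k) = 1"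
proof -
  have "(\<Sum>j<N. \<Sum>k<N. \<pi>1 j * P2 j k) = (\<Sum>j<N. \<pi>1 j)"
    by (intro sum.cong refl) (simp add: sum_distrib_left[symmetric] P2_rowsum)
  then show ?thesis using sd_sum[OF g1 Npos] by simp
qed

lemma rev2: "j < N \<Longrightarrow> k < N \<Longrightarrow> (\<Sum>i<N. \<pi>1 i * p1 i j * p1 i k) = \<pi>1 j * P2 j k"
proof -
  assume jk: "j < N" "k < N"
  have "(\<Sum>i<N. \<pi>1 i * p1 i j * p1 i k) = (\<Sum>i<N. \<pi>1 j * p1 j i * p1 i k)"
    by (intro sum.cong refl) (simp add: reversible[OF g1 Npos _ jk(1)])
  also have "\<dots> = \<pi>1 j * P2 j k" by (simp add: P2_eq[OF jk(1)] sum_distrib_left mult.assoc)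
  finally show ?thesis .
qed

lemma Qform:
  fixes X g :: "nat \<Rightarrow> real"
  shows "(\<Sum>i<N. \<pi>1 i * (\<Sum>j<N. X j * (p1 i j * (g j - (\<Sum>k<N. p1 i k * g k))))) =
     (\<Sum>j<N. \<pi>1 j * X j * g j) - (\<Sum>j<N. \<Sum>k<N. \<pi>1 j * P2 j k * X j * g k)"
proof -
  have "(\<Sum>i<N. \<pi>1 i * (\<Sum>j<N. X j * (p1 i j * (g j - (\<Sum>k<N. p1 i k * g k))))) =
      (\<Sum>i<N. \<Sum>j<N. \<pi>1 i * p1 i j * X j * g j) - (\<Sum>i<N. \<Sum>j<N. \<Sum>k<N. \<pi>1 i * p1 i j * p1 i k * X j * g k)"
    by (simp add: right_diff_distrib sum_subtractf sum_distrib_left ac_simps)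
  also have "(\<Sum>i<N. \<Sum>j<N. \<pi>1 i * p1 i j * X j * g j) = (\<Sum>j<N. (\<Sum>i<N. \<pi>1 i * p1 i j) * X j * g j)"
    by (subst sum.swap) (simp add: sum_distrib_right)
  also have "\<dots> = (\<Sum>j<N. \<pi>1 j * X j * g j)" by (intro sum.cong refl) (simp add: stationary[OF g1 Npos])
  also have "(\<Sum>i<N. \<Sum>j<N. \<Sum>k<N. \<pi>1 i * p1 i j * p1 i k * X j * g k) =
      (\<Sum>j<N. \<Sum>k<N. (\<Sum>i<N. \<pi>1 i * p1 i j * p1 i k) * X j * g k)"
  proof -
    have "(\<Sum>i<N. \<Sum>j<N. \<Sum>k<N. \<pi>1 i * p1 i j * p1 i k * X j * g k) =
        (\<Sum>j<N. \<Sum>i<N. \<Sum>k<N. \<pi>1 i * p1 i j * p1 i k * X j * g k)" by (rule sum.swap)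
    also have "\<dots> = (\<Sum>j<N. \<Sum>k<N. \<Sum>i<N. \<pi>1 i * p1 i j * p1 i k * X j * g k)"
      by (rule sum.cong[OF refl], rule sum.swap)
    also have "\<dots> = (\<Sum>j<N. \<Sum>k<N. (\<Sum>i<N. \<pi>1 i * p1 i j * p1 i k) * X j * g k)"
      by (simp add: sum_distrib_right)
    finally show ?thesis .
  qed
  also have "\<dots> = (\<Sum>j<N. \<Sum>k<N. \<pi>1 j * P2 j k * X j * g k)"
    by (intro sum.cong refl) (simp add: rev2)
  finally show ?thesis .
qed


definition Qf where "Qf X g = (\<Sum>j<N. \<pi>1 j * X j * g j) - (\<Sum>j<N. \<Sum>k<N. \<pi>1 j * P2 j k * X j * g k)"

lemma Q_add: "Qf X (\<lambda>k. f k + g k) = Qf X f + Qf X g"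
  unfolding Qf_def by (simp add: distrib_left sum.distrib)
lemma Q_cmult: "Qf X (\<lambda>k. a * f k) = a * Qf X f"
  unfolding Qf_def by (simp add: right_diff_distrib sum_distrib_left ac_simps)
lemma Q_cong: "(\<And>k. k < N \<Longrightarrow> f k = g k) \<Longrightarrow> Qf X f = Qf X g"
  unfolding Qf_def by (intro arg_cong2[where f="(-)"] sum.cong refl) auto
lemma Q_one: "Qf X (\<lambda>k. 1) = 0"
proof -
  have "(\<Sum>j<N. \<Sum>k<N. \<pi>1 j * P2 j k * X j * 1) = (\<Sum>j<N. \<pi>1 j * X j * (\<Sum>k<N. P2 j k))"
    by (simp add: sum_distrib_left ac_simps)
  also have "\<dots> = (\<Sum>j<N. \<pi>1 j * X j * 1)" by (intro sum.cong refl) (simp add: P2_rowsum)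
  finally show ?thesis unfolding Qf_def by simp
qed

definition A1 where "A1 t = (\<Sum>j<N. \<Sum>k<N. \<pi>1 j * P2 j k * (xx j k t - phi1 t))"
definition A2 where "A2 t = (\<Sum>j<N. \<Sum>l<N. \<pi>1 j * p1 l j * (xx j l t - phi1 t))"
definition A3 where "A3 t = (\<Sum>j<N. \<Sum>k<N. \<Sum>l<N. \<pi>1 j * P2 j k * p1 l k * (xx j l t - phi1 t))"
definition A4 where "A4 t = (\<Sum>j<N. \<pi>1 j * (xy j j t - phi1 t * phi2 t))"
definition A5 where "A5 t = (\<Sum>j<N. \<Sum>k<N. \<pi>1 j * P2 j k * (xy j k t - phi1 t * phi2 t))"

lemma QX: "Qf (\<lambda>j. ind (j \<in> fst t)) (\<lambda>j. ind (j \<in> fst t)) = - A1 t"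
proof -
  have a: "(\<Sum>j<N. \<pi>1 j * ind (j \<in> fst t) * ind (j \<in> fst t)) = phi1 t"
    by (simp add: phi1_def avg_state_def mult.assoc)
  have b: "A1 t = (\<Sum>j<N. \<Sum>k<N. \<pi>1 j * P2 j k * ind (j \<in> fst t) * ind (k \<in> fst t)) - phi1 t"
  proof -
    have "A1 t = (\<Sum>j<N. \<Sum>k<N. \<pi>1 j * P2 j k * ind (j \<in> fst t) * ind (k \<in> fst t))
        - (\<Sum>j<N. \<Sum>k<N. \<pi>1 j * P2 j k) * phi1 t"
      unfolding A1_def xx_def by (simp add: right_diff_distrib sum_subtractf sum_distrib_right mult.assoc)
    then show ?thesis using P2_tot by simp
  qed
  show ?thesis unfolding Qf_def a b by simp
qed

lemma QV: "Qf (\<lambda>j. ind (j \<in> fst t)) (\<lambda>j. \<Sum>l<N. p1 l j * ind (l \<in> fst t)) = A2 t - A3 t"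
proof -
  let ?x = "\<lambda>j. ind (j \<in> fst t)"
  let ?c = "(\<Sum>j<N. \<Sum>l<N. \<pi>1 j * p1 l j)"
  have c2: "(\<Sum>j<N. \<Sum>k<N. \<Sum>l<N. \<pi>1 j * P2 j k * p1 l k) = ?c"
  proof -
    have "(\<Sum>j<N. \<Sum>k<N. \<Sum>l<N. \<pi>1 j * P2 j k * p1 l k) = (\<Sum>k<N. \<Sum>j<N. \<Sum>l<N. \<pi>1 j * P2 j k * p1 l k)"
      by (rule sum.swap)
    also have "\<dots> = (\<Sum>k<N. \<pi>1 k * (\<Sum>l<N. p1 l k))"
    proof (rule sum.cong[OF refl])
      fix k assume k: "k \<in> {..<N}"
      have "(\<Sum>j<N. \<Sum>l<N. \<pi>1 j * P2 j k * p1 l k) = (\<Sum>j<N. \<pi>1 j * P2 j k) * (\<Sum>l<N. p1 l k)"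
        by (simp add: sum_product)
      then show "(\<Sum>j<N. \<Sum>l<N. \<pi>1 j * P2 j k * p1 l k) = \<pi>1 k * (\<Sum>l<N. p1 l k)"
        using P2_stat k by simp
    qed
    also have "\<dots> = ?c" by (simp add: sum_distrib_left)
    finally show ?thesis .
  qed
  have a2: "A2 t = (\<Sum>j<N. \<Sum>l<N. \<pi>1 j * p1 l j * (?x j * ?x l)) - ?c * phi1 t"
    unfolding A2_def xx_def by (simp add: right_diff_distrib sum_subtractf sum_distrib_right)
  have a3: "A3 t = (\<Sum>j<N. \<Sum>k<N. \<Sum>l<N. \<pi>1 j * P2 j k * p1 l k * (?x j * ?x l)) - ?c * phi1 t"
  proof -
    have "A3 t = (\<Sum>j<N. \<Sum>k<N. \<Sum>l<N. \<pi>1 j * P2 j k * p1 l k * (?x j * ?x l))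
        - (\<Sum>j<N. \<Sum>k<N. \<Sum>l<N. \<pi>1 j * P2 j k * p1 l k) * phi1 t"
      unfolding A3_def xx_def by (simp add: right_diff_distrib sum_subtractf sum_distrib_right)
    then show ?thesis using c2 by simp
  qed
  have q1: "(\<Sum>j<N. \<pi>1 j * ?x j * (\<Sum>l<N. p1 l j * ?x l)) = (\<Sum>j<N. \<Sum>l<N. \<pi>1 j * p1 l j * (?x j * ?x l))"
    by (simp add: sum_distrib_left ac_simps)
  have q2: "(\<Sum>j<N. \<Sum>k<N. \<pi>1 j * P2 j k * ?x j * (\<Sum>l<N. p1 l k * ?x l)) =
      (\<Sum>j<N. \<Sum>k<N. \<Sum>l<N. \<pi>1 j * P2 j k * p1 l k * (?x j * ?x l))"
    by (simp add: sum_distrib_left ac_simps)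
  show ?thesis unfolding Qf_def q1 q2 a2 a3 by simp
qed

lemma QY: "Qf (\<lambda>j. ind (j \<in> fst t)) (\<lambda>j. ind (j \<in> snd t)) = A4 t - A5 t"
proof -
  have a4: "A4 t = (\<Sum>j<N. \<pi>1 j * ind (j \<in> fst t) * ind (j \<in> snd t)) - phi1 t * phi2 t"
  proof -
    have "A4 t = (\<Sum>j<N. \<pi>1 j * ind (j \<in> fst t) * ind (j \<in> snd t)) - (\<Sum>j<N. \<pi>1 j) * (phi1 t * phi2 t)"
      unfolding A4_def xy_def by (simp add: right_diff_distrib sum_subtractf sum_distrib_right mult.assoc)
    then show ?thesis using sd_sum[OF g1 Npos] by simp
  qed
  have a5: "A5 t = (\<Sum>j<N. \<Sum>k<N. \<pi>1 j * P2 j k * ind (j \<in> fst t) * ind (k \<in> snd t)) - phi1 t * phi2 t"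
  proof -
    have "A5 t = (\<Sum>j<N. \<Sum>k<N. \<pi>1 j * P2 j k * ind (j \<in> fst t) * ind (k \<in> snd t))
        - (\<Sum>j<N. \<Sum>k<N. \<pi>1 j * P2 j k) * (phi1 t * phi2 t)"
      unfolding A5_def xy_def by (simp add: right_diff_distrib sum_subtractf sum_distrib_right mult.assoc)
    then show ?thesis using P2_tot by simp
  qed
  show ?thesis unfolding Qf_def a4 a5 by simp
qed


lemma Gd0_form:
  "Gd 0 t = (1 / real N) * (\<Sum>i<N. \<pi>1 i * (\<Sum>j<N. ind (j \<in> fst t) *
      (p1 i j * (payoff N w1 b c r (fst t) (snd t) j - (\<Sum>k<N. p1 i k * payoff N w1 b c r (fst t) (snd t) k)))))"
proof -
  let ?u = "payoff N w1 b c r (fst t) (snd t)"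
  have "Gd 0 t = (\<Sum>i<N. \<pi>1 i / real N * (\<Sum>j<N. ind (j \<in> fst t) *
      (p1 i j * (?u j - (\<Sum>k<N. p1 i k * ?u k)))))"
    unfolding Gd_def
  proof (rule sum.cong[OF refl], rule arg_cong2[where f="(*)"], rule refl, rule sum.cong[OF refl], rule arg_cong2[where f="(*)"], rule refl)
    fix i j assume i: "i \<in> {..<N}"
    have sp: "strength N w1 i > 0" using wg_str_pos[OF g1] i by simp
    have den: "(\<Sum>k<N. w1 i k * Fe 0 t k) = strength N w1 i" by (simp add: Fe0 strength_def)
    have A: "(\<Sum>k<N. p1 i k * ?u k) = Aw t i / strength N w1 i"
      by (simp add: Aw_def trans_prob_def sum_divide_distrib)
    show "w1 i j * (?u j * strength N w1 i - Aw t i) / (strength N w1 i * (\<Sum>k<N. w1 i k * Fe 0 t k)) =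
        p1 i j * (?u j - (\<Sum>k<N. p1 i k * ?u k))"
      unfolding den A using sp by (simp add: trans_prob_def field_simps)
  qed
  also have "\<dots> = (1 / real N) * (\<Sum>i<N. \<pi>1 i * (\<Sum>j<N. ind (j \<in> fst t) *
      (p1 i j * (?u j - (\<Sum>k<N. p1 i k * ?u k)))))"
    by (simp add: sum_distrib_left)
  finally show ?thesis .
qed

lemma payoff_form:
  assumes k: "k < N"
  shows "payoff N w1 b c r X1 X2 k = (- c) * ind (k \<in> X1) + b * (\<Sum>l<N. p1 l k * ind (l \<in> X1))
     + (r - 1) * ind (k \<in> X2) + 1"
proof -
  have "(\<Sum>l<N. b * (w1 k l / strength N w1 l) * ind (l \<in> X1)) = b * (\<Sum>l<N. p1 l k * ind (l \<in> X1))"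
    unfolding sum_distrib_left
    by (intro sum.cong refl) (simp add: trans_prob_def wg_sym[OF g1 k])
  then show ?thesis unfolding payoff_def by simp
qed

lemma Gd0_A: "real N * Gd 0 t = c * A1 t + b * (A2 t - A3 t) + (r - 1) * (A4 t - A5 t)"
proof -
  let ?X = "\<lambda>j. ind (j \<in> fst t)"
  let ?u = "payoff N w1 b c r (fst t) (snd t)"
  have "real N * Gd 0 t = Qf ?X ?u"
    unfolding Gd0_form Qf_def using Qform[of ?X ?u] Npos by simp
  also have "\<dots> = Qf ?X (\<lambda>k. (((- c) * ?X k + b * (\<Sum>l<N. p1 l k * ind (l \<in> fst t)))
     + (r - 1) * ind (k \<in> snd t)) + 1)"
    by (rule Q_cong) (simp add: payoff_form)
  also have "\<dots> = (- c) * Qf ?X ?X + b * Qf ?X (\<lambda>k. \<Sum>l<N. p1 l k * ind (l \<in> fst t))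
     + (r - 1) * Qf ?X (\<lambda>k. ind (k \<in> snd t)) + Qf ?X (\<lambda>k. 1)"
    by (simp only: Q_add Q_cmult)
  also have "\<dots> = c * A1 t + b * (A2 t - A3 t) + (r - 1) * (A4 t - A5 t)"
    unfolding QX QV QY Q_one by simp
  finally show ?thesis .
qed


lemma alg4:
  fixes al be X T1 T2 T3 f \<kappa> :: real
  assumes "al + 2 * be = 1" "f = X + al * T1 + be * (T2 + T3)"
  shows "f - \<kappa> = X + al * (T1 - \<kappa>) + be * ((T2 - \<kappa>) + (T3 - \<kappa>))"
proof -
  have "al * \<kappa> + be * (\<kappa> + \<kappa>) = (al + 2 * be) * \<kappa>" by (simp add: algebra_simps)
  then have "al * \<kappa> + be * (\<kappa> + \<kappa>) = \<kappa>" using assms(1) by simp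
  then show ?thesis using assms(2) by (simp add: algebra_simps)
qed

lemma tp_sub1: "i < N \<Longrightarrow> (\<Sum>k<N. p1 i k * (g k - \<kappa>)) = (\<Sum>k<N. p1 i k * g k) - \<kappa>"
  by (rule tp_sub[OF g1 Npos])
lemma tp_sub2: "i < N \<Longrightarrow> (\<Sum>k<N. p2 i k * (g k - \<kappa>)) = (\<Sum>k<N. p2 i k * g k) - \<kappa>"
  by (rule tp_sub[OF g2 Npos])

lemma ff_gamma:
  assumes xi: "\<xi> \<in> states N"
  defines "\<kappa> \<equiv> (\<Sum>a<N. \<pi>1 a * ff \<xi> a a)"
  shows "gamma_system N w1 w2 (fst \<xi>) (snd \<xi>) (\<lambda>i j. ff \<xi> i j - \<kappa>)"
  unfolding gamma_system_def
proof (intro conjI allI impI)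
  fix i j assume ij: "i < N" "j < N"
  let ?al = "1 / (2 * real N - 1)" and ?be = "(real N - 1) / (2 * real N - 1)"
  have co: "?al + 2 * ?be = 1"
  proof -
    have Np: "2 * real N - 1 > 0" using N2 by simp
    have "?al + 2 * ?be = (1 + 2 * (real N - 1)) / (2 * real N - 1)"
      by (simp only: add_divide_distrib times_divide_eq_right)
    also have "1 + 2 * (real N - 1) = 2 * real N - 1" by simp
    also have "(2 * real N - 1) / (2 * real N - 1) = 1" using Np by simp
    finally show ?thesis .
  qed
  have dd: "(\<Sum>k1<N. \<Sum>k2<N. p1 i k1 * p2 j k2 * g k1 k2) = (\<Sum>k1<N. p1 i k1 * (\<Sum>k2<N. p2 j k2 * g k1 k2))" for g
    by (simp add: sum_distrib_left mult.assoc)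
  have t1: "(\<Sum>k1<N. p1 i k1 * (\<Sum>k2<N. p2 j k2 * (ff \<xi> k1 k2 - \<kappa>))) =
      (\<Sum>k1<N. p1 i k1 * (\<Sum>k2<N. p2 j k2 * ff \<xi> k1 k2)) - \<kappa>"
  proof -
    have "(\<Sum>k1<N. p1 i k1 * (\<Sum>k2<N. p2 j k2 * (ff \<xi> k1 k2 - \<kappa>))) =
        (\<Sum>k1<N. p1 i k1 * ((\<Sum>k2<N. p2 j k2 * ff \<xi> k1 k2) - \<kappa>))"
      by (rule sum.cong[OF refl]) (simp add: tp_sub2[OF ij(2)])
    also have "\<dots> = (\<Sum>k1<N. p1 i k1 * (\<Sum>k2<N. p2 j k2 * ff \<xi> k1 k2)) - \<kappa>"
      by (rule tp_sub1[OF ij(1)])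
    finally show ?thesis .
  qed
  show "ff \<xi> i j - \<kappa> = (real N)\<^sup>2 / (2 * real N - 1) *
          (ind (i \<in> fst \<xi>) * ind (j \<in> snd \<xi>) - avg_state N w1 (fst \<xi>) * avg_state N w2 (snd \<xi>)) +
        1 / (2 * real N - 1) * (\<Sum>k1<N. \<Sum>k2<N. p1 i k1 * p2 j k2 * (ff \<xi> k1 k2 - \<kappa>)) +
        (real N - 1) / (2 * real N - 1) *
          ((\<Sum>k<N. p1 i k * (ff \<xi> k j - \<kappa>)) + (\<Sum>k<N. p2 j k * (ff \<xi> i k - \<kappa>)))"
    unfolding dd t1 tp_sub1[OF ij(1)] tp_sub2[OF ij(2)]
    by (rule alg4[OF co]) (use ff_eq[OF xi ij] dd in simp)
next
  have "(\<Sum>i<N. \<pi>1 i * (ff \<xi> i i - \<kappa>)) = \<kappa> - (\<Sum>i<N. \<pi>1 i) * \<kappa>"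
    unfolding \<kappa>_def by (simp add: right_diff_distrib sum_subtractf sum_distrib_right)
  then show "(\<Sum>i<N. \<pi>1 i * (ff \<xi> i i - \<kappa>)) = 0" using sd_sum[OF g1 Npos] by simp
qed

lemma ee_beta:
  assumes xi: "\<xi> \<in> states N"
  shows "beta_system N w1 (fst \<xi>) (ee \<xi>)"
  unfolding beta_system_def
  using ee_diag[OF xi] ee_off[OF xi] ee_norm[OF xi] by blast


lemma gser_sums:
  assumes xi: "\<xi> \<in> states N"
  shows "gser \<xi> 0 sums ((1 / real N) * (c * (\<Sum>j<N. \<Sum>k<N. \<pi>1 j * P2 j k * ee \<xi> j k)
     + b * ((\<Sum>j<N. \<Sum>l<N. \<pi>1 j * p1 l j * ee \<xi> j l) - (\<Sum>j<N. \<Sum>k<N. \<Sum>l<N. \<pi>1 j * P2 j k * p1 l k * ee \<xi> j l))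
     + (r - 1) * ((\<Sum>j<N. \<pi>1 j * ff \<xi> j j) - (\<Sum>j<N. \<Sum>k<N. \<pi>1 j * P2 j k * ff \<xi> j k))))"
proof -
  have a1: "E0 \<xi> n A1 = (\<Sum>j<N. \<Sum>k<N. \<pi>1 j * P2 j k * Dxx \<xi> j k n)" for n
    unfolding A1_def E0_sum E0_cmult Dxx_def ..
  have a2: "E0 \<xi> n A2 = (\<Sum>j<N. \<Sum>l<N. \<pi>1 j * p1 l j * Dxx \<xi> j l n)" for n
    unfolding A2_def E0_sum E0_cmult Dxx_def ..
  have a3: "E0 \<xi> n A3 = (\<Sum>j<N. \<Sum>k<N. \<Sum>l<N. \<pi>1 j * P2 j k * p1 l k * Dxx \<xi> j l n)" for n
    unfolding A3_def E0_sum E0_cmult Dxx_def ..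
  have a4: "E0 \<xi> n A4 = (\<Sum>j<N. \<pi>1 j * Dxy \<xi> j j n)" for n
    unfolding A4_def E0_sum E0_cmult Dxy_def ..
  have a5: "E0 \<xi> n A5 = (\<Sum>j<N. \<Sum>k<N. \<pi>1 j * P2 j k * Dxy \<xi> j k n)" for n
    unfolding A5_def E0_sum E0_cmult Dxy_def ..
  have g: "gser \<xi> 0 n = (1 / real N) * (c * E0 \<xi> n A1 + b * (E0 \<xi> n A2 - E0 \<xi> n A3)
      + (r - 1) * (E0 \<xi> n A4 - E0 \<xi> n A5))" for n
  proof -
    have "gser \<xi> 0 n = E0 \<xi> n (\<lambda>t. (1 / real N) * (c * A1 t + b * (A2 t - A3 t) + (r - 1) * (A4 t - A5 t)))"
      unfolding gser_def E0_def
    proof (rule sum.cong[OF refl])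
      fix t
      have "Gd 0 t = (1 / real N) * (c * A1 t + b * (A2 t - A3 t) + (r - 1) * (A4 t - A5 t))"
        using Gd0_A[of t] Npos by (simp add: field_simps)
      then show "Kp 0 n \<xi> t * Gd 0 t = Kp 0 n \<xi> t * ((1 / real N) * (c * A1 t + b * (A2 t - A3 t) + (r - 1) * (A4 t - A5 t)))"
        by simp
    qed
    also have "\<dots> = (1 / real N) * (c * E0 \<xi> n A1 + b * (E0 \<xi> n A2 - E0 \<xi> n A3)
      + (r - 1) * (E0 \<xi> n A4 - E0 \<xi> n A5))"
      by (simp only: E0_cmult E0_add E0_diff)
    finally show ?thesis .
  qed
  have s1: "(\<lambda>n. E0 \<xi> n A1) sums (\<Sum>j<N. \<Sum>k<N. \<pi>1 j * P2 j k * ee \<xi> j k)"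
    unfolding a1 by (rule sums_sum, rule sums_sum, rule sums_mult, rule Dxx_sums[OF xi]) auto
  have s2: "(\<lambda>n. E0 \<xi> n A2) sums (\<Sum>j<N. \<Sum>l<N. \<pi>1 j * p1 l j * ee \<xi> j l)"
    unfolding a2 by (rule sums_sum, rule sums_sum, rule sums_mult, rule Dxx_sums[OF xi]) auto
  have s3: "(\<lambda>n. E0 \<xi> n A3) sums (\<Sum>j<N. \<Sum>k<N. \<Sum>l<N. \<pi>1 j * P2 j k * p1 l k * ee \<xi> j l)"
    unfolding a3 by (rule sums_sum, rule sums_sum, rule sums_sum, rule sums_mult, rule Dxx_sums[OF xi]) auto
  have s4: "(\<lambda>n. E0 \<xi> n A4) sums (\<Sum>j<N. \<pi>1 j * ff \<xi> j j)"
    unfolding a4 by (rule sums_sum, rule sums_mult, rule Dxy_sums[OF xi]) auto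
  have s5: "(\<lambda>n. E0 \<xi> n A5) sums (\<Sum>j<N. \<Sum>k<N. \<pi>1 j * P2 j k * ff \<xi> j k)"
    unfolding a5 by (rule sums_sum, rule sums_sum, rule sums_mult, rule Dxy_sums[OF xi]) auto
  show ?thesis unfolding g
    by (intro sums_mult sums_add sums_diff s1 s2 s3 s4 s5)
qed


lemma main_TL:
  fixes \<xi>1 \<xi>2 :: "nat set" and \<beta> \<gamma> :: "nat \<Rightarrow> nat \<Rightarrow> real"
  assumes x1: "\<xi>1 \<subseteq> {0..<N}" and x2: "\<xi>2 \<subseteq> {0..<N}"
    and bs: "beta_system N w1 \<xi>1 \<beta>" and gs: "gamma_system N w1 w2 \<xi>1 \<xi>2 \<gamma>"
  shows "\<exists>D. ((\<lambda>\<delta>. fix_prob1 N w1 w2 b c r \<delta> (\<xi>1, \<xi>2)) has_real_derivative D)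
               (at 0 within {0..})
           \<and> (D > 0 \<longleftrightarrow>
               b * ((\<Sum>i<N. \<Sum>l<N. stat_dist N w1 i * trans_prob N w1 l i * \<beta> i l)
                    - (\<Sum>i<N. \<Sum>j<N. \<Sum>l<N. stat_dist N w1 i * mat_pow N (trans_prob N w1) 2 i j
                                           * trans_prob N w1 l j * \<beta> i l))
               + c * theta N w1 \<beta> 2 - (r - 1) * phi N w1 w2 \<gamma> 2 0 > 0)"
proof -
  define \<xi> where "\<xi> = (\<xi>1, \<xi>2)"
  have xi: "\<xi> \<in> states N" using x1 x2 by (simp add: \<xi>_def states_def)
  define \<kappa> where "\<kappa> = (\<Sum>a<N. \<pi>1 a * ff \<xi> a a)"
  have beq: "\<beta> i j = ee \<xi> i j" if "i < N" "j < N" for i j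
    using beta_unique[OF g1 Npos bs, of "ee \<xi>" i j] ee_beta[OF xi] that by (simp add: \<xi>_def)
  have geq: "\<gamma> i j = ff \<xi> i j - \<kappa>" if "i < N" "j < N" for i j
    using gamma_unique[OF gs, of "\<lambda>i j. ff \<xi> i j - \<kappa>" i j] ff_gamma[OF xi] that by (simp add: \<xi>_def \<kappa>_def)
  let ?SA1 = "\<Sum>j<N. \<Sum>k<N. \<pi>1 j * P2 j k * ee \<xi> j k"
  let ?SA2 = "\<Sum>j<N. \<Sum>l<N. \<pi>1 j * p1 l j * ee \<xi> j l"
  let ?SA3 = "\<Sum>j<N. \<Sum>k<N. \<Sum>l<N. \<pi>1 j * P2 j k * p1 l k * ee \<xi> j l"
  let ?SA4 = "\<Sum>j<N. \<pi>1 j * ff \<xi> j j"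
  let ?SA5 = "\<Sum>j<N. \<Sum>k<N. \<pi>1 j * P2 j k * ff \<xi> j k"
  define D where "D = suminf (gser \<xi> 0)"
  have Deq: "D = (1 / real N) * (c * ?SA1 + b * (?SA2 - ?SA3) + (r - 1) * (?SA4 - ?SA5))"
    unfolding D_def using gser_sums[OF xi] by (rule sums_unique[symmetric])
  have e1: "(\<Sum>i<N. \<Sum>l<N. stat_dist N w1 i * trans_prob N w1 l i * \<beta> i l) = ?SA2"
    by (intro sum.cong refl) (simp add: beq)
  have e2: "(\<Sum>i<N. \<Sum>j<N. \<Sum>l<N. stat_dist N w1 i * mat_pow N (trans_prob N w1) 2 i j
                                           * trans_prob N w1 l j * \<beta> i l) = ?SA3"
    by (intro sum.cong refl) (simp add: beq)
  have e3: "theta N w1 \<beta> 2 = ?SA1"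
    unfolding theta_def by (intro sum.cong refl) (simp add: beq)
  have e4: "phi N w1 w2 \<gamma> 2 0 = ?SA5 - \<kappa>"
  proof -
    have "phi N w1 w2 \<gamma> 2 0 = (\<Sum>i<N. \<Sum>j<N. \<pi>1 i * P2 i j * (ff \<xi> i j - \<kappa>))"
      unfolding phi_def
    proof (intro sum.cong refl)
      fix i j assume ij: "i \<in> {..<N}" "j \<in> {..<N}"
      have "(\<Sum>k<N. P2 i k * mat_pow N p2 0 k j) = P2 i j"
        using ij by (simp add: if_distrib[where f="\<lambda>x. _ * x"] sum.delta' cong: if_cong)
      then show "\<pi>1 i * (\<Sum>k<N. P2 i k * mat_pow N p2 0 k j) * \<gamma> i j = \<pi>1 i * P2 i j * (ff \<xi> i j - \<kappa>)"
        using geq ij by simp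
    qed
    also have "\<dots> = ?SA5 - (\<Sum>i<N. \<Sum>j<N. \<pi>1 i * P2 i j) * \<kappa>"
      by (simp add: right_diff_distrib sum_subtractf sum_distrib_right)
    finally show ?thesis using P2_tot by simp
  qed
  have e5: "?SA4 = \<kappa>" unfolding \<kappa>_def ..
  have "b * ((\<Sum>i<N. \<Sum>l<N. stat_dist N w1 i * trans_prob N w1 l i * \<beta> i l)
                    - (\<Sum>i<N. \<Sum>j<N. \<Sum>l<N. stat_dist N w1 i * mat_pow N (trans_prob N w1) 2 i j
                                           * trans_prob N w1 l j * \<beta> i l))
               + c * theta N w1 \<beta> 2 - (r - 1) * phi N w1 w2 \<gamma> 2 0 = real N * D"
    unfolding e1 e2 e3 e4 Deq e5 using Npos by (simp add: algebra_simps)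
  moreover have "((\<lambda>\<delta>. fix_prob1 N w1 w2 b c r \<delta> (\<xi>1, \<xi>2)) has_real_derivative D) (at 0 within {0..})"
    using deriv_fix[OF xi] by (simp add: D_def \<xi>_def)
  moreover have "D > 0 \<longleftrightarrow> real N * D > 0" using Npos by (simp add: zero_less_mult_iff)
  ultimately show ?thesis by metis
qed

end

theorem mainTheorem3:
  fixes N :: nat and w1 w2 \<beta> \<gamma> :: "nat \<Rightarrow> nat \<Rightarrow> real" and b c r :: real
    and \<xi>1 \<xi>2 :: "nat set"
  assumes "N \<ge> 2"
    and "weighted_graph N w1" and "weighted_graph N w2"
    and "r \<ge> 0"
    and "\<xi>1 \<subseteq> {0..<N}" and "\<xi>2 \<subseteq> {0..<N}"
    and "\<not> ((\<xi>1 = {} \<or> \<xi>1 = {0..<N}) \<and> (\<xi>2 = {} \<or> \<xi>2 = {0..<N}))"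
    and "beta_system N w1 \<xi>1 \<beta>"
    and "gamma_system N w1 w2 \<xi>1 \<xi>2 \<gamma>"
  shows "\<exists>D. ((\<lambda>\<delta>. fix_prob1 N w1 w2 b c r \<delta> (\<xi>1, \<xi>2)) has_real_derivative D)
               (at 0 within {0..})
           \<and> (D > 0 \<longleftrightarrow>
               b * ((\<Sum>i<N. \<Sum>l<N. stat_dist N w1 i * trans_prob N w1 l i * \<beta> i l)
                    - (\<Sum>i<N. \<Sum>j<N. \<Sum>l<N. stat_dist N w1 i * mat_pow N (trans_prob N w1) 2 i j
                                           * trans_prob N w1 l j * \<beta> i l))
               + c * theta N w1 \<beta> 2 - (r - 1) * phi N w1 w2 \<gamma> 2 0 > 0)"
proof -
  interpret TL N w1 w2 b c r
    using assms(1,2,3) by unfold_locales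
  show ?thesis by (rule main_TL) (use assms in auto)
qed

end
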